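(* For all $\varepsilon>0$ and all $c>0$, there exists an $\varepsilon$-JOT-DP RAM program $P:\mathcal{X}\times\mathcal{E}\to\mathcal{Y}\times\mathcal{E}$ for releasing sums in the unbounded setting such that for all datasets $x=(x_1,\dots,x_n)\in\mathcal{X}$ (and compatible environments $\mathit{env}$), $$\Pr\left[\Big|\mathrm{out}(P(x,\mathit{env}))-\sum_i x_i\Big|\ge\frac{C\ln(n)}{\varepsilon}\right]<O\!\left(\frac{1}{n^c}\right),$$ where $n=|x|$ and $C>0$ is a universal constant.
   Context: Datasets are finite sequences $x=(x_1,\dots,x_n)$ of records, each an integer in $\{0,1,\dots,\Delta\}$ for a fixed $\Delta$; $\mathcal{X}$ is the set of all such finite sequences. Two datasets are adjacent if their insert-delete distance (minimum number of single-record insertions/deletions transforming one into the other) is at most $1$. A program runs on $x$ in an execution environment $\mathit{env}\in\mathcal{E}$ (initial machine state) compatible with $x$; $\mathrm{out}(P(x,\mathit{env}))$ is the random output and $T_P(x,\mathit{env})$ the random runtime. $P$ is $\varepsilon$-JOT-DP in the unbounded setting if for all adjacent $x,x'$ of arbitrary lengths, all compatible $\mathit{env},\mathit{env}'$ and all sets $S$ of (output, runtime) pairs, $\Pr[(\mathrm{out}(P(x,\mathit{env})),T_P(x,\mathit{env}))\in S]\le e^{\varepsilon}\Pr[(\mathrm{out}(P(x',\mathit{env}')),T_P(x',\mathit{env}'))\in S]$. RAM model: infinitely many memory cells holding arbitrary natural numbers; unit-cost arithmetic, Boolean operations, memory access, conditional jumps, and $\texttt{RAND}(n)$ returning a uniform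 integer in $\{0,\dots,n\}$; runtime is the number of executed instructions; the built-in variable $\texttt{input\_len}$ holds $|x|$. *)

theory Defs
  imports "HOL-Probability.Probability"
begin

definition dataset :: "nat \<Rightarrow> nat list \<Rightarrow> bool" where
  "dataset \<Delta> x \<longleftrightarrow> (\<forall>v\<in>set x. v \<le> \<Delta>)"

definition del_one :: "nat list \<Rightarrow> nat list \<Rightarrow> bool" where
  "del_one x x' \<longleftrightarrow> (\<exists>i<length x. x' = take i x @ drop (Suc i) x)"

definition adjacent :: "nat list \<Rightarrow> nat list \<Rightarrow> bool" where
  "adjacent x x' \<longleftrightarrow> x = x' \<or> del_one x x' \<or> del_one x' x"

datatype binop = OpAdd | OpSub | OpMul | OpDiv | OpMod | OpAnd | OpOr | OpEq | OpLess

fun eval_binop :: "binop \<Rightarrow> nat \<Rightarrow> nat \<Rightarrow> nat" where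
  "eval_binop OpAdd u v = u + v"
| "eval_binop OpSub u v = u - v"
| "eval_binop OpMul u v = u * v"
| "eval_binop OpDiv u v = u div v"
| "eval_binop OpMod u v = u mod v"
| "eval_binop OpAnd u v = Bit_Operations.and u v"
| "eval_binop OpOr u v = Bit_Operations.or u v"
| "eval_binop OpEq u v = (if u = v then 1 else 0)"
| "eval_binop OpLess u v = (if u < v then 1 else 0)"

datatype instr =
    Const nat nat
  | Bin binop nat nat nat
  | Not nat nat
  | Load nat nat
  | Store nat nat
  | InLen nat
  | Jmp nat
  | Jz nat nat
  | Rand nat nat
  | Halt

type_synonym program = "instr list"

record state =
  pc :: nat
  mem :: "nat \<Rightarrow> nat"
  halted :: bool
  time :: nat

definition fetch :: "program \<Rightarrow> nat \<Rightarrow> instr" where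
  "fetch P i = (if i < length P then P ! i else Halt)"

fun exec :: "nat \<Rightarrow> instr \<Rightarrow> state \<Rightarrow> state pmf" where
  "exec n (Const a k) s = return_pmf (s\<lparr>mem := (mem s)(a := k), pc := Suc (pc s)\<rparr>)"
| "exec n (Bin op a b c) s =
     return_pmf (s\<lparr>mem := (mem s)(a := eval_binop op (mem s b) (mem s c)), pc := Suc (pc s)\<rparr>)"
| "exec n (Not a b) s =
     return_pmf (s\<lparr>mem := (mem s)(a := (if mem s b = 0 then 1 else 0)), pc := Suc (pc s)\<rparr>)"
| "exec n (Load a b) s = return_pmf (s\<lparr>mem := (mem s)(a := mem s (mem s b)), pc := Suc (pc s)\<rparr>)"
| "exec n (Store a b) s = return_pmf (s\<lparr>mem := (mem s)(mem s a := mem s b), pc := Suc (pc s)\<rparr>)"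
| "exec n (InLen a) s = return_pmf (s\<lparr>mem := (mem s)(a := n), pc := Suc (pc s)\<rparr>)"
| "exec n (Jmp l) s = return_pmf (s\<lparr>pc := l\<rparr>)"
| "exec n (Jz a l) s = return_pmf (s\<lparr>pc := (if mem s a = 0 then l else Suc (pc s))\<rparr>)"
| "exec n (Rand a b) s =
     map_pmf (\<lambda>v. s\<lparr>mem := (mem s)(a := v), pc := Suc (pc s)\<rparr>) (pmf_of_set {0..mem s b})"
| "exec n Halt s = return_pmf (s\<lparr>halted := True\<rparr>)"

definition step :: "program \<Rightarrow> nat \<Rightarrow> state \<Rightarrow> state pmf" where
  "step P n s = (if halted s then return_pmf s
                 else map_pmf (\<lambda>s'. s'\<lparr>time := Suc (time s)\<rparr>) (exec n (fetch P (pc s)) s))"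

definition init :: "(nat \<Rightarrow> nat) \<Rightarrow> state" where
  "init env = \<lparr>pc = 0, mem = env, halted = False, time = 0\<rparr>"

fun run :: "program \<Rightarrow> nat \<Rightarrow> (nat \<Rightarrow> nat) \<Rightarrow> nat \<Rightarrow> state pmf" where
  "run P n env 0 = return_pmf (init env)"
| "run P n env (Suc t) = bind_pmf (run P n env t) (step P n)"

text \<open>An environment (initial memory) is compatible with x if it holds the records of x in
  cells 1..|x|; all other cells hold arbitrary values. The built-in input_len is |x|.\<close>
definition compatible :: "(nat \<Rightarrow> nat) \<Rightarrow> nat list \<Rightarrow> bool" where
  "compatible env x \<longleftrightarrow> (\<forall>i<length x. env (Suc i) = x ! i)"

text \<open>The output is the content of cell 0 at halting, the runtime the number of executed
  instructions. (The event is monotone in t, so the supremum is a limit.)\<close>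
definition out_time_prob ::
    "program \<Rightarrow> nat list \<Rightarrow> (nat \<Rightarrow> nat) \<Rightarrow> (nat \<times> nat) set \<Rightarrow> real" where
  "out_time_prob P x env S =
     (SUP t. measure_pmf.prob (run P (length x) env t) {s. halted s \<and> (mem s 0, time s) \<in> S})"

definition terminates :: "nat \<Rightarrow> program \<Rightarrow> bool" where
  "terminates \<Delta> P \<longleftrightarrow>
     (\<forall>x env. dataset \<Delta> x \<and> compatible env x \<longrightarrow> out_time_prob P x env UNIV = 1)"

definition jot_dp :: "nat \<Rightarrow> real \<Rightarrow> program \<Rightarrow> bool" where
  "jot_dp \<Delta> \<epsilon> P \<longleftrightarrow>
     (\<forall>x x' env env' S. dataset \<Delta> x \<and> dataset \<Delta> x' \<and> adjacent x x' \<and>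
        compatible env x \<and> compatible env' x' \<longrightarrow>
        out_time_prob P x env S \<le> exp \<epsilon> * out_time_prob P x' env' S)"

end

theory Submission
  imports Defs
begin


fun iter :: "program \<Rightarrow> nat \<Rightarrow> nat \<Rightarrow> state \<Rightarrow> state pmf" where
  "iter P n 0 s = return_pmf s"
| "iter P n (Suc k) s = bind_pmf (step P n s) (iter P n k)"

lemma iter_swap: "bind_pmf (step P n s) (iter P n k) = bind_pmf (iter P n k s) (step P n)"
proof (induction k arbitrary: s)
  case 0
  then show ?case by (simp add: bind_return_pmf bind_return_pmf')
next
  case (Suc k)
  have "iter P n (Suc k) = (\<lambda>s'. bind_pmf (iter P n k s') (step P n))"
    using Suc.IH by (auto simp: fun_eq_iff)
  then have "bind_pmf (step P n s) (iter P n (Suc k)) = bind_pmf (step P n s) (\<lambda>s'. bind_pmf (iter P n k s') (step P n))"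
    by simp
  also have "\<dots> = bind_pmf (bind_pmf (step P n s) (iter P n k)) (step P n)"
    by (simp add: bind_assoc_pmf)
  finally have X: "bind_pmf (step P n s) (iter P n (Suc k)) = bind_pmf (bind_pmf (step P n s) (iter P n k)) (step P n)" .
  show ?case by (rule trans[OF X]) (simp only: iter.simps(2))
qed

lemma iter_Suc2: "iter P n (Suc k) s = bind_pmf (iter P n k s) (step P n)"
  by (simp only: iter.simps(2) iter_swap)

declare iter.simps(2)[simp del]

lemma run_iter: "run P n env t = iter P n t (init env)"
  by (induction t) (simp_all add: iter_Suc2)

definition EV :: "(nat \<times> nat) set \<Rightarrow> state set" where
  "EV S = {s. halted s \<and> (mem s 0, time s) \<in> S}"

definition hp :: "program \<Rightarrow> nat \<Rightarrow> (nat \<times> nat) set \<Rightarrow> state \<Rightarrow> ennreal" where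
  "hp P n S s = (SUP k. emeasure (measure_pmf (iter P n k s)) (EV S))"

lemma step_halted: "halted s \<Longrightarrow> step P n s = return_pmf s"
  by (simp add: step_def)

lemma iter_halted: "halted s \<Longrightarrow> iter P n k s = return_pmf s"
  by (induction k) (simp_all add: iter.simps(2) step_halted bind_return_pmf)

lemma ind_le_step: "indicator (EV S) s \<le> emeasure (measure_pmf (step P n s)) (EV S)"
proof (cases "s \<in> EV S")
  case True
  then have "halted s" by (simp add: EV_def)
  then show ?thesis using True by (simp add: step_halted)
qed simp

lemma iter_mono: "emeasure (measure_pmf (iter P n k s)) (EV S) \<le> emeasure (measure_pmf (iter P n (Suc k) s)) (EV S)"
proof -
  have "emeasure (measure_pmf (iter P n k s)) (EV S) = (\<integral>\<^sup>+x. indicator (EV S) x \<partial>measure_pmf (iter P n k s))"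
    by simp
  also have "\<dots> \<le> (\<integral>\<^sup>+x. emeasure (measure_pmf (step P n x)) (EV S) \<partial>measure_pmf (iter P n k s))"
    by (rule nn_integral_mono) (rule ind_le_step)
  also have "\<dots> = emeasure (measure_pmf (iter P n (Suc k) s)) (EV S)"
    by (simp add: iter_Suc2)
  finally show ?thesis .
qed

lemma iter_incseq: "incseq (\<lambda>k. emeasure (measure_pmf (iter P n k s)) (EV S))"
  by (rule incseq_SucI) (rule iter_mono)

lemma hp_step: "hp P n S s = (\<integral>\<^sup>+s'. hp P n S s' \<partial>measure_pmf (step P n s))"
proof -
  have inc: "incseq (\<lambda>k s'. emeasure (measure_pmf (iter P n k s')) (EV S))"
    using iter_incseq by (auto simp: incseq_def le_fun_def)
  have "hp P n S s = (SUP k. emeasure (measure_pmf (iter P n (Suc k) s)) (EV S))"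
    unfolding hp_def
  proof (rule antisym)
    show "(SUP k. emeasure (measure_pmf (iter P n k s)) (EV S)) \<le> (SUP k. emeasure (measure_pmf (iter P n (Suc k) s)) (EV S))"
      by (rule SUP_mono) (use iter_mono in blast)
    show "(SUP k. emeasure (measure_pmf (iter P n (Suc k) s)) (EV S)) \<le> (SUP k. emeasure (measure_pmf (iter P n k s)) (EV S))"
      by (rule SUP_mono) blast
  qed
  also have "\<dots> = (SUP k. \<integral>\<^sup>+s'. emeasure (measure_pmf (iter P n k s')) (EV S) \<partial>measure_pmf (step P n s))"
    by (simp add: iter.simps(2))
  also have "\<dots> = (\<integral>\<^sup>+s'. (SUP k. emeasure (measure_pmf (iter P n k s')) (EV S)) \<partial>measure_pmf (step P n s))"
    by (rule nn_integral_monotone_convergence_SUP[symmetric]) (use inc in auto)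
  finally show ?thesis by (simp add: hp_def)
qed

lemma hp_halted: "halted s \<Longrightarrow> hp P n S s = (if (mem s 0, time s) \<in> S then 1 else 0)"
  by (simp add: hp_def iter_halted EV_def)

lemma hp_le1: "hp P n S s \<le> 1"
  unfolding hp_def by (rule SUP_least) (simp add: measure_pmf.emeasure_le_1)

lemma hp_compl: "hp P n S s + hp P n (- S) s \<le> 1"
proof -
  have "hp P n S s + hp P n (- S) s = (SUP k. emeasure (measure_pmf (iter P n k s)) (EV S) + emeasure (measure_pmf (iter P n k s)) (EV (- S)))"
    unfolding hp_def by (rule ennreal_SUP_add[symmetric]) (rule iter_incseq)+
  also have "\<dots> \<le> 1"
  proof (rule SUP_least)
    fix k
    have "EV S \<inter> EV (-S) = {}" by (auto simp: EV_def)
    then have "emeasure (measure_pmf (iter P n k s)) (EV S) + emeasure (measure_pmf (iter P n k s)) (EV (- S))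
        = emeasure (measure_pmf (iter P n k s)) (EV S \<union> EV (-S))"
      by (subst plus_emeasure) auto
    also have "\<dots> \<le> 1" by (simp add: measure_pmf.emeasure_le_1)
    finally show "emeasure (measure_pmf (iter P n k s)) (EV S) + emeasure (measure_pmf (iter P n k s)) (EV (- S)) \<le> 1" .
  qed
  finally show ?thesis .
qed

lemma out_time_prob_hp: "ennreal (out_time_prob P x env S) = hp P (length x) S (init env)"
proof -
  have e: "\<And>t. emeasure (measure_pmf (iter P (length x) t (init env))) (EV S) = ennreal (measure_pmf.prob (run P (length x) env t) (EV S))"
    by (simp only: run_iter measure_pmf.emeasure_eq_measure)
  have "hp P (length x) S (init env) = (SUP t. ennreal (measure_pmf.prob (run P (length x) env t) (EV S)))"
    unfolding hp_def e ..
  also have "\<dots> = ennreal (SUP t. measure_pmf.prob (run P (length x) env t) (EV S))"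
  proof (rule ennreal_SUP[symmetric])
    have "(SUP t. ennreal (measure_pmf.prob (run P (length x) env t) (EV S))) \<le> 1"
      by (rule SUP_least) (simp add: measure_pmf.prob_le_1)
    then show "(SUP t. ennreal (measure_pmf.prob (run P (length x) env t) (EV S))) \<noteq> \<top>"
      using neq_top_trans[OF ennreal_one_neq_top] by blast
  qed simp
  also have "(SUP t. measure_pmf.prob (run P (length x) env t) (EV S)) = out_time_prob P x env S"
    unfolding out_time_prob_def EV_def ..
  finally show ?thesis by simp
qed

fun dex :: "nat \<Rightarrow> instr \<Rightarrow> state \<Rightarrow> state" where
  "dex n (Const a k) s = s\<lparr>mem := (mem s)(a := k), pc := Suc (pc s)\<rparr>"
| "dex n (Bin op a b c) s = s\<lparr>mem := (mem s)(a := eval_binop op (mem s b) (mem s c)), pc := Suc (pc s)\<rparr>"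
| "dex n (Not a b) s = s\<lparr>mem := (mem s)(a := (if mem s b = 0 then 1 else 0)), pc := Suc (pc s)\<rparr>"
| "dex n (Load a b) s = s\<lparr>mem := (mem s)(a := mem s (mem s b)), pc := Suc (pc s)\<rparr>"
| "dex n (Store a b) s = s\<lparr>mem := (mem s)(mem s a := mem s b), pc := Suc (pc s)\<rparr>"
| "dex n (InLen a) s = s\<lparr>mem := (mem s)(a := n), pc := Suc (pc s)\<rparr>"
| "dex n (Jmp l) s = s\<lparr>pc := l\<rparr>"
| "dex n (Jz a l) s = s\<lparr>pc := (if mem s a = 0 then l else Suc (pc s))\<rparr>"
| "dex n (Rand a b) s = s"
| "dex n Halt s = s\<lparr>halted := True\<rparr>"

fun is_rand :: "instr \<Rightarrow> bool" where
  "is_rand (Rand a b) = True" | "is_rand _ = False"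

lemma exec_dex: "\<not> is_rand i \<Longrightarrow> exec n i s = return_pmf (dex n i s)"
  by (cases i) auto

definition dst :: "program \<Rightarrow> nat \<Rightarrow> state \<Rightarrow> state" where
  "dst P n s = (dex n (fetch P (pc s)) s)\<lparr>time := Suc (time s)\<rparr>"

lemma hp_dst: "\<not> halted s \<Longrightarrow> \<not> is_rand (fetch P (pc s)) \<Longrightarrow> hp P n S s = hp P n S (dst P n s)"
  by (subst hp_step) (simp add: step_def exec_dex dst_def)

fun dsteps :: "program \<Rightarrow> nat \<Rightarrow> nat \<Rightarrow> state \<Rightarrow> state" where
  "dsteps P n 0 s = s"
| "dsteps P n (Suc k) s = dsteps P n k (dst P n s)"

fun dok :: "program \<Rightarrow> nat \<Rightarrow> nat \<Rightarrow> state \<Rightarrow> bool" where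
  "dok P n 0 s = True"
| "dok P n (Suc k) s = (\<not> halted s \<and> \<not> is_rand (fetch P (pc s)) \<and> dok P n k (dst P n s))"

lemma hp_dsteps: "dok P n k s \<Longrightarrow> hp P n S s = hp P n S (dsteps P n k s)"
  by (induction k arbitrary: s) (auto simp: hp_dst)

lemma hp_rand:
  assumes "\<not> halted s" "fetch P (pc s) = Rand a b"
  shows "hp P n S s = (\<Sum>v\<in>{0..mem s b}. hp P n S (s\<lparr>mem := (mem s)(a := v), pc := Suc (pc s), time := Suc (time s)\<rparr>)) / of_nat (Suc (mem s b))"
  using assms by (subst hp_step) (simp add: step_def nn_integral_pmf_of_set)


definition prog :: "nat \<Rightarrow> nat \<Rightarrow> nat \<Rightarrow> nat \<Rightarrow> nat \<Rightarrow> nat \<Rightarrow> program" where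
  "prog dd mm ll dl qa qb = [
   Bin OpOr 0 1 1,
   InLen 1,
   Bin OpAdd 1 1 1,
   Store 1 0,
   InLen 0,
   Const 1 10,
   Bin OpAdd 0 0 1,
   InLen 1,
   Bin OpAdd 1 1 1,
   Load 1 1,
   Store 0 1,
   Const 1 1,
   Bin OpAdd 1 1 0,
   Store 1 2,
   Const 1 2,
   Bin OpAdd 1 1 0,
   Store 1 3,
   Const 1 3,
   Bin OpAdd 1 1 0,
   Store 1 4,
   Const 1 4,
   Bin OpAdd 1 1 0,
   Store 1 5,
   Const 1 5,
   Bin OpAdd 1 1 0,
   Store 1 6,
   Const 1 6,
   Bin OpAdd 1 1 0,
   Store 1 7,
   Const 1 7,
   Bin OpAdd 1 1 0,
   Store 1 8,
   Const 1 8,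
   Bin OpAdd 1 1 0,
   Store 1 9,
   Const 5 1,
   InLen 9,
   Const 6 mm,
   Bin OpAdd 9 9 6,
   Const 3 dd,
   Jz 3 45,
   Bin OpMul 5 5 9,
   Const 6 1,
   Bin OpSub 3 3 6,
   Jmp 40,
   Const 1 0,
   Const 2 0,
   Const 3 1,
   Const 4 1,
   Const 6 ll,
   Bin OpMul 6 3 6,
   Bin OpMul 7 4 5,
   Bin OpLess 8 7 6,
   Jz 8 57,
   Const 6 1,
   Const 7 ll,
   Jmp 60,
   Bin OpOr 6 3 3,
   Bin OpMul 7 4 5,
   Jmp 60,
   Const 9 1,
   Bin OpSub 7 7 9,
   Rand 9 7,
   Bin OpLess 8 9 6,
   Jz 8 66,
   Jmp 97,
   Const 9 1,
   Bin OpAdd 6 1 9,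
   Const 9 9,
   Bin OpLess 7 9 6,
   Const 9 1,
   Bin OpSub 7 9 7,
   InLen 8,
   Const 9 9,
   Bin OpAdd 8 8 9,
   Bin OpMul 7 7 8,
   Bin OpAdd 7 7 6,
   Load 7 7,
   InLen 8,
   Bin OpLess 8 8 6,
   Const 9 1,
   Bin OpSub 8 9 8,
   Bin OpMul 7 7 8,
   Bin OpAdd 2 2 7,
   InLen 8,
   Bin OpLess 8 1 8,
   Bin OpSub 8 9 8,
   Const 6 ll,
   Bin OpMul 6 6 8,
   Bin OpAdd 6 6 9,
   Bin OpMul 3 3 6,
   Const 6 (ll - 1),
   Bin OpMul 6 6 8,
   Bin OpAdd 6 6 9,
   Bin OpMul 4 4 6,
   Bin OpAdd 1 1 9,
   Jmp 49,
   Const 6 dl,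
   Bin OpMul 3 1 6,
   Const 4 1,
   Const 1 0,
   Bin OpLess 6 1 3,
   Jz 6 112,
   Bin OpLess 6 1 2,
   Const 9 (qb - qa),
   Bin OpMul 6 6 9,
   Const 9 qb,
   Bin OpSub 6 9 6,
   Bin OpMul 4 4 6,
   Const 9 1,
   Bin OpAdd 1 1 9,
   Jmp 101,
   Bin OpOr 7 4 4,
   Const 5 0,
   Const 1 0,
   Bin OpLess 6 3 1,
   Jz 6 118,
   Jmp 134,
   Bin OpAdd 5 5 7,
   Bin OpLess 6 1 2,
   Const 9 (qb - qa),
   Bin OpMul 6 6 9,
   Const 9 qa,
   Bin OpAdd 6 9 6,
   Bin OpMul 7 7 6,
   Bin OpLess 6 1 2,
   Const 9 (qb - qa),
   Bin OpMul 6 6 9,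
   Const 9 qb,
   Bin OpSub 6 9 6,
   Bin OpDiv 7 7 6,
   Const 9 1,
   Bin OpAdd 1 1 9,
   Jmp 115,
   Const 9 1,
   Bin OpSub 6 5 9,
   Rand 5 6,
   Bin OpOr 7 4 4,
   Const 4 0,
   Const 8 0,
   Const 1 0,
   Bin OpLess 6 1 3,
   Jz 6 163,
   Bin OpAdd 4 4 7,
   Bin OpLess 6 5 4,
   Const 9 1,
   Bin OpSub 6 9 6,
   Bin OpAdd 8 8 6,
   Bin OpLess 6 1 2,
   Const 9 (qb - qa),
   Bin OpMul 6 6 9,
   Const 9 qa,
   Bin OpAdd 6 9 6,
   Bin OpMul 7 7 6,
   Bin OpLess 6 1 2,
   Const 9 (qb - qa),
   Bin OpMul 6 6 9,
   Const 9 qb,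
   Bin OpSub 6 9 6,
   Bin OpDiv 7 7 6,
   Const 9 1,
   Bin OpAdd 1 1 9,
   Jmp 141,
   Bin OpOr 0 8 8,
   Halt]"

lemma fetch_0[simp]: "fetch (prog dd mm ll dl qa qb) 0 = Bin OpOr 0 1 1" by (simp add: fetch_def prog_def)
lemma fetch_1[simp]: "fetch (prog dd mm ll dl qa qb) 1 = InLen 1" by (simp add: fetch_def prog_def)
lemma fetch_2[simp]: "fetch (prog dd mm ll dl qa qb) 2 = Bin OpAdd 1 1 1" by (simp add: fetch_def prog_def)
lemma fetch_3[simp]: "fetch (prog dd mm ll dl qa qb) 3 = Store 1 0" by (simp add: fetch_def prog_def)
lemma fetch_4[simp]: "fetch (prog dd mm ll dl qa qb) 4 = InLen 0" by (simp add: fetch_def prog_def)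
lemma fetch_5[simp]: "fetch (prog dd mm ll dl qa qb) 5 = Const 1 10" by (simp add: fetch_def prog_def)
lemma fetch_6[simp]: "fetch (prog dd mm ll dl qa qb) 6 = Bin OpAdd 0 0 1" by (simp add: fetch_def prog_def)
lemma fetch_7[simp]: "fetch (prog dd mm ll dl qa qb) 7 = InLen 1" by (simp add: fetch_def prog_def)
lemma fetch_8[simp]: "fetch (prog dd mm ll dl qa qb) 8 = Bin OpAdd 1 1 1" by (simp add: fetch_def prog_def)
lemma fetch_9[simp]: "fetch (prog dd mm ll dl qa qb) 9 = Load 1 1" by (simp add: fetch_def prog_def)
lemma fetch_10[simp]: "fetch (prog dd mm ll dl qa qb) 10 = Store 0 1" by (simp add: fetch_def prog_def)
lemma fetch_11[simp]: "fetch (prog dd mm ll dl qa qb) 11 = Const 1 1" by (simp add: fetch_def prog_def)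
lemma fetch_12[simp]: "fetch (prog dd mm ll dl qa qb) 12 = Bin OpAdd 1 1 0" by (simp add: fetch_def prog_def)
lemma fetch_13[simp]: "fetch (prog dd mm ll dl qa qb) 13 = Store 1 2" by (simp add: fetch_def prog_def)
lemma fetch_14[simp]: "fetch (prog dd mm ll dl qa qb) 14 = Const 1 2" by (simp add: fetch_def prog_def)
lemma fetch_15[simp]: "fetch (prog dd mm ll dl qa qb) 15 = Bin OpAdd 1 1 0" by (simp add: fetch_def prog_def)
lemma fetch_16[simp]: "fetch (prog dd mm ll dl qa qb) 16 = Store 1 3" by (simp add: fetch_def prog_def)
lemma fetch_17[simp]: "fetch (prog dd mm ll dl qa qb) 17 = Const 1 3" by (simp add: fetch_def prog_def)
lemma fetch_18[simp]: "fetch (prog dd mm ll dl qa qb) 18 = Bin OpAdd 1 1 0" by (simp add: fetch_def prog_def)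
lemma fetch_19[simp]: "fetch (prog dd mm ll dl qa qb) 19 = Store 1 4" by (simp add: fetch_def prog_def)
lemma fetch_20[simp]: "fetch (prog dd mm ll dl qa qb) 20 = Const 1 4" by (simp add: fetch_def prog_def)
lemma fetch_21[simp]: "fetch (prog dd mm ll dl qa qb) 21 = Bin OpAdd 1 1 0" by (simp add: fetch_def prog_def)
lemma fetch_22[simp]: "fetch (prog dd mm ll dl qa qb) 22 = Store 1 5" by (simp add: fetch_def prog_def)
lemma fetch_23[simp]: "fetch (prog dd mm ll dl qa qb) 23 = Const 1 5" by (simp add: fetch_def prog_def)
lemma fetch_24[simp]: "fetch (prog dd mm ll dl qa qb) 24 = Bin OpAdd 1 1 0" by (simp add: fetch_def prog_def)
lemma fetch_25[simp]: "fetch (prog dd mm ll dl qa qb) 25 = Store 1 6" by (simp add: fetch_def prog_def)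
lemma fetch_26[simp]: "fetch (prog dd mm ll dl qa qb) 26 = Const 1 6" by (simp add: fetch_def prog_def)
lemma fetch_27[simp]: "fetch (prog dd mm ll dl qa qb) 27 = Bin OpAdd 1 1 0" by (simp add: fetch_def prog_def)
lemma fetch_28[simp]: "fetch (prog dd mm ll dl qa qb) 28 = Store 1 7" by (simp add: fetch_def prog_def)
lemma fetch_29[simp]: "fetch (prog dd mm ll dl qa qb) 29 = Const 1 7" by (simp add: fetch_def prog_def)
lemma fetch_30[simp]: "fetch (prog dd mm ll dl qa qb) 30 = Bin OpAdd 1 1 0" by (simp add: fetch_def prog_def)
lemma fetch_31[simp]: "fetch (prog dd mm ll dl qa qb) 31 = Store 1 8" by (simp add: fetch_def prog_def)
lemma fetch_32[simp]: "fetch (prog dd mm ll dl qa qb) 32 = Const 1 8" by (simp add: fetch_def prog_def)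
lemma fetch_33[simp]: "fetch (prog dd mm ll dl qa qb) 33 = Bin OpAdd 1 1 0" by (simp add: fetch_def prog_def)
lemma fetch_34[simp]: "fetch (prog dd mm ll dl qa qb) 34 = Store 1 9" by (simp add: fetch_def prog_def)
lemma fetch_35[simp]: "fetch (prog dd mm ll dl qa qb) 35 = Const 5 1" by (simp add: fetch_def prog_def)
lemma fetch_36[simp]: "fetch (prog dd mm ll dl qa qb) 36 = InLen 9" by (simp add: fetch_def prog_def)
lemma fetch_37[simp]: "fetch (prog dd mm ll dl qa qb) 37 = Const 6 mm" by (simp add: fetch_def prog_def)
lemma fetch_38[simp]: "fetch (prog dd mm ll dl qa qb) 38 = Bin OpAdd 9 9 6" by (simp add: fetch_def prog_def)
lemma fetch_39[simp]: "fetch (prog dd mm ll dl qa qb) 39 = Const 3 dd" by (simp add: fetch_def prog_def)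
lemma fetch_40[simp]: "fetch (prog dd mm ll dl qa qb) 40 = Jz 3 45" by (simp add: fetch_def prog_def)
lemma fetch_41[simp]: "fetch (prog dd mm ll dl qa qb) 41 = Bin OpMul 5 5 9" by (simp add: fetch_def prog_def)
lemma fetch_42[simp]: "fetch (prog dd mm ll dl qa qb) 42 = Const 6 1" by (simp add: fetch_def prog_def)
lemma fetch_43[simp]: "fetch (prog dd mm ll dl qa qb) 43 = Bin OpSub 3 3 6" by (simp add: fetch_def prog_def)
lemma fetch_44[simp]: "fetch (prog dd mm ll dl qa qb) 44 = Jmp 40" by (simp add: fetch_def prog_def)
lemma fetch_45[simp]: "fetch (prog dd mm ll dl qa qb) 45 = Const 1 0" by (simp add: fetch_def prog_def)
lemma fetch_46[simp]: "fetch (prog dd mm ll dl qa qb) 46 = Const 2 0" by (simp add: fetch_def prog_def)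
lemma fetch_47[simp]: "fetch (prog dd mm ll dl qa qb) 47 = Const 3 1" by (simp add: fetch_def prog_def)
lemma fetch_48[simp]: "fetch (prog dd mm ll dl qa qb) 48 = Const 4 1" by (simp add: fetch_def prog_def)
lemma fetch_49[simp]: "fetch (prog dd mm ll dl qa qb) 49 = Const 6 ll" by (simp add: fetch_def prog_def)
lemma fetch_50[simp]: "fetch (prog dd mm ll dl qa qb) 50 = Bin OpMul 6 3 6" by (simp add: fetch_def prog_def)
lemma fetch_51[simp]: "fetch (prog dd mm ll dl qa qb) 51 = Bin OpMul 7 4 5" by (simp add: fetch_def prog_def)
lemma fetch_52[simp]: "fetch (prog dd mm ll dl qa qb) 52 = Bin OpLess 8 7 6" by (simp add: fetch_def prog_def)
lemma fetch_53[simp]: "fetch (prog dd mm ll dl qa qb) 53 = Jz 8 57" by (simp add: fetch_def prog_def)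
lemma fetch_54[simp]: "fetch (prog dd mm ll dl qa qb) 54 = Const 6 1" by (simp add: fetch_def prog_def)
lemma fetch_55[simp]: "fetch (prog dd mm ll dl qa qb) 55 = Const 7 ll" by (simp add: fetch_def prog_def)
lemma fetch_56[simp]: "fetch (prog dd mm ll dl qa qb) 56 = Jmp 60" by (simp add: fetch_def prog_def)
lemma fetch_57[simp]: "fetch (prog dd mm ll dl qa qb) 57 = Bin OpOr 6 3 3" by (simp add: fetch_def prog_def)
lemma fetch_58[simp]: "fetch (prog dd mm ll dl qa qb) 58 = Bin OpMul 7 4 5" by (simp add: fetch_def prog_def)
lemma fetch_59[simp]: "fetch (prog dd mm ll dl qa qb) 59 = Jmp 60" by (simp add: fetch_def prog_def)
lemma fetch_60[simp]: "fetch (prog dd mm ll dl qa qb) 60 = Const 9 1" by (simp add: fetch_def prog_def)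
lemma fetch_61[simp]: "fetch (prog dd mm ll dl qa qb) 61 = Bin OpSub 7 7 9" by (simp add: fetch_def prog_def)
lemma fetch_62[simp]: "fetch (prog dd mm ll dl qa qb) 62 = Rand 9 7" by (simp add: fetch_def prog_def)
lemma fetch_63[simp]: "fetch (prog dd mm ll dl qa qb) 63 = Bin OpLess 8 9 6" by (simp add: fetch_def prog_def)
lemma fetch_64[simp]: "fetch (prog dd mm ll dl qa qb) 64 = Jz 8 66" by (simp add: fetch_def prog_def)
lemma fetch_65[simp]: "fetch (prog dd mm ll dl qa qb) 65 = Jmp 97" by (simp add: fetch_def prog_def)
lemma fetch_66[simp]: "fetch (prog dd mm ll dl qa qb) 66 = Const 9 1" by (simp add: fetch_def prog_def)
lemma fetch_67[simp]: "fetch (prog dd mm ll dl qa qb) 67 = Bin OpAdd 6 1 9" by (simp add: fetch_def prog_def)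
lemma fetch_68[simp]: "fetch (prog dd mm ll dl qa qb) 68 = Const 9 9" by (simp add: fetch_def prog_def)
lemma fetch_69[simp]: "fetch (prog dd mm ll dl qa qb) 69 = Bin OpLess 7 9 6" by (simp add: fetch_def prog_def)
lemma fetch_70[simp]: "fetch (prog dd mm ll dl qa qb) 70 = Const 9 1" by (simp add: fetch_def prog_def)
lemma fetch_71[simp]: "fetch (prog dd mm ll dl qa qb) 71 = Bin OpSub 7 9 7" by (simp add: fetch_def prog_def)
lemma fetch_72[simp]: "fetch (prog dd mm ll dl qa qb) 72 = InLen 8" by (simp add: fetch_def prog_def)
lemma fetch_73[simp]: "fetch (prog dd mm ll dl qa qb) 73 = Const 9 9" by (simp add: fetch_def prog_def)
lemma fetch_74[simp]: "fetch (prog dd mm ll dl qa qb) 74 = Bin OpAdd 8 8 9" by (simp add: fetch_def prog_def)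
lemma fetch_75[simp]: "fetch (prog dd mm ll dl qa qb) 75 = Bin OpMul 7 7 8" by (simp add: fetch_def prog_def)
lemma fetch_76[simp]: "fetch (prog dd mm ll dl qa qb) 76 = Bin OpAdd 7 7 6" by (simp add: fetch_def prog_def)
lemma fetch_77[simp]: "fetch (prog dd mm ll dl qa qb) 77 = Load 7 7" by (simp add: fetch_def prog_def)
lemma fetch_78[simp]: "fetch (prog dd mm ll dl qa qb) 78 = InLen 8" by (simp add: fetch_def prog_def)
lemma fetch_79[simp]: "fetch (prog dd mm ll dl qa qb) 79 = Bin OpLess 8 8 6" by (simp add: fetch_def prog_def)
lemma fetch_80[simp]: "fetch (prog dd mm ll dl qa qb) 80 = Const 9 1" by (simp add: fetch_def prog_def)
lemma fetch_81[simp]: "fetch (prog dd mm ll dl qa qb) 81 = Bin OpSub 8 9 8" by (simp add: fetch_def prog_def)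
lemma fetch_82[simp]: "fetch (prog dd mm ll dl qa qb) 82 = Bin OpMul 7 7 8" by (simp add: fetch_def prog_def)
lemma fetch_83[simp]: "fetch (prog dd mm ll dl qa qb) 83 = Bin OpAdd 2 2 7" by (simp add: fetch_def prog_def)
lemma fetch_84[simp]: "fetch (prog dd mm ll dl qa qb) 84 = InLen 8" by (simp add: fetch_def prog_def)
lemma fetch_85[simp]: "fetch (prog dd mm ll dl qa qb) 85 = Bin OpLess 8 1 8" by (simp add: fetch_def prog_def)
lemma fetch_86[simp]: "fetch (prog dd mm ll dl qa qb) 86 = Bin OpSub 8 9 8" by (simp add: fetch_def prog_def)
lemma fetch_87[simp]: "fetch (prog dd mm ll dl qa qb) 87 = Const 6 ll" by (simp add: fetch_def prog_def)
lemma fetch_88[simp]: "fetch (prog dd mm ll dl qa qb) 88 = Bin OpMul 6 6 8" by (simp add: fetch_def prog_def)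
lemma fetch_89[simp]: "fetch (prog dd mm ll dl qa qb) 89 = Bin OpAdd 6 6 9" by (simp add: fetch_def prog_def)
lemma fetch_90[simp]: "fetch (prog dd mm ll dl qa qb) 90 = Bin OpMul 3 3 6" by (simp add: fetch_def prog_def)
lemma fetch_91[simp]: "fetch (prog dd mm ll dl qa qb) 91 = Const 6 (ll - 1)" by (simp add: fetch_def prog_def)
lemma fetch_92[simp]: "fetch (prog dd mm ll dl qa qb) 92 = Bin OpMul 6 6 8" by (simp add: fetch_def prog_def)
lemma fetch_93[simp]: "fetch (prog dd mm ll dl qa qb) 93 = Bin OpAdd 6 6 9" by (simp add: fetch_def prog_def)
lemma fetch_94[simp]: "fetch (prog dd mm ll dl qa qb) 94 = Bin OpMul 4 4 6" by (simp add: fetch_def prog_def)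
lemma fetch_95[simp]: "fetch (prog dd mm ll dl qa qb) 95 = Bin OpAdd 1 1 9" by (simp add: fetch_def prog_def)
lemma fetch_96[simp]: "fetch (prog dd mm ll dl qa qb) 96 = Jmp 49" by (simp add: fetch_def prog_def)
lemma fetch_97[simp]: "fetch (prog dd mm ll dl qa qb) 97 = Const 6 dl" by (simp add: fetch_def prog_def)
lemma fetch_98[simp]: "fetch (prog dd mm ll dl qa qb) 98 = Bin OpMul 3 1 6" by (simp add: fetch_def prog_def)
lemma fetch_99[simp]: "fetch (prog dd mm ll dl qa qb) 99 = Const 4 1" by (simp add: fetch_def prog_def)
lemma fetch_100[simp]: "fetch (prog dd mm ll dl qa qb) 100 = Const 1 0" by (simp add: fetch_def prog_def)
lemma fetch_101[simp]: "fetch (prog dd mm ll dl qa qb) 101 = Bin OpLess 6 1 3" by (simp add: fetch_def prog_def)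
lemma fetch_102[simp]: "fetch (prog dd mm ll dl qa qb) 102 = Jz 6 112" by (simp add: fetch_def prog_def)
lemma fetch_103[simp]: "fetch (prog dd mm ll dl qa qb) 103 = Bin OpLess 6 1 2" by (simp add: fetch_def prog_def)
lemma fetch_104[simp]: "fetch (prog dd mm ll dl qa qb) 104 = Const 9 (qb - qa)" by (simp add: fetch_def prog_def)
lemma fetch_105[simp]: "fetch (prog dd mm ll dl qa qb) 105 = Bin OpMul 6 6 9" by (simp add: fetch_def prog_def)
lemma fetch_106[simp]: "fetch (prog dd mm ll dl qa qb) 106 = Const 9 qb" by (simp add: fetch_def prog_def)
lemma fetch_107[simp]: "fetch (prog dd mm ll dl qa qb) 107 = Bin OpSub 6 9 6" by (simp add: fetch_def prog_def)
lemma fetch_108[simp]: "fetch (prog dd mm ll dl qa qb) 108 = Bin OpMul 4 4 6" by (simp add: fetch_def prog_def)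
lemma fetch_109[simp]: "fetch (prog dd mm ll dl qa qb) 109 = Const 9 1" by (simp add: fetch_def prog_def)
lemma fetch_110[simp]: "fetch (prog dd mm ll dl qa qb) 110 = Bin OpAdd 1 1 9" by (simp add: fetch_def prog_def)
lemma fetch_111[simp]: "fetch (prog dd mm ll dl qa qb) 111 = Jmp 101" by (simp add: fetch_def prog_def)
lemma fetch_112[simp]: "fetch (prog dd mm ll dl qa qb) 112 = Bin OpOr 7 4 4" by (simp add: fetch_def prog_def)
lemma fetch_113[simp]: "fetch (prog dd mm ll dl qa qb) 113 = Const 5 0" by (simp add: fetch_def prog_def)
lemma fetch_114[simp]: "fetch (prog dd mm ll dl qa qb) 114 = Const 1 0" by (simp add: fetch_def prog_def)
lemma fetch_115[simp]: "fetch (prog dd mm ll dl qa qb) 115 = Bin OpLess 6 3 1" by (simp add: fetch_def prog_def)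
lemma fetch_116[simp]: "fetch (prog dd mm ll dl qa qb) 116 = Jz 6 118" by (simp add: fetch_def prog_def)
lemma fetch_117[simp]: "fetch (prog dd mm ll dl qa qb) 117 = Jmp 134" by (simp add: fetch_def prog_def)
lemma fetch_118[simp]: "fetch (prog dd mm ll dl qa qb) 118 = Bin OpAdd 5 5 7" by (simp add: fetch_def prog_def)
lemma fetch_119[simp]: "fetch (prog dd mm ll dl qa qb) 119 = Bin OpLess 6 1 2" by (simp add: fetch_def prog_def)
lemma fetch_120[simp]: "fetch (prog dd mm ll dl qa qb) 120 = Const 9 (qb - qa)" by (simp add: fetch_def prog_def)
lemma fetch_121[simp]: "fetch (prog dd mm ll dl qa qb) 121 = Bin OpMul 6 6 9" by (simp add: fetch_def prog_def)
lemma fetch_122[simp]: "fetch (prog dd mm ll dl qa qb) 122 = Const 9 qa" by (simp add: fetch_def prog_def)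
lemma fetch_123[simp]: "fetch (prog dd mm ll dl qa qb) 123 = Bin OpAdd 6 9 6" by (simp add: fetch_def prog_def)
lemma fetch_124[simp]: "fetch (prog dd mm ll dl qa qb) 124 = Bin OpMul 7 7 6" by (simp add: fetch_def prog_def)
lemma fetch_125[simp]: "fetch (prog dd mm ll dl qa qb) 125 = Bin OpLess 6 1 2" by (simp add: fetch_def prog_def)
lemma fetch_126[simp]: "fetch (prog dd mm ll dl qa qb) 126 = Const 9 (qb - qa)" by (simp add: fetch_def prog_def)
lemma fetch_127[simp]: "fetch (prog dd mm ll dl qa qb) 127 = Bin OpMul 6 6 9" by (simp add: fetch_def prog_def)
lemma fetch_128[simp]: "fetch (prog dd mm ll dl qa qb) 128 = Const 9 qb" by (simp add: fetch_def prog_def)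
lemma fetch_129[simp]: "fetch (prog dd mm ll dl qa qb) 129 = Bin OpSub 6 9 6" by (simp add: fetch_def prog_def)
lemma fetch_130[simp]: "fetch (prog dd mm ll dl qa qb) 130 = Bin OpDiv 7 7 6" by (simp add: fetch_def prog_def)
lemma fetch_131[simp]: "fetch (prog dd mm ll dl qa qb) 131 = Const 9 1" by (simp add: fetch_def prog_def)
lemma fetch_132[simp]: "fetch (prog dd mm ll dl qa qb) 132 = Bin OpAdd 1 1 9" by (simp add: fetch_def prog_def)
lemma fetch_133[simp]: "fetch (prog dd mm ll dl qa qb) 133 = Jmp 115" by (simp add: fetch_def prog_def)
lemma fetch_134[simp]: "fetch (prog dd mm ll dl qa qb) 134 = Const 9 1" by (simp add: fetch_def prog_def)
lemma fetch_135[simp]: "fetch (prog dd mm ll dl qa qb) 135 = Bin OpSub 6 5 9" by (simp add: fetch_def prog_def)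
lemma fetch_136[simp]: "fetch (prog dd mm ll dl qa qb) 136 = Rand 5 6" by (simp add: fetch_def prog_def)
lemma fetch_137[simp]: "fetch (prog dd mm ll dl qa qb) 137 = Bin OpOr 7 4 4" by (simp add: fetch_def prog_def)
lemma fetch_138[simp]: "fetch (prog dd mm ll dl qa qb) 138 = Const 4 0" by (simp add: fetch_def prog_def)
lemma fetch_139[simp]: "fetch (prog dd mm ll dl qa qb) 139 = Const 8 0" by (simp add: fetch_def prog_def)
lemma fetch_140[simp]: "fetch (prog dd mm ll dl qa qb) 140 = Const 1 0" by (simp add: fetch_def prog_def)
lemma fetch_141[simp]: "fetch (prog dd mm ll dl qa qb) 141 = Bin OpLess 6 1 3" by (simp add: fetch_def prog_def)
lemma fetch_142[simp]: "fetch (prog dd mm ll dl qa qb) 142 = Jz 6 163" by (simp add: fetch_def prog_def)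
lemma fetch_143[simp]: "fetch (prog dd mm ll dl qa qb) 143 = Bin OpAdd 4 4 7" by (simp add: fetch_def prog_def)
lemma fetch_144[simp]: "fetch (prog dd mm ll dl qa qb) 144 = Bin OpLess 6 5 4" by (simp add: fetch_def prog_def)
lemma fetch_145[simp]: "fetch (prog dd mm ll dl qa qb) 145 = Const 9 1" by (simp add: fetch_def prog_def)
lemma fetch_146[simp]: "fetch (prog dd mm ll dl qa qb) 146 = Bin OpSub 6 9 6" by (simp add: fetch_def prog_def)
lemma fetch_147[simp]: "fetch (prog dd mm ll dl qa qb) 147 = Bin OpAdd 8 8 6" by (simp add: fetch_def prog_def)
lemma fetch_148[simp]: "fetch (prog dd mm ll dl qa qb) 148 = Bin OpLess 6 1 2" by (simp add: fetch_def prog_def)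
lemma fetch_149[simp]: "fetch (prog dd mm ll dl qa qb) 149 = Const 9 (qb - qa)" by (simp add: fetch_def prog_def)
lemma fetch_150[simp]: "fetch (prog dd mm ll dl qa qb) 150 = Bin OpMul 6 6 9" by (simp add: fetch_def prog_def)
lemma fetch_151[simp]: "fetch (prog dd mm ll dl qa qb) 151 = Const 9 qa" by (simp add: fetch_def prog_def)
lemma fetch_152[simp]: "fetch (prog dd mm ll dl qa qb) 152 = Bin OpAdd 6 9 6" by (simp add: fetch_def prog_def)
lemma fetch_153[simp]: "fetch (prog dd mm ll dl qa qb) 153 = Bin OpMul 7 7 6" by (simp add: fetch_def prog_def)
lemma fetch_154[simp]: "fetch (prog dd mm ll dl qa qb) 154 = Bin OpLess 6 1 2" by (simp add: fetch_def prog_def)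
lemma fetch_155[simp]: "fetch (prog dd mm ll dl qa qb) 155 = Const 9 (qb - qa)" by (simp add: fetch_def prog_def)
lemma fetch_156[simp]: "fetch (prog dd mm ll dl qa qb) 156 = Bin OpMul 6 6 9" by (simp add: fetch_def prog_def)
lemma fetch_157[simp]: "fetch (prog dd mm ll dl qa qb) 157 = Const 9 qb" by (simp add: fetch_def prog_def)
lemma fetch_158[simp]: "fetch (prog dd mm ll dl qa qb) 158 = Bin OpSub 6 9 6" by (simp add: fetch_def prog_def)
lemma fetch_159[simp]: "fetch (prog dd mm ll dl qa qb) 159 = Bin OpDiv 7 7 6" by (simp add: fetch_def prog_def)
lemma fetch_160[simp]: "fetch (prog dd mm ll dl qa qb) 160 = Const 9 1" by (simp add: fetch_def prog_def)
lemma fetch_161[simp]: "fetch (prog dd mm ll dl qa qb) 161 = Bin OpAdd 1 1 9" by (simp add: fetch_def prog_def)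
lemma fetch_162[simp]: "fetch (prog dd mm ll dl qa qb) 162 = Jmp 141" by (simp add: fetch_def prog_def)
lemma fetch_163[simp]: "fetch (prog dd mm ll dl qa qb) 163 = Bin OpOr 0 8 8" by (simp add: fetch_def prog_def)
lemma fetch_164[simp]: "fetch (prog dd mm ll dl qa qb) 164 = Halt" by (simp add: fetch_def prog_def)
lemma length_prog[simp]: "length (prog dd mm ll dl qa qb) = 165" by (simp add: prog_def)

lemma dok_Suc_simp: "dok P n (Suc k) s = (\<not> halted s \<and> \<not> is_rand (fetch P (pc s)) \<and> dok P n k (dst P n s))" by simp
lemma dsteps_num: "dsteps P n (numeral k) s = dsteps P n (pred_numeral k) (dst P n s)"
  by (simp add: numeral_eq_Suc)
lemma dok_num: "dok P n (numeral k) s = (\<not> halted s \<and> \<not> is_rand (fetch P (pc s)) \<and> dok P n (pred_numeral k) (dst P n s))"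
  by (simp add: numeral_eq_Suc)


definition dist :: "nat \<Rightarrow> nat \<Rightarrow> nat" where "dist y \<sigma> = (y - \<sigma>) + (\<sigma> - y)"
definition wt :: "nat \<Rightarrow> nat \<Rightarrow> nat \<Rightarrow> nat \<Rightarrow> nat \<Rightarrow> nat" where
  "wt qa qb \<sigma> U y = qa ^ dist y \<sigma> * qb ^ (U - dist y \<sigma>)"
definition Cs :: "nat \<Rightarrow> nat \<Rightarrow> nat \<Rightarrow> nat \<Rightarrow> nat \<Rightarrow> nat" where
  "Cs qa qb \<sigma> U k = (\<Sum>y<k. wt qa qb \<sigma> U y)"
definition Yf :: "nat \<Rightarrow> nat \<Rightarrow> nat \<Rightarrow> nat \<Rightarrow> nat \<Rightarrow> nat" where
  "Yf qa qb \<sigma> U u = (\<Sum>y<U. if Cs qa qb \<sigma> U (Suc y) \<le> u then 1 else 0)"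

lemma wt_step:
  assumes "0 < qa" "qa \<le> qb" "\<sigma> \<le> U" "i < U"
  shows "wt qa qb \<sigma> U (Suc i) = wt qa qb \<sigma> U i * (qa + (if i < \<sigma> then 1 else 0) * (qb - qa)) div (qb - (if i < \<sigma> then 1 else 0) * (qb - qa))"
proof (cases "i < \<sigma>")
  case True
  then have d1: "dist i \<sigma> = Suc (dist (Suc i) \<sigma>)" by (simp add: dist_def)
  have d2: "U - dist (Suc i) \<sigma> = Suc (U - dist i \<sigma>)" using True assms by (simp add: dist_def)
  have "wt qa qb \<sigma> U i * (qa + (if i < \<sigma> then 1 else 0) * (qb - qa)) = qa * wt qa qb \<sigma> U (Suc i)"
    using True assms by (simp add: wt_def d1 d2)
  then show ?thesis using True assms by simp
next
  case False
  then have d1: "dist (Suc i) \<sigma> = Suc (dist i \<sigma>)" by (simp add: dist_def)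
  have d2: "U - dist i \<sigma> = Suc (U - dist (Suc i) \<sigma>)" using False assms by (simp add: dist_def)
  have "wt qa qb \<sigma> U i * (qa + (if i < \<sigma> then 1 else 0) * (qb - qa)) = qb * wt qa qb \<sigma> U (Suc i)"
    using False assms by (simp add: wt_def d1 d2)
  then show ?thesis using False assms by simp
qed

lemma Cs_Suc: "Cs qa qb \<sigma> U (Suc i) = Cs qa qb \<sigma> U i + wt qa qb \<sigma> U i"
  by (simp add: Cs_def)

abbreviation "PR dd mm ll dl qa qb \<equiv> prog dd mm ll dl qa qb"



lemma LC:
  assumes q: "0 < qa" "qa \<le> qb" "\<sigma> \<le> U"
  shows "pc s = 141 \<Longrightarrow> \<not> halted s \<Longrightarrow> mem s 1 = i \<Longrightarrow> i \<le> U \<Longrightarrow> mem s 2 = \<sigma> \<Longrightarrow> mem s 3 = U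
   \<Longrightarrow> mem s 4 = Cs qa qb \<sigma> U i \<Longrightarrow> mem s 5 = u \<Longrightarrow> mem s 7 = wt qa qb \<sigma> U i
   \<Longrightarrow> mem s 8 = (\<Sum>y<i. if Cs qa qb \<sigma> U (Suc y) \<le> u then 1 else 0)
   \<Longrightarrow> hp (PR dd mm ll dl qa qb) n S s = (if (Yf qa qb \<sigma> U u, time s + 22 * (U - i) + 4) \<in> S then 1 else 0)"
proof (induction "U - i" arbitrary: s i)
  case 0
  then have iU: "i = U" by simp
  have d: "dok (PR dd mm ll dl qa qb) n 4 s" using 0 iU by (simp add: dok_num dst_def)
  have "hp (PR dd mm ll dl qa qb) n S s = hp (PR dd mm ll dl qa qb) n S (dsteps (PR dd mm ll dl qa qb) n 4 s)"
    by (rule hp_dsteps[OF d])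
  also have "\<dots> = (if (Yf qa qb \<sigma> U u, time (dsteps (PR dd mm ll dl qa qb) n 4 s)) \<in> S then 1 else 0)"
    using 0 iU by (simp add: dsteps_num dst_def hp_halted Yf_def)
  also have "time (dsteps (PR dd mm ll dl qa qb) n 4 s) = time s + 22 * (U - i) + 4"
    using 0 iU by (simp add: dsteps_num dst_def)
  finally show ?case .
next
  case (Suc k)
  then have iU: "i < U" by simp
  have d: "dok (PR dd mm ll dl qa qb) n 22 s" using Suc iU by (simp add: dok_num dst_def)
  have "hp (PR dd mm ll dl qa qb) n S s = hp (PR dd mm ll dl qa qb) n S (dsteps (PR dd mm ll dl qa qb) n 22 s)"
    by (rule hp_dsteps[OF d])
  also have "\<dots> = (if (Yf qa qb \<sigma> U u, time (dsteps (PR dd mm ll dl qa qb) n 22 s) + 22 * (U - Suc i) + 4) \<in> S then 1 else 0)"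
  proof (rule Suc.hyps(1))
    show "k = U - Suc i" using Suc by simp
  qed (use Suc iU q wt_step[OF q iU] in \<open>simp_all add: dsteps_num dst_def Cs_Suc\<close>)
  also have "time (dsteps (PR dd mm ll dl qa qb) n 22 s) + 22 * (U - Suc i) + 4 = time s + 22 * (U - i) + 4"
    using Suc iU by (simp add: dsteps_num dst_def)
  finally show ?case .
qed


lemma LB_rand:
  assumes q: "0 < qa" "qa \<le> qb" "\<sigma> \<le> U"
    and LC: "\<And>s' v. pc s' = 141 \<Longrightarrow> \<not> halted s' \<Longrightarrow> mem s' 1 = 0 \<Longrightarrow> mem s' 2 = \<sigma> \<Longrightarrow> mem s' 3 = U
   \<Longrightarrow> mem s' 4 = 0 \<Longrightarrow> mem s' 5 = v \<Longrightarrow> mem s' 7 = wt qa qb \<sigma> U 0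
   \<Longrightarrow> mem s' 8 = 0
   \<Longrightarrow> hp (PR dd mm ll dl qa qb) n S s' = (if (Yf qa qb \<sigma> U v, time s' + 22 * U + 4) \<in> S then 1 else 0)"
  shows "pc s = 115 \<Longrightarrow> \<not> halted s \<Longrightarrow> mem s 1 = Suc U \<Longrightarrow> mem s 2 = \<sigma> \<Longrightarrow> mem s 3 = U
   \<Longrightarrow> mem s 4 = wt qa qb \<sigma> U 0 \<Longrightarrow> mem s 5 = Cs qa qb \<sigma> U (Suc U)
   \<Longrightarrow> hp (PR dd mm ll dl qa qb) n S s = (\<Sum>u\<in>{0..<Cs qa qb \<sigma> U (Suc U)}. (if (Yf qa qb \<sigma> U u, time s + 10 + 22 * U + 4) \<in> S then 1 else 0)) / of_nat (Cs qa qb \<sigma> U (Suc U))"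
proof -
  assume a: "pc s = 115" "\<not> halted s" "mem s 1 = Suc U" "mem s 2 = \<sigma>" "mem s 3 = U"
    "mem s 4 = wt qa qb \<sigma> U 0" "mem s 5 = Cs qa qb \<sigma> U (Suc U)"
  define W where "W = Cs qa qb \<sigma> U (Suc U)"
  have W1: "W \<ge> 1"
  proof -
    have "wt qa qb \<sigma> U 0 \<ge> 1" using q by (simp add: wt_def)
    moreover have "wt qa qb \<sigma> U 0 \<le> W" unfolding W_def Cs_def by (rule member_le_sum) auto
    ultimately show ?thesis by simp
  qed
  define P where "P = PR dd mm ll dl qa qb"
  have d: "dok P n 5 s" using a unfolding P_def by (simp add: dok_num dst_def)
  define s5 where "s5 = dsteps P n 5 s"
  have s5: "pc s5 = 136" "\<not> halted s5" "mem s5 6 = W - 1" "time s5 = time s + 5"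
    "mem s5 2 = \<sigma>" "mem s5 3 = U" "mem s5 4 = wt qa qb \<sigma> U 0"
    using a unfolding s5_def P_def W_def by (simp_all add: dsteps_num dst_def)
  have "hp P n S s = hp P n S s5" unfolding s5_def by (rule hp_dsteps[OF d])
  also have "\<dots> = (\<Sum>v\<in>{0..mem s5 6}. hp P n S (s5\<lparr>mem := (mem s5)(5 := v), pc := Suc (pc s5), time := Suc (time s5)\<rparr>)) / of_nat (Suc (mem s5 6))"
    by (rule hp_rand) (use s5 in \<open>simp_all add: P_def\<close>)
  also have "\<dots> = (\<Sum>v\<in>{0..<W}. (if (Yf qa qb \<sigma> U v, time s + 10 + 22 * U + 4) \<in> S then 1 else 0)) / of_nat W"
  proof -
    have "{0..mem s5 6} = {0..<W}" using W1 s5 by auto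
    moreover have "Suc (mem s5 6) = W" using W1 s5 by simp
    moreover have "hp P n S (s5\<lparr>mem := (mem s5)(5 := v), pc := Suc (pc s5), time := Suc (time s5)\<rparr>)
        = (if (Yf qa qb \<sigma> U v, time s + 10 + 22 * U + 4) \<in> S then 1 else 0)" for v
    proof -
      define sv where "sv = s5\<lparr>mem := (mem s5)(5 := v), pc := Suc (pc s5), time := Suc (time s5)\<rparr>"
      have dv: "dok P n 4 sv" using s5 unfolding sv_def P_def by (simp add: dok_num dst_def)
      have "hp P n S sv = hp P n S (dsteps P n 4 sv)" by (rule hp_dsteps[OF dv])
      also have "\<dots> = (if (Yf qa qb \<sigma> U v, time (dsteps P n 4 sv) + 22 * U + 4) \<in> S then 1 else 0)"
        unfolding P_def by (rule LC) (use s5 in \<open>simp_all add: sv_def dsteps_num dst_def P_def\<close>)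
      also have "time (dsteps P n 4 sv) = time s + 10"
        using s5 unfolding sv_def P_def by (simp add: dsteps_num dst_def)
      finally show ?thesis unfolding sv_def by (simp add: add.assoc)
    qed
    ultimately show ?thesis by simp
  qed
  finally show ?thesis unfolding P_def W_def .
qed

lemma wt_step1: "0 < qa \<Longrightarrow> qa \<le> qb \<Longrightarrow> \<sigma> \<le> U \<Longrightarrow> i < \<sigma> \<Longrightarrow> wt qa qb \<sigma> U i * qb div qa = wt qa qb \<sigma> U (Suc i)"
  using wt_step[of qa qb \<sigma> U i] by simp
lemma wt_step2: "0 < qa \<Longrightarrow> qa \<le> qb \<Longrightarrow> \<sigma> \<le> U \<Longrightarrow> \<not> i < \<sigma> \<Longrightarrow> Suc i \<le> U \<Longrightarrow> wt qa qb \<sigma> U i * qa div qb = wt qa qb \<sigma> U (Suc i)"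
  using wt_step[of qa qb \<sigma> U i] by simp

lemma LB_loop:
  assumes q: "0 < qa" "qa \<le> qb" "\<sigma> \<le> U"
    and R: "\<And>s'. pc s' = 115 \<Longrightarrow> \<not> halted s' \<Longrightarrow> mem s' 1 = Suc U \<Longrightarrow> mem s' 2 = \<sigma> \<Longrightarrow> mem s' 3 = U
   \<Longrightarrow> mem s' 4 = wt qa qb \<sigma> U 0 \<Longrightarrow> mem s' 5 = Cs qa qb \<sigma> U (Suc U)
   \<Longrightarrow> hp (PR dd mm ll dl qa qb) n S s' = F (time s')"
  shows "pc s = 115 \<Longrightarrow> \<not> halted s \<Longrightarrow> mem s 1 = i \<Longrightarrow> i \<le> Suc U \<Longrightarrow> mem s 2 = \<sigma> \<Longrightarrow> mem s 3 = U
   \<Longrightarrow> mem s 4 = wt qa qb \<sigma> U 0 \<Longrightarrow> mem s 5 = Cs qa qb \<sigma> U i \<Longrightarrow> (i \<le> U \<longrightarrow> mem s 7 = wt qa qb \<sigma> U i)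
   \<Longrightarrow> hp (PR dd mm ll dl qa qb) n S s = F (time s + 18 * (Suc U - i))"
proof (induction "Suc U - i" arbitrary: s i)
  case 0
  then have "i = Suc U" by simp
  with 0 show ?case using R by simp
next
  case (Suc k)
  then have iU: "i \<le> U" by simp
  define P where "P = PR dd mm ll dl qa qb"
  have d: "dok P n 18 s" using Suc iU unfolding P_def by (simp add: dok_num dst_def)
  have "hp P n S s = hp P n S (dsteps P n 18 s)" by (rule hp_dsteps[OF d])
  also have "\<dots> = F (time (dsteps P n 18 s) + 18 * (Suc U - Suc i))"
    unfolding P_def
  proof (rule Suc.hyps(1))
    show "k = Suc U - Suc i" using Suc by simp
  qed (use Suc iU q in \<open>simp_all add: dsteps_num dst_def Cs_Suc wt_step1 wt_step2\<close>)
  also have "time (dsteps P n 18 s) + 18 * (Suc U - Suc i) = time s + 18 * (Suc U - i)"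
    using Suc iU unfolding P_def by (simp add: dsteps_num dst_def)
  finally show ?case unfolding P_def .
qed


lemma pw_eq: "(\<Prod>l<i. if l < \<sigma> then qa else qb) = qa ^ min i \<sigma> * (qb::nat) ^ (i - \<sigma>)"
proof (induction i)
  case (Suc i)
  then show ?case
    by (cases "i < \<sigma>") (auto simp: min_def Suc_diff_le not_less)
qed simp

lemma LA_loop:
  assumes q: "0 < qa" "qa \<le> qb" "\<sigma> \<le> U"
    and R: "\<And>s'. pc s' = 112 \<Longrightarrow> \<not> halted s' \<Longrightarrow> mem s' 1 = U \<Longrightarrow> mem s' 2 = \<sigma> \<Longrightarrow> mem s' 3 = U
   \<Longrightarrow> mem s' 4 = wt qa qb \<sigma> U 0
   \<Longrightarrow> hp (PR dd mm ll dl qa qb) n S s' = F (time s')"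
  shows "pc s = 101 \<Longrightarrow> \<not> halted s \<Longrightarrow> mem s 1 = i \<Longrightarrow> i \<le> U \<Longrightarrow> mem s 2 = \<sigma> \<Longrightarrow> mem s 3 = U
   \<Longrightarrow> mem s 4 = (\<Prod>l<i. if l < \<sigma> then qa else qb)
   \<Longrightarrow> hp (PR dd mm ll dl qa qb) n S s = F (time s + 11 * (U - i) + 2)"
proof (induction "U - i" arbitrary: s i)
  case 0
  then have iU: "i = U" by simp
  define P where "P = PR dd mm ll dl qa qb"
  have d: "dok P n 2 s" using 0 iU unfolding P_def by (simp add: dok_num dst_def)
  have "hp P n S s = hp P n S (dsteps P n 2 s)" by (rule hp_dsteps[OF d])
  also have "\<dots> = F (time (dsteps P n 2 s))"
    unfolding P_def
  proof (rule R)
    have "(\<Prod>l<U. if l < \<sigma> then qa else qb) = wt qa qb \<sigma> U 0"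
      using q by (simp add: pw_eq wt_def dist_def min_def)
    then show "mem (dsteps (PR dd mm ll dl qa qb) n 2 s) 4 = wt qa qb \<sigma> U 0"
      using 0 iU by (simp add: dsteps_num dst_def)
  qed (use 0 iU in \<open>simp_all add: dsteps_num dst_def\<close>)
  also have "time (dsteps P n 2 s) = time s + 11 * (U - i) + 2"
    using 0 iU unfolding P_def by (simp add: dsteps_num dst_def)
  finally show ?case unfolding P_def .
next
  case (Suc k)
  then have iU: "i < U" by simp
  define P where "P = PR dd mm ll dl qa qb"
  have d: "dok P n 11 s" using Suc iU unfolding P_def by (simp add: dok_num dst_def)
  have "hp P n S s = hp P n S (dsteps P n 11 s)" by (rule hp_dsteps[OF d])
  also have "\<dots> = F (time (dsteps P n 11 s) + 11 * (U - Suc i) + 2)"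
    unfolding P_def
  proof (rule Suc.hyps(1))
    show "k = U - Suc i" using Suc by simp
    show "mem (dsteps (PR dd mm ll dl qa qb) n 11 s) 4 = (\<Prod>l<Suc i. if l < \<sigma> then qa else qb)"
      using Suc iU q by (simp add: dsteps_num dst_def)
  qed (use Suc iU q in \<open>simp_all add: dsteps_num dst_def\<close>)
  also have "time (dsteps P n 11 s) + 11 * (U - Suc i) + 2 = time s + 11 * (U - i) + 2"
    using Suc iU unfolding P_def by (simp add: dsteps_num dst_def)
  finally show ?case unfolding P_def .
qed

definition E2 :: "nat \<Rightarrow> nat \<Rightarrow> nat \<Rightarrow> nat \<Rightarrow> (nat \<times> nat) set \<Rightarrow> nat \<Rightarrow> ennreal" where
  "E2 qa qb \<sigma> U S t = (\<Sum>u\<in>{0..<Cs qa qb \<sigma> U (Suc U)}. (if (Yf qa qb \<sigma> U u, t) \<in> S then 1 else 0)) / of_nat (Cs qa qb \<sigma> U (Suc U))"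

lemma stage2:
  assumes q: "0 < qa" "qa \<le> qb" "\<sigma> \<le> j * dl"
  shows "pc s = 97 \<Longrightarrow> \<not> halted s \<Longrightarrow> mem s 1 = j \<Longrightarrow> mem s 2 = \<sigma>
   \<Longrightarrow> hp (PR dd mm ll dl qa qb) n S s = E2 qa qb \<sigma> (j * dl) S (time s + 51 * (j * dl) + 41)"
proof -
  assume a: "pc s = 97" "\<not> halted s" "mem s 1 = j" "mem s 2 = \<sigma>"
  define U where "U = j * dl"
  have qU: "\<sigma> \<le> U" using q U_def by simp
  define P where "P = PR dd mm ll dl qa qb"
  have RB: "hp P n S s' = E2 qa qb \<sigma> U S (time s' + 10 + 22 * U + 4)"
    if "pc s' = 115" "\<not> halted s'" "mem s' 1 = Suc U" "mem s' 2 = \<sigma>" "mem s' 3 = U"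
       "mem s' 4 = wt qa qb \<sigma> U 0" "mem s' 5 = Cs qa qb \<sigma> U (Suc U)" for s'
    unfolding P_def E2_def
  proof (rule LB_rand[OF q(1,2) qU _ that])
    fix s'' :: state and v assume b: "pc s'' = 141" "\<not> halted s''" "mem s'' 1 = 0" "mem s'' 2 = \<sigma>" "mem s'' 3 = U"
      "mem s'' 4 = 0" "mem s'' 5 = v" "mem s'' 7 = wt qa qb \<sigma> U 0" "mem s'' 8 = 0"
    show "hp (PR dd mm ll dl qa qb) n S s'' = (if (Yf qa qb \<sigma> U v, time s'' + 22 * U + 4) \<in> S then 1 else 0)"
      using LC[OF q(1,2) qU, where i=0 and u=v and s=s''] b by (simp add: Cs_def)
  qed
  have RA: "hp P n S s' = E2 qa qb \<sigma> U S (time s' + 3 + 18 * Suc U + 10 + 22 * U + 4)"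
    if "pc s' = 112" "\<not> halted s'" "mem s' 1 = U" "mem s' 2 = \<sigma>" "mem s' 3 = U"
       "mem s' 4 = wt qa qb \<sigma> U 0" for s'
  proof -
    have d: "dok P n 3 s'" using that unfolding P_def by (simp add: dok_num dst_def)
    have "hp P n S s' = hp P n S (dsteps P n 3 s')" by (rule hp_dsteps[OF d])
    also have "\<dots> = E2 qa qb \<sigma> U S (time (dsteps P n 3 s') + 18 * (Suc U - 0) + 10 + 22 * U + 4)"
      unfolding P_def
      by (rule LB_loop[OF q(1,2) qU, where F = "\<lambda>t. E2 qa qb \<sigma> U S (t + 10 + 22 * U + 4)", OF RB[unfolded P_def]])
        (use that in \<open>simp_all add: dsteps_num dst_def Cs_def\<close>)
    also have "time (dsteps P n 3 s') = time s' + 3" using that unfolding P_def by (simp add: dsteps_num dst_def)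
    finally show ?thesis by (simp add: add.assoc)
  qed
  have d: "dok P n 4 s" using a unfolding P_def by (simp add: dok_num dst_def)
  have "hp P n S s = hp P n S (dsteps P n 4 s)" by (rule hp_dsteps[OF d])
  also have "\<dots> = E2 qa qb \<sigma> U S (time (dsteps P n 4 s) + 11 * (U - 0) + 2 + 3 + 18 * Suc U + 10 + 22 * U + 4)"
    unfolding P_def
    by (rule LA_loop[OF q(1,2) qU, where F = "\<lambda>t. E2 qa qb \<sigma> U S (t + 3 + 18 * Suc U + 10 + 22 * U + 4)", OF RA[unfolded P_def]])
      (use a in \<open>simp_all add: dsteps_num dst_def U_def\<close>)
  also have "time (dsteps P n 4 s) = time s + 4" using a unfolding P_def by (simp add: dsteps_num dst_def)
  finally show ?thesis unfolding P_def U_def by (simp add: algebra_simps)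
qed


definition inp_ok :: "nat list \<Rightarrow> (nat \<Rightarrow> nat) \<Rightarrow> bool" where
  "inp_ok x m \<longleftrightarrow> (\<forall>i<length x. (if i < 9 then m (length x + 9 + Suc i) else m (Suc i)) = x ! i)"

lemma inp_ok_upd[simp]: "inp_ok x m \<Longrightarrow> a \<le> 9 \<Longrightarrow> inp_ok x (m(a := v))"
  unfolding inp_ok_def by auto

lemma inp_ok_read: "inp_ok x m \<Longrightarrow> j < length x \<Longrightarrow> j < 9 \<Longrightarrow> m (length x + 9 + Suc j) = x ! j"
  unfolding inp_ok_def by auto
lemma inp_ok_read': "inp_ok x m \<Longrightarrow> j < length x \<Longrightarrow> j < 9 \<Longrightarrow> m (10 + (length x + j)) = x ! j"
  using inp_ok_read[of x m j] by (simp add: add.commute add.left_commute)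
lemma inp_ok_read2: "inp_ok x m \<Longrightarrow> j < length x \<Longrightarrow> \<not> j < 9 \<Longrightarrow> m (Suc j) = x ! j"
  unfolding inp_ok_def by force

lemma sum_take_Suc: "sum_list (take (Suc j) x) = sum_list (take j x) + (if j < length x then x ! j else 0)"
  by (simp add: take_Suc_conv_app_nth)

lemma pow_step: "(b::nat) ^ (j - n) * (1 + (b - 1) * (if n \<le> j then 1 else 0)) = b ^ (Suc j - n)" if "b \<ge> 1"
proof (cases "n \<le> j")
  case True
  then have "Suc j - n = Suc (j - n)" by simp
  then show ?thesis using True that by simp
qed simp

definition hz :: "nat \<Rightarrow> nat \<Rightarrow> nat \<Rightarrow> nat \<Rightarrow> nat \<Rightarrow> real" where
  "hz dd mm ll n j = min (1 / real ll) (real ((ll+1) ^ (j - n)) / (real (ll ^ (j - n)) * real ((n + mm) ^ dd)))"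

fun LBr :: "(nat \<Rightarrow> real) \<Rightarrow> (nat \<Rightarrow> nat \<Rightarrow> ennreal) \<Rightarrow> nat \<Rightarrow> nat \<Rightarrow> nat \<Rightarrow> ennreal" where
  "LBr h g j 0 t = 0"
| "LBr h g j (Suc k) t = ennreal (h j) * g j t + ennreal (1 - h j) * LBr h g (Suc j) k (t + 44)"

lemma sum_split_const:
  fixes A B :: ennreal
  assumes "N \<le> M"
  shows "(\<Sum>v\<in>{0..<M}. if v < N then A else B) = of_nat N * A + of_nat (M - N) * B"
proof -
  have "{0..<M} = {0..<N} \<union> {N..<M}" using assms by auto
  then have "(\<Sum>v\<in>{0..<M}. if v < N then A else B) = (\<Sum>v\<in>{0..<N}. if v < N then A else B) + (\<Sum>v\<in>{N..<M}. if v < N then A else B)"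
    by (simp add: sum.union_disjoint)
  also have "\<dots> = (\<Sum>v\<in>{0..<N}. A) + (\<Sum>v\<in>{N..<M}. B)" by simp
  finally show ?thesis by simp
qed

lemma ennreal_mix:
  fixes A B :: ennreal
  assumes "0 < M" "N \<le> M"
  shows "(of_nat N * A + of_nat (M - N) * B) / of_nat M = ennreal (real N / real M) * A + ennreal (1 - real N / real M) * B"
proof -
  have e1: "of_nat N / (of_nat M :: ennreal) = ennreal (real N / real M)"
    using assms by (simp add: divide_ennreal[symmetric] ennreal_of_nat_eq_real_of_nat)
  have "1 - real N / real M = real (M - N) / real M" using assms by (simp add: field_simps of_nat_diff)
  then have e2: "of_nat (M - N) / (of_nat M :: ennreal) = ennreal (1 - real N / real M)"
    using assms by (simp add: divide_ennreal[symmetric] ennreal_of_nat_eq_real_of_nat)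
  have "(of_nat N * A + of_nat (M - N) * B) / of_nat M = (of_nat N / of_nat M) * A + (of_nat (M - N) / of_nat M) * B"
    by (simp add: divide_ennreal_def algebra_simps)
  then show ?thesis using e1 e2 by simp
qed

lemma sum_take_le: "\<forall>v\<in>set x. v \<le> dl \<Longrightarrow> sum_list (take j x) \<le> j * dl"
proof (induction x arbitrary: j)
  case (Cons a x)
  then show ?case by (cases j) (auto simp: add_mono)
qed simp

lemma S1_cont:
  assumes ll1: "1 \<le> ll"
  shows "pc s = 63 \<Longrightarrow> \<not> halted s \<Longrightarrow> inp_ok x (mem s) \<Longrightarrow> mem s 1 = j \<Longrightarrow> mem s 2 = sum_list (take j x)
   \<Longrightarrow> mem s 3 = (ll+1)^(j - length x) \<Longrightarrow> mem s 4 = ll^(j - length x) \<Longrightarrow> mem s 5 = (length x + mm)^dd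
   \<Longrightarrow> \<not> mem s 9 < mem s 6
   \<Longrightarrow> dok (PR dd mm ll dl qa qb) (length x) 33 s \<and>
       pc (dsteps (PR dd mm ll dl qa qb) (length x) 33 s) = 49 \<and>
       \<not> halted (dsteps (PR dd mm ll dl qa qb) (length x) 33 s) \<and>
       inp_ok x (mem (dsteps (PR dd mm ll dl qa qb) (length x) 33 s)) \<and>
       mem (dsteps (PR dd mm ll dl qa qb) (length x) 33 s) 1 = Suc j \<and>
       mem (dsteps (PR dd mm ll dl qa qb) (length x) 33 s) 2 = sum_list (take (Suc j) x) \<and>
       mem (dsteps (PR dd mm ll dl qa qb) (length x) 33 s) 3 = (ll+1)^(Suc j - length x) \<and>
       mem (dsteps (PR dd mm ll dl qa qb) (length x) 33 s) 4 = ll^(Suc j - length x) \<and>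
       mem (dsteps (PR dd mm ll dl qa qb) (length x) 33 s) 5 = (length x + mm)^dd \<and>
       time (dsteps (PR dd mm ll dl qa qb) (length x) 33 s) = time s + 33"
proof -
  assume a: "pc s = 63" "\<not> halted s" "inp_ok x (mem s)" "mem s 1 = j" "mem s 2 = sum_list (take j x)"
    "mem s 3 = (ll+1)^(j - length x)" "mem s 4 = ll^(j - length x)" "mem s 5 = (length x + mm)^dd"
    "\<not> mem s 9 < mem s 6"
  have p1: "(ll+1) ^ (j - length x) * (1 + ll * (if length x \<le> j then 1 else 0)) = (ll+1) ^ (Suc j - length x)"
    using pow_step[of "ll+1" j "length x"] by simp
  have p2: "ll ^ (j - length x) * (1 + (ll - 1) * (if length x \<le> j then 1 else 0)) = ll ^ (Suc j - length x)"
    using pow_step[of "ll" j "length x"] ll1 by simp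
  show ?thesis
  proof (cases "j < 9")
    case True
    then show ?thesis using a p1 p2
      by (cases "j < length x") (simp_all add: dok_num dsteps_num dst_def sum_take_Suc inp_ok_read' not_less)
  next
    case False
    then show ?thesis using a p1 p2
      by (cases "j < length x") (simp_all add: dok_num dsteps_num dst_def sum_take_Suc inp_ok_read2 not_less)
  qed
qed


lemma S1_loop:
  assumes q: "0 < qa" "qa \<le> qb" and ds: "\<forall>v\<in>set x. v \<le> dl" and ll1: "1 \<le> ll" and mm1: "1 \<le> mm"
  shows "pc s = 49 \<Longrightarrow> \<not> halted s \<Longrightarrow> inp_ok x (mem s) \<Longrightarrow> mem s 1 = j \<Longrightarrow> mem s 2 = sum_list (take j x)
   \<Longrightarrow> mem s 3 = (ll+1)^(j - length x) \<Longrightarrow> mem s 4 = ll^(j - length x) \<Longrightarrow> mem s 5 = (length x + mm)^dd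
   \<Longrightarrow> LBr (hz dd mm ll (length x)) (\<lambda>j t. E2 qa qb (sum_list (take j x)) (j * dl) S (t + 14 + 51 * (j * dl) + 41)) j k (time s)
       \<le> hp (PR dd mm ll dl qa qb) (length x) S s"
proof (induction k arbitrary: s j)
  case 0
  then show ?case by simp
next
  case (Suc k)
  define n where "n = length x"
  define P where "P = PR dd mm ll dl qa qb"
  define h where "h = hz dd mm ll n"
  define g where "g = (\<lambda>j t. E2 qa qb (sum_list (take j x)) (j * dl) S (t + 14 + 51 * (j * dl) + 41))"
  define NB where "NB = (ll+1)^(j - n)"
  define NA where "NA = ll^(j - n)"
  define D where "D = (n + mm)^dd"
  have D1: "D \<ge> 1" using mm1 unfolding D_def by simp
  have NA1: "NA \<ge> 1" using ll1 unfolding NA_def by simp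
  define cap where "cap = (NA * D < NB * ll)"
  define NUM where "NUM = (if cap then 1 else NB)"
  define DEN where "DEN = (if cap then ll else NA * D)"
  have DEN1: "DEN \<ge> 1" using ll1 NA1 D1 unfolding DEN_def by (simp add: one_le_mult_iff)
  have NUMDEN: "NUM \<le> DEN"
  proof -
    have "NB \<le> NB * ll" using ll1 by simp
    show ?thesis
    proof (cases cap)
      case False
      then have "NB * ll \<le> NA * D" unfolding cap_def by simp
      with \<open>NB \<le> NB * ll\<close> have "NB \<le> NA * D" by (rule order_trans)
      then show ?thesis using False unfolding NUM_def DEN_def by simp
    qed (use ll1 in \<open>simp add: NUM_def DEN_def\<close>)
  qed
  have hj: "h j = real NUM / real DEN"
  proof (cases cap)
    case True
    then have "real NA * real D < real NB * real ll" unfolding cap_def by (metis of_nat_less_iff of_nat_mult)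
    then have "1 / real ll \<le> real NB / (real NA * real D)"
      using ll1 NA1 D1 by (simp add: field_simps)
    then show ?thesis using True unfolding h_def hz_def NUM_def DEN_def NB_def NA_def D_def by (simp add: min_def)
  next
    case False
    then have "real NB * real ll \<le> real NA * real D" unfolding cap_def by (metis not_less of_nat_le_iff of_nat_mult)
    then have "real NB / (real NA * real D) \<le> 1 / real ll"
      using ll1 NA1 D1 by (simp add: field_simps)
    then show ?thesis using False unfolding h_def hz_def NUM_def DEN_def NB_def NA_def D_def by (simp add: min_def)
  qed
  have d10: "dok P n 10 s"
    using Suc.prems unfolding P_def n_def by (cases cap) (simp_all add: dok_num dst_def cap_def NA_def NB_def D_def n_def)
  define s10 where "s10 = dsteps P n 10 s"
  have s10: "pc s10 = 62" "\<not> halted s10" "inp_ok x (mem s10)" "mem s10 1 = j" "mem s10 2 = sum_list (take j x)"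
    "mem s10 3 = NB" "mem s10 4 = NA" "mem s10 5 = D" "mem s10 6 = NUM" "mem s10 7 = DEN - 1" "time s10 = time s + 10"
    using Suc.prems unfolding s10_def P_def n_def
    by (cases cap; simp add: dsteps_num dst_def cap_def NA_def NB_def D_def NUM_def DEN_def n_def)+
  have "hp P n S s = hp P n S s10" unfolding s10_def by (rule hp_dsteps[OF d10])
  also have "\<dots> = (\<Sum>v\<in>{0..mem s10 7}. hp P n S (s10\<lparr>mem := (mem s10)(9 := v), pc := Suc (pc s10), time := Suc (time s10)\<rparr>)) / of_nat (Suc (mem s10 7))"
    by (rule hp_rand) (use s10 in \<open>simp_all add: P_def\<close>)
  also have "\<dots> \<ge> (\<Sum>v\<in>{0..<DEN}. if v < NUM then g j (time s) else LBr h g (Suc j) k (time s + 44)) / of_nat DEN"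
  proof -
    have e1: "{0..mem s10 7} = {0..<DEN}" using s10 DEN1 by auto
    have e2: "Suc (mem s10 7) = DEN" using s10 DEN1 by simp
    have "(if v < NUM then g j (time s) else LBr h g (Suc j) k (time s + 44))
        \<le> hp P n S (s10\<lparr>mem := (mem s10)(9 := v), pc := Suc (pc s10), time := Suc (time s10)\<rparr>)" for v
    proof -
      define sv where "sv = s10\<lparr>mem := (mem s10)(9 := v), pc := Suc (pc s10), time := Suc (time s10)\<rparr>"
      have sv: "pc sv = 63" "\<not> halted sv" "inp_ok x (mem sv)" "mem sv 1 = j" "mem sv 2 = sum_list (take j x)"
        "mem sv 3 = NB" "mem sv 4 = NA" "mem sv 5 = D" "mem sv 6 = NUM" "mem sv 9 = v" "time sv = time s + 11"
        using s10 unfolding sv_def by simp_all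
      show ?thesis
      proof (cases "v < NUM")
        case True
        have dv: "dok P n 3 sv" using sv True unfolding P_def by (simp add: dok_num dst_def)
        have "hp P n S sv = hp P n S (dsteps P n 3 sv)" by (rule hp_dsteps[OF dv])
        also have "\<dots> = E2 qa qb (sum_list (take j x)) (j * dl) S (time (dsteps P n 3 sv) + 51 * (j * dl) + 41)"
          unfolding P_def
          by (rule stage2[OF q sum_take_le[OF ds]]) (use sv True in \<open>simp_all add: dsteps_num dst_def\<close>)
        also have "time (dsteps P n 3 sv) = time s + 14" using sv True unfolding P_def by (simp add: dsteps_num dst_def)
        finally show ?thesis using True unfolding sv_def g_def by (simp add: add.assoc)
      next
        case False
        have C: "dok P n 33 sv \<and>
          pc (dsteps P n 33 sv) = 49 \<and>
          \<not> halted (dsteps P n 33 sv) \<and>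
          inp_ok x (mem (dsteps P n 33 sv)) \<and>
          mem (dsteps P n 33 sv) 1 = Suc j \<and>
          mem (dsteps P n 33 sv) 2 = sum_list (take (Suc j) x) \<and>
          mem (dsteps P n 33 sv) 3 = (ll+1)^(Suc j - length x) \<and>
          mem (dsteps P n 33 sv) 4 = ll^(Suc j - length x) \<and>
          mem (dsteps P n 33 sv) 5 = (length x + mm)^dd \<and>
          time (dsteps P n 33 sv) = time sv + 33"
          unfolding P_def n_def
          by (rule S1_cont[OF ll1]) (use sv False in \<open>simp_all add: NB_def NA_def D_def n_def\<close>)
        have "hp P n S sv = hp P n S (dsteps P n 33 sv)" using C by (intro hp_dsteps) simp
        also have "\<dots> \<ge> LBr (hz dd mm ll (length x)) (\<lambda>j t. E2 qa qb (sum_list (take j x)) (j * dl) S (t + 14 + 51 * (j * dl) + 41)) (Suc j) k (time (dsteps P n 33 sv))"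
          unfolding P_def n_def
          by (rule Suc.IH) (use C in \<open>simp_all add: P_def n_def\<close>)
        finally have X: "LBr h g (Suc j) k (time (dsteps P n 33 sv)) \<le> hp P n S sv" unfolding h_def g_def n_def .
        have tC: "time (dsteps P n 33 sv) = time s + 44" using C sv by simp
        from X tC have "LBr h g (Suc j) k (time s + 44) \<le> hp P n S sv" by simp
        then show ?thesis using False unfolding sv_def by simp
      qed
    qed
    then have "(\<Sum>v\<in>{0..<DEN}. if v < NUM then g j (time s) else LBr h g (Suc j) k (time s + 44))
        \<le> (\<Sum>v\<in>{0..<DEN}. hp P n S (s10\<lparr>mem := (mem s10)(9 := v), pc := Suc (pc s10), time := Suc (time s10)\<rparr>))"
      by (rule sum_mono)
    then show ?thesis unfolding e1 e2 by (rule divide_right_mono_ennreal)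
  qed
  also have "(\<Sum>v\<in>{0..<DEN}. if v < NUM then g j (time s) else LBr h g (Suc j) k (time s + 44)) / of_nat DEN
      = ennreal (h j) * g j (time s) + ennreal (1 - h j) * LBr h g (Suc j) k (time s + 44)"
    unfolding sum_split_const[OF NUMDEN] hj using DEN1 NUMDEN by (subst ennreal_mix) auto
  finally show ?case unfolding P_def h_def g_def n_def by simp
qed


definition R0 :: "nat list \<Rightarrow> nat \<Rightarrow> (nat \<Rightarrow> nat) \<Rightarrow> bool" where
  "R0 x k m \<longleftrightarrow> m 0 = length x + 10 \<and> (\<forall>i<length x. i < k \<longrightarrow> m (length x + 10 + i) = x ! i)
     \<and> (\<forall>a. k < a \<and> a \<le> length x \<longrightarrow> m a = x ! (a - 1))"

lemma R0_step: "R0 x k m \<Longrightarrow> 1 \<le> k \<Longrightarrow> k' = Suc k \<Longrightarrow> R0 x k' (m(1 := k, 1 := k + (length x + 10), k + (length x + 10) := m k'))"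
  unfolding R0_def
  apply (intro conjI allI impI)
    apply simp
   apply (case_tac "i = k"; simp)
  apply simp
  done

lemma R0_final: "R0 x 9 m \<Longrightarrow> inp_ok x m"
  unfolding R0_def inp_ok_def
proof (intro allI impI)
  fix i assume a: "m 0 = length x + 10 \<and> (\<forall>i<length x. i < 9 \<longrightarrow> m (length x + 10 + i) = x ! i) \<and> (\<forall>a. 9 < a \<and> a \<le> length x \<longrightarrow> m a = x ! (a - 1))"
    and i: "i < length x"
  have e: "length x + 9 + Suc i = length x + 10 + i" by simp
  show "(if i < 9 then m (length x + 9 + Suc i) else m (Suc i)) = x ! i"
    unfolding e using a i by auto
qed

lemma R0_upd: "R0 x k m \<Longrightarrow> 0 < a \<Longrightarrow> a \<le> k \<Longrightarrow> k \<le> 9 \<Longrightarrow> R0 x k (m(a := v))"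
  unfolding R0_def by auto
lemma copy_1: "pc s = 11 \<Longrightarrow> \<not> halted s \<Longrightarrow> R0 x 1 (mem s) \<Longrightarrow>
  dok (PR dd mm ll dl qa qb) (length x) 3 s \<and> pc (dsteps (PR dd mm ll dl qa qb) (length x) 3 s) = 14 \<and>
  \<not> halted (dsteps (PR dd mm ll dl qa qb) (length x) 3 s) \<and> time (dsteps (PR dd mm ll dl qa qb) (length x) 3 s) = time s + 3 \<and>
  R0 x 2 (mem (dsteps (PR dd mm ll dl qa qb) (length x) 3 s))"
proof -
  assume a: "pc s = 11" "\<not> halted s" "R0 x 1 (mem s)"
  have m0: "mem s 0 = length x + 10" using a by (simp add: R0_def)
  have "mem (dsteps (PR dd mm ll dl qa qb) (length x) 3 s) = (mem s)(1 := 1, 1 := 1 + (length x + 10), 1 + (length x + 10) := mem s 2)"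
    using a m0 by (simp add: dsteps_num dst_def)
  then show ?thesis using R0_step[where x=x and k=1 and m="mem s" and k'=2] a by (simp add: dsteps_num dok_num dst_def)
qed

lemma copy_2: "pc s = 14 \<Longrightarrow> \<not> halted s \<Longrightarrow> R0 x 2 (mem s) \<Longrightarrow>
  dok (PR dd mm ll dl qa qb) (length x) 3 s \<and> pc (dsteps (PR dd mm ll dl qa qb) (length x) 3 s) = 17 \<and>
  \<not> halted (dsteps (PR dd mm ll dl qa qb) (length x) 3 s) \<and> time (dsteps (PR dd mm ll dl qa qb) (length x) 3 s) = time s + 3 \<and>
  R0 x 3 (mem (dsteps (PR dd mm ll dl qa qb) (length x) 3 s))"
proof -
  assume a: "pc s = 14" "\<not> halted s" "R0 x 2 (mem s)"
  have m0: "mem s 0 = length x + 10" using a by (simp add: R0_def)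
  have "mem (dsteps (PR dd mm ll dl qa qb) (length x) 3 s) = (mem s)(1 := 2, 1 := 2 + (length x + 10), 2 + (length x + 10) := mem s 3)"
    using a m0 by (simp add: dsteps_num dst_def)
  then show ?thesis using R0_step[where x=x and k=2 and m="mem s" and k'=3] a by (simp add: dsteps_num dok_num dst_def)
qed

lemma copy_3: "pc s = 17 \<Longrightarrow> \<not> halted s \<Longrightarrow> R0 x 3 (mem s) \<Longrightarrow>
  dok (PR dd mm ll dl qa qb) (length x) 3 s \<and> pc (dsteps (PR dd mm ll dl qa qb) (length x) 3 s) = 20 \<and>
  \<not> halted (dsteps (PR dd mm ll dl qa qb) (length x) 3 s) \<and> time (dsteps (PR dd mm ll dl qa qb) (length x) 3 s) = time s + 3 \<and>
  R0 x 4 (mem (dsteps (PR dd mm ll dl qa qb) (length x) 3 s))"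
proof -
  assume a: "pc s = 17" "\<not> halted s" "R0 x 3 (mem s)"
  have m0: "mem s 0 = length x + 10" using a by (simp add: R0_def)
  have "mem (dsteps (PR dd mm ll dl qa qb) (length x) 3 s) = (mem s)(1 := 3, 1 := 3 + (length x + 10), 3 + (length x + 10) := mem s 4)"
    using a m0 by (simp add: dsteps_num dst_def)
  then show ?thesis using R0_step[where x=x and k=3 and m="mem s" and k'=4] a by (simp add: dsteps_num dok_num dst_def)
qed

lemma copy_4: "pc s = 20 \<Longrightarrow> \<not> halted s \<Longrightarrow> R0 x 4 (mem s) \<Longrightarrow>
  dok (PR dd mm ll dl qa qb) (length x) 3 s \<and> pc (dsteps (PR dd mm ll dl qa qb) (length x) 3 s) = 23 \<and>
  \<not> halted (dsteps (PR dd mm ll dl qa qb) (length x) 3 s) \<and> time (dsteps (PR dd mm ll dl qa qb) (length x) 3 s) = time s + 3 \<and>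
  R0 x 5 (mem (dsteps (PR dd mm ll dl qa qb) (length x) 3 s))"
proof -
  assume a: "pc s = 20" "\<not> halted s" "R0 x 4 (mem s)"
  have m0: "mem s 0 = length x + 10" using a by (simp add: R0_def)
  have "mem (dsteps (PR dd mm ll dl qa qb) (length x) 3 s) = (mem s)(1 := 4, 1 := 4 + (length x + 10), 4 + (length x + 10) := mem s 5)"
    using a m0 by (simp add: dsteps_num dst_def)
  then show ?thesis using R0_step[where x=x and k=4 and m="mem s" and k'=5] a by (simp add: dsteps_num dok_num dst_def)
qed

lemma copy_5: "pc s = 23 \<Longrightarrow> \<not> halted s \<Longrightarrow> R0 x 5 (mem s) \<Longrightarrow>
  dok (PR dd mm ll dl qa qb) (length x) 3 s \<and> pc (dsteps (PR dd mm ll dl qa qb) (length x) 3 s) = 26 \<and>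
  \<not> halted (dsteps (PR dd mm ll dl qa qb) (length x) 3 s) \<and> time (dsteps (PR dd mm ll dl qa qb) (length x) 3 s) = time s + 3 \<and>
  R0 x 6 (mem (dsteps (PR dd mm ll dl qa qb) (length x) 3 s))"
proof -
  assume a: "pc s = 23" "\<not> halted s" "R0 x 5 (mem s)"
  have m0: "mem s 0 = length x + 10" using a by (simp add: R0_def)
  have "mem (dsteps (PR dd mm ll dl qa qb) (length x) 3 s) = (mem s)(1 := 5, 1 := 5 + (length x + 10), 5 + (length x + 10) := mem s 6)"
    using a m0 by (simp add: dsteps_num dst_def)
  then show ?thesis using R0_step[where x=x and k=5 and m="mem s" and k'=6] a by (simp add: dsteps_num dok_num dst_def)
qed

lemma copy_6: "pc s = 26 \<Longrightarrow> \<not> halted s \<Longrightarrow> R0 x 6 (mem s) \<Longrightarrow>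
  dok (PR dd mm ll dl qa qb) (length x) 3 s \<and> pc (dsteps (PR dd mm ll dl qa qb) (length x) 3 s) = 29 \<and>
  \<not> halted (dsteps (PR dd mm ll dl qa qb) (length x) 3 s) \<and> time (dsteps (PR dd mm ll dl qa qb) (length x) 3 s) = time s + 3 \<and>
  R0 x 7 (mem (dsteps (PR dd mm ll dl qa qb) (length x) 3 s))"
proof -
  assume a: "pc s = 26" "\<not> halted s" "R0 x 6 (mem s)"
  have m0: "mem s 0 = length x + 10" using a by (simp add: R0_def)
  have "mem (dsteps (PR dd mm ll dl qa qb) (length x) 3 s) = (mem s)(1 := 6, 1 := 6 + (length x + 10), 6 + (length x + 10) := mem s 7)"
    using a m0 by (simp add: dsteps_num dst_def)
  then show ?thesis using R0_step[where x=x and k=6 and m="mem s" and k'=7] a by (simp add: dsteps_num dok_num dst_def)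
qed

lemma copy_7: "pc s = 29 \<Longrightarrow> \<not> halted s \<Longrightarrow> R0 x 7 (mem s) \<Longrightarrow>
  dok (PR dd mm ll dl qa qb) (length x) 3 s \<and> pc (dsteps (PR dd mm ll dl qa qb) (length x) 3 s) = 32 \<and>
  \<not> halted (dsteps (PR dd mm ll dl qa qb) (length x) 3 s) \<and> time (dsteps (PR dd mm ll dl qa qb) (length x) 3 s) = time s + 3 \<and>
  R0 x 8 (mem (dsteps (PR dd mm ll dl qa qb) (length x) 3 s))"
proof -
  assume a: "pc s = 29" "\<not> halted s" "R0 x 7 (mem s)"
  have m0: "mem s 0 = length x + 10" using a by (simp add: R0_def)
  have "mem (dsteps (PR dd mm ll dl qa qb) (length x) 3 s) = (mem s)(1 := 7, 1 := 7 + (length x + 10), 7 + (length x + 10) := mem s 8)"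
    using a m0 by (simp add: dsteps_num dst_def)
  then show ?thesis using R0_step[where x=x and k=7 and m="mem s" and k'=8] a by (simp add: dsteps_num dok_num dst_def)
qed

lemma copy_8: "pc s = 32 \<Longrightarrow> \<not> halted s \<Longrightarrow> R0 x 8 (mem s) \<Longrightarrow>
  dok (PR dd mm ll dl qa qb) (length x) 3 s \<and> pc (dsteps (PR dd mm ll dl qa qb) (length x) 3 s) = 35 \<and>
  \<not> halted (dsteps (PR dd mm ll dl qa qb) (length x) 3 s) \<and> time (dsteps (PR dd mm ll dl qa qb) (length x) 3 s) = time s + 3 \<and>
  R0 x 9 (mem (dsteps (PR dd mm ll dl qa qb) (length x) 3 s))"
proof -
  assume a: "pc s = 32" "\<not> halted s" "R0 x 8 (mem s)"
  have m0: "mem s 0 = length x + 10" using a by (simp add: R0_def)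
  have "mem (dsteps (PR dd mm ll dl qa qb) (length x) 3 s) = (mem s)(1 := 8, 1 := 8 + (length x + 10), 8 + (length x + 10) := mem s 9)"
    using a m0 by (simp add: dsteps_num dst_def)
  then show ?thesis using R0_step[where x=x and k=8 and m="mem s" and k'=9] a by (simp add: dsteps_num dok_num dst_def)
qed

lemma fetch_Suc0[simp]: "fetch (PR dd mm ll dl qa qb) (Suc 0) = InLen 1"
  by (simp add: fetch_def prog_def)

lemma init11:
  assumes c: "compatible env x"
  shows "dok (PR dd mm ll dl qa qb) (length x) 11 (init env) \<and> pc (dsteps (PR dd mm ll dl qa qb) (length x) 11 (init env)) = 11 \<and>
  \<not> halted (dsteps (PR dd mm ll dl qa qb) (length x) 11 (init env)) \<and> time (dsteps (PR dd mm ll dl qa qb) (length x) 11 (init env)) = 11 \<and>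
  R0 x 1 (mem (dsteps (PR dd mm ll dl qa qb) (length x) 11 (init env)))"
proof -
  have c1: "\<And>i. i < length x \<Longrightarrow> env (Suc i) = x ! i" using c by (simp add: compatible_def)
  note ss = dsteps_num dst_def init_def numeral_2_eq_2[symmetric]
  have "R0 x 1 (mem (dsteps (PR dd mm ll dl qa qb) (length x) 11 (init env)))"
    unfolding R0_def
  proof (intro conjI allI impI)
    fix i assume "i < length x" "i < 1"
    then show "mem (dsteps (PR dd mm ll dl qa qb) (length x) 11 (init env)) (length x + 10 + i) = x ! i"
      using c1[of 0] by (simp add: ss) arith
  next
    fix a assume A: "1 < a \<and> a \<le> length x"
    then have "a - 1 < length x" by arith
    then have ea: "env a = x ! (a - 1)" using c1[of "a - 1"] A by simp
    show "mem (dsteps (PR dd mm ll dl qa qb) (length x) 11 (init env)) a = x ! (a - 1)"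
      using A ea by (simp add: ss)
  qed (simp add: ss)
  then show ?thesis by (simp add: ss dok_num)
qed


lemma setup5: "pc s = 35 \<Longrightarrow> \<not> halted s \<Longrightarrow> R0 x 9 (mem s) \<Longrightarrow>
  dok (PR dd mm ll dl qa qb) (length x) 5 s \<and> pc (dsteps (PR dd mm ll dl qa qb) (length x) 5 s) = 40 \<and>
  \<not> halted (dsteps (PR dd mm ll dl qa qb) (length x) 5 s) \<and> time (dsteps (PR dd mm ll dl qa qb) (length x) 5 s) = time s + 5 \<and>
  mem (dsteps (PR dd mm ll dl qa qb) (length x) 5 s) 3 = dd \<and>
  mem (dsteps (PR dd mm ll dl qa qb) (length x) 5 s) 5 = 1 \<and>
  mem (dsteps (PR dd mm ll dl qa qb) (length x) 5 s) 9 = length x + mm \<and>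
  inp_ok x (mem (dsteps (PR dd mm ll dl qa qb) (length x) 5 s))"
  using R0_final[of x "mem s"] by (simp add: dsteps_num dok_num dst_def)

lemma pow_loop:
  assumes q: "0 < qa" "qa \<le> qb" and ds: "\<forall>v\<in>set x. v \<le> dl" and ll1: "1 \<le> ll" and mm1: "1 \<le> mm"
  shows "pc s = 40 \<Longrightarrow> \<not> halted s \<Longrightarrow> inp_ok x (mem s) \<Longrightarrow> mem s 3 = c \<Longrightarrow> c \<le> dd \<Longrightarrow>
    mem s 5 = (length x + mm) ^ (dd - c) \<Longrightarrow> mem s 9 = length x + mm \<Longrightarrow>
    LBr (hz dd mm ll (length x)) (\<lambda>j t. E2 qa qb (sum_list (take j x)) (j * dl) S (t + 14 + 51 * (j * dl) + 41)) 0 k (time s + 5 * c + 5)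
       \<le> hp (PR dd mm ll dl qa qb) (length x) S s"
proof (induction c arbitrary: s)
  case 0
  define P where "P = PR dd mm ll dl qa qb"
  have d: "dok P (length x) 5 s" using 0 unfolding P_def by (simp add: dok_num dst_def)
  have "hp P (length x) S s = hp P (length x) S (dsteps P (length x) 5 s)" by (rule hp_dsteps[OF d])
  also have "\<dots> \<ge> LBr (hz dd mm ll (length x)) (\<lambda>j t. E2 qa qb (sum_list (take j x)) (j * dl) S (t + 14 + 51 * (j * dl) + 41)) 0 k (time (dsteps P (length x) 5 s))"
    unfolding P_def by (rule S1_loop[OF q ds ll1 mm1]) (use 0 in \<open>simp_all add: dsteps_num dst_def\<close>)
  also have "time (dsteps P (length x) 5 s) = time s + 5 * 0 + 5" using 0 unfolding P_def by (simp add: dsteps_num dst_def)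
  finally show ?case unfolding P_def .
next
  case (Suc c)
  define P where "P = PR dd mm ll dl qa qb"
  have d: "dok P (length x) 5 s" using Suc unfolding P_def by (simp add: dok_num dst_def)
  have "hp P (length x) S s = hp P (length x) S (dsteps P (length x) 5 s)" by (rule hp_dsteps[OF d])
  also have "\<dots> \<ge> LBr (hz dd mm ll (length x)) (\<lambda>j t. E2 qa qb (sum_list (take j x)) (j * dl) S (t + 14 + 51 * (j * dl) + 41)) 0 k (time (dsteps P (length x) 5 s) + 5 * c + 5)"
    unfolding P_def
  proof (rule Suc.IH)
    have "dd - c = Suc (dd - Suc c)" using Suc by simp
    then show "mem (dsteps (PR dd mm ll dl qa qb) (length x) 5 s) 5 = (length x + mm) ^ (dd - c)"
      using Suc by (simp add: dsteps_num dst_def mult.commute)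
    have "mem (dsteps (PR dd mm ll dl qa qb) (length x) 5 s) = (mem s)(5 := (length x + mm) ^ (dd - Suc c) * (length x + mm), 6 := 1, 3 := c)"
      using Suc by (simp add: dsteps_num dst_def)
    then show "inp_ok x (mem (dsteps (PR dd mm ll dl qa qb) (length x) 5 s))" using Suc by simp
  qed (use Suc in \<open>simp_all add: dsteps_num dst_def\<close>)
  also have "time (dsteps P (length x) 5 s) + 5 * c + 5 = time s + 5 * Suc c + 5" using Suc unfolding P_def by (simp add: dsteps_num dst_def)
  finally show ?case unfolding P_def .
qed

lemma prog_lb:
  assumes c: "compatible env x" and q: "0 < qa" "qa \<le> qb" and ds: "\<forall>v\<in>set x. v \<le> dl" and ll1: "1 \<le> ll" and mm1: "1 \<le> mm"
  shows "LBr (hz dd mm ll (length x)) (\<lambda>j t. E2 qa qb (sum_list (take j x)) (j * dl) S (t + 14 + 51 * (j * dl) + 41)) 0 k (45 + 5 * dd)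
       \<le> hp (PR dd mm ll dl qa qb) (length x) S (init env)"
proof -
  define P where "P = PR dd mm ll dl qa qb"
  define n where "n = length x"
  define s0 where "s0 = dsteps P n 11 (init env)"
  have A0: "dok P n 11 (init env)" "pc s0 = 11" "\<not> halted s0" "time s0 = 11" "R0 x 1 (mem s0)"
    using init11[OF c, of dd mm ll dl qa qb] unfolding s0_def P_def n_def by simp_all
  have H0: "hp P n S (init env) = hp P n S s0" unfolding s0_def by (rule hp_dsteps[OF A0(1)])
  define s1 where "s1 = dsteps P n 3 s0"
  have A1: "dok P n 3 s0" "pc s1 = 14" "\<not> halted s1" "time s1 = time s0 + 3" "R0 x 2 (mem s1)"
    using copy_1[of s0 x dd mm ll dl qa qb] A0 unfolding s1_def P_def n_def by simp_all
  have H1: "hp P n S s0 = hp P n S s1" unfolding s1_def by (rule hp_dsteps[OF A1(1)])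
  define s2 where "s2 = dsteps P n 3 s1"
  have A2: "dok P n 3 s1" "pc s2 = 17" "\<not> halted s2" "time s2 = time s1 + 3" "R0 x 3 (mem s2)"
    using copy_2[of s1 x dd mm ll dl qa qb] A1 unfolding s2_def P_def n_def by simp_all
  have H2: "hp P n S s1 = hp P n S s2" unfolding s2_def by (rule hp_dsteps[OF A2(1)])
  define s3 where "s3 = dsteps P n 3 s2"
  have A3: "dok P n 3 s2" "pc s3 = 20" "\<not> halted s3" "time s3 = time s2 + 3" "R0 x 4 (mem s3)"
    using copy_3[of s2 x dd mm ll dl qa qb] A2 unfolding s3_def P_def n_def by simp_all
  have H3: "hp P n S s2 = hp P n S s3" unfolding s3_def by (rule hp_dsteps[OF A3(1)])
  define s4 where "s4 = dsteps P n 3 s3"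
  have A4: "dok P n 3 s3" "pc s4 = 23" "\<not> halted s4" "time s4 = time s3 + 3" "R0 x 5 (mem s4)"
    using copy_4[of s3 x dd mm ll dl qa qb] A3 unfolding s4_def P_def n_def by simp_all
  have H4: "hp P n S s3 = hp P n S s4" unfolding s4_def by (rule hp_dsteps[OF A4(1)])
  define s5 where "s5 = dsteps P n 3 s4"
  have A5: "dok P n 3 s4" "pc s5 = 26" "\<not> halted s5" "time s5 = time s4 + 3" "R0 x 6 (mem s5)"
    using copy_5[of s4 x dd mm ll dl qa qb] A4 unfolding s5_def P_def n_def by simp_all
  have H5: "hp P n S s4 = hp P n S s5" unfolding s5_def by (rule hp_dsteps[OF A5(1)])
  define s6 where "s6 = dsteps P n 3 s5"
  have A6: "dok P n 3 s5" "pc s6 = 29" "\<not> halted s6" "time s6 = time s5 + 3" "R0 x 7 (mem s6)"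
    using copy_6[of s5 x dd mm ll dl qa qb] A5 unfolding s6_def P_def n_def by simp_all
  have H6: "hp P n S s5 = hp P n S s6" unfolding s6_def by (rule hp_dsteps[OF A6(1)])
  define s7 where "s7 = dsteps P n 3 s6"
  have A7: "dok P n 3 s6" "pc s7 = 32" "\<not> halted s7" "time s7 = time s6 + 3" "R0 x 8 (mem s7)"
    using copy_7[of s6 x dd mm ll dl qa qb] A6 unfolding s7_def P_def n_def by simp_all
  have H7: "hp P n S s6 = hp P n S s7" unfolding s7_def by (rule hp_dsteps[OF A7(1)])
  define s8 where "s8 = dsteps P n 3 s7"
  have A8: "dok P n 3 s7" "pc s8 = 35" "\<not> halted s8" "time s8 = time s7 + 3" "R0 x 9 (mem s8)"
    using copy_8[of s7 x dd mm ll dl qa qb] A7 unfolding s8_def P_def n_def by simp_all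
  have H8: "hp P n S s7 = hp P n S s8" unfolding s8_def by (rule hp_dsteps[OF A8(1)])
  define s9 where "s9 = dsteps P n 5 s8"
  have A9: "dok P n 5 s8" "pc s9 = 40" "\<not> halted s9" "time s9 = time s8 + 5" "mem s9 3 = dd" "mem s9 5 = 1" "mem s9 9 = n + mm" "inp_ok x (mem s9)"
    using setup5[of s8 x dd mm ll dl qa qb] A8 unfolding s9_def P_def n_def by simp_all
  have H9: "hp P n S s8 = hp P n S s9" unfolding s9_def by (rule hp_dsteps[OF A9(1)])
  have t9: "time s9 = 40" using A0 A1 A2 A3 A4 A5 A6 A7 A8 A9 by simp
  have "LBr (hz dd mm ll n) (\<lambda>j t. E2 qa qb (sum_list (take j x)) (j * dl) S (t + 14 + 51 * (j * dl) + 41)) 0 k (time s9 + 5 * dd + 5)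
       \<le> hp P n S s9"
    unfolding P_def n_def by (rule pow_loop[OF q ds ll1 mm1]) (use A9 in \<open>simp_all add: n_def\<close>)
  then show ?thesis using H0 H1 H2 H3 H4 H5 H6 H7 H8 H9 t9 unfolding P_def n_def by (simp add: add.commute)
qed


definition Qf :: "nat \<Rightarrow> nat \<Rightarrow> nat \<Rightarrow> nat \<Rightarrow> nat \<Rightarrow> real" where
  "Qf dd mm ll n j = hz dd mm ll n j * (\<Prod>i<j. 1 - hz dd mm ll n i)"

lemma hz_alt: "hz dd mm ll n j = min (1 / real ll) ((real (ll+1) / real ll)^(j-n) * (1 / real ((n+mm)^dd)))"
  by (simp add: hz_def power_divide)

lemma hz_nonneg: "0 \<le> hz dd mm ll n j"
  by (simp add: hz_def)

lemma hz_le: "hz dd mm ll n j \<le> 1 / real ll"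
  by (simp add: hz_def)

lemma hz_le1: "1 \<le> ll \<Longrightarrow> hz dd mm ll n j \<le> 1"
  using hz_le[of dd mm ll n j] by (simp add: divide_le_eq_1 order_trans)

lemma min_scale:
  assumes "(B::real) \<le> c * A" "1 \<le> c" "0 \<le> p" shows "min p B \<le> c * min p A"
proof (cases "A \<le> p")
  case True
  have "min p B \<le> B" by simp
  then show ?thesis using True assms by (simp add: min_def)
next
  case False
  have "min p B \<le> p" by simp
  also have "p \<le> c * p" using assms by (simp add: mult_le_cancel_right1)
  finally show ?thesis using False by (simp add: min_def)
qed

lemma alpha_ratio:
  assumes "1 \<le> dd" "1 \<le> ll" "mm = dd * (ll + 1)" "1 \<le> n"
  shows "real ((n + mm) ^ dd) \<le> (real (ll+1) / real ll) * real ((n - 1 + mm) ^ dd)"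
proof -
  define m where "m = n - 1 + mm"
  have nm: "n + mm = Suc m" using assms unfolding m_def by simp
  have "m \<ge> 1" using assms unfolding m_def by simp
  then have m1: "real m \<ge> 1" by simp
  have b: "1 + real dd * (- 1 / (real m + 1)) \<le> (1 + (- 1 / (real m + 1))) ^ dd"
    by (rule Bernoulli_inequality) (use m1 in \<open>simp add: field_simps\<close>)
  have e1: "1 + (- 1 / (real m + 1)) = real m / (real m + 1)" using m1 by (simp add: field_simps)
  have "real dd * (real ll + 1) \<le> real m + 1"
    using assms unfolding m_def by (simp add: algebra_simps)
  then have "real dd / (real m + 1) \<le> 1 / (real ll + 1)"
    using m1 assms by (simp add: field_simps)
  then have "real ll / (real ll + 1) \<le> 1 + real dd * (- 1 / (real m + 1))"
    using assms by (simp add: field_simps)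
  also have "\<dots> \<le> (real m / (real m + 1)) ^ dd" using b e1 by simp
  finally have c: "real ll / (real ll + 1) \<le> real m ^ dd / (real m + 1) ^ dd" by (simp add: power_divide)
  have pos: "0 < (real m + 1) ^ dd" "0 < real ll" using assms by auto
  from c have "real ll * (real m + 1) ^ dd \<le> real m ^ dd * (real ll + 1)"
    using pos m1 by (simp add: field_simps)
  then have "(real m + 1) ^ dd \<le> (real ll + 1) / real ll * real m ^ dd"
    using pos by (simp add: field_simps)
  then show ?thesis using nm unfolding m_def[symmetric] by (simp add: add.commute)
qed

context
  fixes dd mm ll :: nat
  assumes A: "1 \<le> dd" "2 \<le> ll" "mm = dd * (ll + 1)"
begin

abbreviation "h \<equiv> hz dd mm ll"
abbreviation "rr \<equiv> real (ll+1) / real ll"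
abbreviation "al n \<equiv> 1 / real ((n + mm) ^ dd)"

lemma rr_ge1: "1 \<le> rr" using A(2) by simp
lemma mm1: "1 \<le> mm" using A(1) A(3) by simp
lemma al_pos: "0 < al n" using mm1 by simp
lemma al_mono: "1 \<le> n \<Longrightarrow> al n \<le> al (n - 1)"
proof -
  assume n: "1 \<le> n"
  have "(n - 1 + mm)^dd \<le> (n + mm)^dd" by (rule power_mono) auto
  then have a: "real ((n - 1 + mm)^dd) \<le> real ((n + mm)^dd)" by (simp only: of_nat_le_iff)
  have b: "0 < real ((n - 1 + mm)^dd)" using mm1 by simp
  show ?thesis by (rule divide_left_mono) (use a b in auto)
qed
lemma al_ratio: "1 \<le> n \<Longrightarrow> al (n - 1) \<le> rr * al n"
proof -
  assume n: "1 \<le> n"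
  have r: "real ((n + mm) ^ dd) \<le> rr * real ((n - 1 + mm) ^ dd)"
    using alpha_ratio[OF A(1) _ A(3) n] A(2) by simp
  have p1: "0 < real ((n + mm) ^ dd)" "0 < real ((n - 1 + mm) ^ dd)" using mm1 by simp_all
  have g: "\<And>X Y R::real. 0 < X \<Longrightarrow> 0 < Y \<Longrightarrow> X \<le> R * Y \<Longrightarrow> 1 / Y \<le> R / X"
    by (simp add: field_simps)
  have "1 / real ((n - 1 + mm) ^ dd) \<le> rr / real ((n + mm) ^ dd)"
    by (rule g[OF p1 r])
  then show ?thesis by simp
qed

lemma h_def2: "h n j = min (1 / real ll) (rr ^ (j - n) * al n)"
  by (simp add: hz_alt)

lemma h_le_prev: "1 \<le> n \<Longrightarrow> h n j \<le> h (n - 1) j"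
  unfolding h_def2
proof (rule min.mono)
  assume n: "1 \<le> n"
  have "rr ^ (j - n) \<le> rr ^ (j - (n - 1))" by (rule power_increasing) (use rr_ge1 in auto)
  then show "rr ^ (j - n) * al n \<le> rr ^ (j - (n - 1)) * al (n - 1)"
    by (rule mult_mono) (use al_mono[OF n] al_pos[of n] rr_ge1 in auto)
qed simp

lemma h_prev_le: "1 \<le> n \<Longrightarrow> h (n - 1) j \<le> rr^2 * h n j"
  unfolding h_def2
proof (rule min_scale)
  assume n: "1 \<le> n"
  have "rr ^ (j - (n - 1)) \<le> rr ^ (Suc (j - n))" by (rule power_increasing) (use rr_ge1 in auto)
  then have "rr ^ (j - (n - 1)) * al (n - 1) \<le> rr ^ (Suc (j - n)) * (rr * al n)"
    by (rule mult_mono) (use al_ratio[OF n] al_pos[of "n-1"] rr_ge1 in auto)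
  moreover have "rr ^ (Suc (j - n)) * (rr * al n) = rr^2 * (rr ^ (j - n) * al n)"
    by (simp only: power2_eq_square power_Suc mult_ac)
  ultimately show "rr ^ (j - (n - 1)) * al (n - 1) \<le> rr^2 * (rr ^ (j - n) * al n)"
    by simp
  show "1 \<le> rr^2" using rr_ge1 by simp
qed simp

lemma h_shift2: "1 \<le> n \<Longrightarrow> n \<le> j \<Longrightarrow> h (n - 1) j \<le> h n (j + 2)"
  unfolding h_def2
proof (rule min.mono)
  assume n: "1 \<le> n" "n \<le> j"
  have e1: "j - (n - 1) = Suc (j - n)" using n by simp
  have e2: "j + 2 - n = Suc (Suc (j - n))" using n by simp
  have "rr ^ (Suc (j - n)) * al (n - 1) \<le> rr ^ (Suc (j - n)) * (rr * al n)"
    by (rule mult_left_mono) (use al_ratio[OF n(1)] rr_ge1 in auto)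
  moreover have "rr ^ (Suc (j - n)) * (rr * al n) = rr ^ (Suc (Suc (j - n))) * al n"
    by (simp only: power_Suc mult_ac)
  ultimately show "rr ^ (j - (n - 1)) * al (n - 1) \<le> rr ^ (j + 2 - n) * al n"
    unfolding e1 e2 by simp
qed simp

lemma h_monoj: "h n j \<le> h n (Suc j)"
  unfolding h_def2
proof (rule min.mono)
  have "rr ^ (j - n) \<le> rr ^ (Suc j - n)" by (rule power_increasing) (use rr_ge1 in auto)
  then show "rr ^ (j - n) * al n \<le> rr ^ (Suc j - n) * al n"
    by (rule mult_right_mono) (use al_pos[of n] in auto)
qed simp

lemma min_diff: "(A::real) \<le> A' \<Longrightarrow> min p A' - min p A \<le> A' - A"
  by (auto simp: min_def)

lemma h_small: "j < n \<Longrightarrow> h (n - 1) j - h n j \<le> (rr - 1) * al n"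
proof -
  assume j: "j < n"
  then have n: "1 \<le> n" by simp
  have e: "j - (n - 1) = 0" "j - n = 0" using j by auto
  have "h (n - 1) j - h n j \<le> al (n - 1) - al n"
    unfolding h_def2 e by simp (rule min_diff, use al_mono[OF n] in simp)
  also have "\<dots> \<le> (rr - 1) * al n" by (simp only: left_diff_distrib mult_1) (use al_ratio[OF n] in linarith)
  finally show ?thesis .
qed

lemma diff_sum_aux:
  assumes n: "1 \<le> n"
  shows "(\<Sum>i<j. h (n - 1) i - h n i) \<le> (rr - 1) * al n * real (min j n)
     + (if n < j then h n j + h n (Suc j) - h n n - h n (Suc n) else 0)"
proof (induction j)
  case 0 then show ?case by simp
next
  case (Suc j)
  show ?case
  proof (cases "j < n")
    case True
    have "(\<Sum>i<Suc j. h (n - 1) i - h n i) = (\<Sum>i<j. h (n - 1) i - h n i) + (h (n - 1) j - h n j)" by simp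
    also have "\<dots> \<le> (rr - 1) * al n * real (min j n) + (rr - 1) * al n"
      using Suc h_small[OF True] True by simp
    also have "\<dots> = (rr - 1) * al n * real (min (Suc j) n)"
    proof -
      have e: "real (min (Suc j) n) = real (min j n) + 1" using True by simp
      show ?thesis unfolding e by (simp only: distrib_left mult_1_right)
    qed
    finally show ?thesis using True by simp
  next
    case False
    have d: "h (n - 1) j - h n j \<le> h n (Suc (Suc j)) - h n j"
      using h_shift2[OF n, of j] False by simp
    have "(\<Sum>i<Suc j. h (n - 1) i - h n i) = (\<Sum>i<j. h (n - 1) i - h n i) + (h (n - 1) j - h n j)" by simp
    also have "\<dots> \<le> (rr - 1) * al n * real (min j n) + (if n < j then h n j + h n (Suc j) - h n n - h n (Suc n) else 0) + (h n (Suc (Suc j)) - h n j)"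
      using Suc d by simp
    also have "\<dots> = (rr - 1) * al n * real (min (Suc j) n) + (if n < Suc j then h n (Suc j) + h n (Suc (Suc j)) - h n n - h n (Suc n) else 0)"
      using False by (cases "n < j") (auto simp: min_def)
    finally show ?thesis .
  qed
qed

lemma diff_sum: "1 \<le> n \<Longrightarrow> (\<Sum>i<j. h (n - 1) i - h n i) \<le> 3 / real ll"
proof -
  assume n: "1 \<le> n"
  have a1: "al n * real (min j n) \<le> 1"
  proof -
    have "real (min j n) \<le> real n" by simp
    also have "real n \<le> real ((n + mm) ^ dd)"
    proof -
      have "n \<le> n + mm" by simp
      also have "\<dots> \<le> (n + mm) ^ dd" using A(1) n by (simp add: self_le_power)
      finally show ?thesis by (simp only: of_nat_le_iff)
    qed
    finally have m: "real (min j n) \<le> real ((n + mm) ^ dd)" .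
    have p: "0 < real ((n + mm) ^ dd)" using mm1 by simp
    have g: "\<And>D m::real. 0 < D \<Longrightarrow> m \<le> D \<Longrightarrow> 1 / D * m \<le> 1" by (simp add: field_simps)
    show ?thesis by (rule g[OF p m])
  qed
  have e: "rr - 1 = 1 / real ll" using A(2) by (simp add: field_simps)
  have t1: "(rr - 1) * al n * real (min j n) \<le> 1 / real ll"
  proof -
    have "(rr - 1) * (al n * real (min j n)) \<le> (rr - 1) * 1" by (rule mult_left_mono) (use a1 rr_ge1 in auto)
    then show ?thesis by (simp only: e mult.assoc mult_1_right)
  qed
  have t2: "(if n < j then h n j + h n (Suc j) - h n n - h n (Suc n) else 0) \<le> 2 / real ll"
    using hz_le[of dd mm ll n j] hz_le[of dd mm ll n "Suc j"] hz_nonneg[of dd mm ll n n] hz_nonneg[of dd mm ll n "Suc n"] A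
    by auto
  show ?thesis using diff_sum_aux[OF n, of j] t1 t2 by simp
qed

end


lemma prod_gap:
  fixes a b :: "nat \<Rightarrow> real"
  assumes ab: "\<And>i. 0 \<le> a i" "\<And>i. a i \<le> b i" "\<And>i. b i \<le> p" and p: "p < 1"
  shows "(\<Prod>i<j. 1 - a i) * (1 - (\<Sum>i<j. b i - a i) / (1 - p)) \<le> (\<Prod>i<j. 1 - b i)"
proof (induction j)
  case 0 then show ?case by simp
next
  case (Suc j)
  define P where "P = (\<Prod>i<j. 1 - a i)"
  define P' where "P' = (\<Prod>i<j. 1 - b i)"
  define T where "T = (\<Sum>i<j. b i - a i) / (1 - p)"
  define t where "t = (b j - a j) / (1 - p)"
  have a1: "a i \<le> 1" for i using ab(2)[of i] ab(3)[of i] p by linarith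
  have P0: "0 \<le> P" unfolding P_def using a1 by (intro prod_nonneg) auto
  have T0: "0 \<le> T" unfolding T_def using ab p by (intro divide_nonneg_pos sum_nonneg) auto
  have t0: "0 \<le> t" unfolding t_def using ab p by (intro divide_nonneg_pos) auto
  have b1: "0 \<le> 1 - b j" using ab(3)[of j] p by simp
  have IH: "P * (1 - T) \<le> P'" using Suc unfolding P_def P'_def T_def .
  have k1: "b j - a j \<le> (1 - a j) * t"
  proof -
    have "b j - a j = (1 - p) * t" unfolding t_def using p by simp
    also have "\<dots> \<le> (1 - a j) * t" by (rule mult_right_mono) (use ab(2,3)[of j] t0 in auto)
    finally show ?thesis .
  qed
  have idt: "(1 - T) * (1 - b j) - (1 - a j) * (1 - T - t) = (b j - a j) * T + ((1 - a j) * t - (b j - a j))"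
    by (simp add: algebra_simps)
  have k2: "(1 - a j) * (1 - T - t) \<le> (1 - T) * (1 - b j)"
    using idt k1 mult_nonneg_nonneg[of "b j - a j" T] ab(2)[of j] T0 by linarith
  have "P * (1 - a j) * (1 - (T + t)) = P * ((1 - a j) * (1 - T - t))" by (simp add: algebra_simps)
  also have "\<dots> \<le> P * ((1 - T) * (1 - b j))" by (rule mult_left_mono[OF k2 P0])
  also have "\<dots> = (P * (1 - T)) * (1 - b j)" by (simp add: algebra_simps)
  also have "\<dots> \<le> P' * (1 - b j)" by (rule mult_right_mono[OF IH b1])
  finally have "P * (1 - a j) * (1 - (T + t)) \<le> P' * (1 - b j)" .
  moreover have "T + t = (\<Sum>i<Suc j. b i - a i) / (1 - p)" unfolding T_def t_def by (simp add: add_divide_distrib)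
  ultimately show ?case unfolding P_def P'_def by (simp add: mult.commute)
qed

lemma prod_ge_1_minus_sum:
  fixes a :: "nat \<Rightarrow> real"
  assumes "\<And>i. 0 \<le> a i" "\<And>i. a i \<le> 1"
  shows "1 - (\<Sum>i<j. a i) \<le> (\<Prod>i<j. 1 - a i)"
proof (induction j)
  case 0 then show ?case by simp
next
  case (Suc j)
  have P0: "0 \<le> (\<Prod>i<j. 1 - a i)" using assms by (intro prod_nonneg) auto
  have P1: "(\<Prod>i<j. 1 - a i) \<le> 1" using assms by (intro prod_le_1) auto
  have "1 - (\<Sum>i<Suc j. a i) = (1 - (\<Sum>i<j. a i)) - a j" by simp
  also have "\<dots> \<le> (\<Prod>i<j. 1 - a i) - a j" using Suc by simp
  also have "\<dots> \<le> (\<Prod>i<j. 1 - a i) - a j * (\<Prod>i<j. 1 - a i)"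
    using P1 assms(1)[of j] by (simp add: mult_left_le)
  also have "\<dots> = (\<Prod>i<Suc j. 1 - a i)" by (simp add: algebra_simps)
  finally show ?case .
qed

lemma Q_partial: "(\<Sum>j<J. Qf dd mm ll n j) = 1 - (\<Prod>j<J. 1 - hz dd mm ll n j)"
  by (induction J) (simp_all add: Qf_def algebra_simps)

lemma Q_nonneg: "1 \<le> ll \<Longrightarrow> 0 \<le> Qf dd mm ll n j"
  unfolding Qf_def using hz_nonneg hz_le1 by (intro mult_nonneg_nonneg prod_nonneg) auto

context
  fixes dd mm ll :: nat
  assumes A: "1 \<le> dd" "2 \<le> ll" "mm = dd * (ll + 1)"
begin

abbreviation "hh \<equiv> hz dd mm ll"
abbreviation "r2 \<equiv> real (ll+1) / real ll"
abbreviation "aa n \<equiv> 1 / real ((n + mm) ^ dd)"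

lemma hz_lower: "min (1 / real ll) (aa n) \<le> hh n j"
  unfolding h_def2[OF A]
proof (rule min.mono)
  have "1 \<le> r2 ^ (j - n)" using rr_ge1[OF A] by simp
  from mult_right_mono[OF this, of "aa n"] show "aa n \<le> r2 ^ (j - n) * aa n" using al_pos[OF A, of n] by simp
qed simp

lemma Q_sums: "(\<lambda>j. Qf dd mm ll n j) sums 1"
proof -
  define \<eta> where "\<eta> = min (1 / real ll) (aa n)"
  have e0: "0 < \<eta>" unfolding \<eta>_def using al_pos[OF A, of n] A(2) by simp
  have e1: "\<eta> \<le> 1" unfolding \<eta>_def using A(2) by (auto simp: min_le_iff_disj)
  have bnd: "(\<Prod>j<J. 1 - hh n j) \<le> (1 - \<eta>) ^ J" for J
  proof -
    have "(\<Prod>j<J. 1 - hh n j) \<le> (\<Prod>j<J. 1 - \<eta>)"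
      by (rule prod_mono) (use hz_lower[of n] hz_le1[of ll dd mm n] A(2) \<eta>_def in auto)
    then show ?thesis by simp
  qed
  have pos: "0 \<le> (\<Prod>j<J. 1 - hh n j)" for J
    using hz_le1[of ll dd mm n] A(2) by (intro prod_nonneg) auto
  have "(\<lambda>J. (1 - \<eta>) ^ J) \<longlonglongrightarrow> 0" by (rule LIMSEQ_power_zero) (use e0 e1 in auto)
  then have "(\<lambda>J. \<Prod>j<J. 1 - hh n j) \<longlonglongrightarrow> 0"
    by (rule Lim_null_comparison[rotated]) (use bnd pos in auto)
  then have "(\<lambda>J. 1 - (\<Prod>j<J. 1 - hh n j)) \<longlonglongrightarrow> 1 - 0" by (intro tendsto_intros)
  then show ?thesis unfolding sums_def Q_partial by simp
qed

lemma Q_low: "(\<Sum>j<n. Qf dd mm ll n j) \<le> real n * aa n"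
proof -
  have "(\<Sum>j<n. Qf dd mm ll n j) = 1 - (\<Prod>j<n. 1 - hh n j)" by (rule Q_partial)
  also have "\<dots> \<le> (\<Sum>j<n. hh n j)"
    using prod_ge_1_minus_sum[of "hh n" n] hz_nonneg hz_le1[of ll dd mm n] A(2) by force
  also have "\<dots> \<le> (\<Sum>j<n. aa n)"
  proof (rule sum_mono)
    fix j assume "j \<in> {..<n}"
    then have "j - n = 0" by simp
    then show "hh n j \<le> aa n" unfolding h_def2[OF A] by simp
  qed
  finally show ?thesis by simp
qed

lemma Q_ratio1: "1 \<le> n \<Longrightarrow> Qf dd mm ll (n - 1) j \<le> r2^2 * Qf dd mm ll n j"
proof -
  assume n: "1 \<le> n"
  have "(\<Prod>i<j. 1 - hh (n - 1) i) \<le> (\<Prod>i<j. 1 - hh n i)"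
    by (rule prod_mono) (use h_le_prev[OF A n] hz_le1[of ll dd mm] A(2) in auto)
  moreover have "hh (n - 1) j \<le> r2^2 * hh n j" by (rule h_prev_le[OF A n])
  ultimately have "hh (n - 1) j * (\<Prod>i<j. 1 - hh (n - 1) i) \<le> (r2^2 * hh n j) * (\<Prod>i<j. 1 - hh n i)"
    by (intro mult_mono) (use hz_nonneg hz_le1[of ll dd mm] A(2) in \<open>auto intro: prod_nonneg\<close>)
  then show ?thesis unfolding Qf_def by (simp add: mult.assoc)
qed

lemma Q_ratio2: "1 \<le> n \<Longrightarrow> 4 \<le> ll \<Longrightarrow> (1 - 3 / (real ll - 1)) * Qf dd mm ll n j \<le> Qf dd mm ll (n - 1) j"
proof -
  assume n: "1 \<le> n" and l4: "4 \<le> ll"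
  define p where "p = 1 / real ll"
  have p1: "p < 1" unfolding p_def using A(2) by simp
  have g: "(\<Prod>i<j. 1 - hh n i) * (1 - (\<Sum>i<j. hh (n - 1) i - hh n i) / (1 - p)) \<le> (\<Prod>i<j. 1 - hh (n - 1) i)"
    by (rule prod_gap[OF _ _ _ p1]) (use hz_nonneg h_le_prev[OF A n] hz_le p_def in auto)
  have S: "(\<Sum>i<j. hh (n - 1) i - hh n i) \<le> 3 / real ll" by (rule diff_sum[OF A n])
  have "(\<Sum>i<j. hh (n - 1) i - hh n i) / (1 - p) \<le> (3 / real ll) / (1 - p)"
    by (rule divide_right_mono[OF S]) (use p1 in simp)
  also have "(3 / real ll) / (1 - p) = 3 / (real ll - 1)" unfolding p_def using l4 by (simp add: field_simps)
  finally have S2: "1 - 3 / (real ll - 1) \<le> 1 - (\<Sum>i<j. hh (n - 1) i - hh n i) / (1 - p)" by simp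
  have P0: "0 \<le> (\<Prod>i<j. 1 - hh n i)" using hz_le1[of ll dd mm] A(2) by (intro prod_nonneg) auto
  have c0: "0 \<le> 1 - 3 / (real ll - 1)" using l4 by (simp add: field_simps)
  have "(1 - 3 / (real ll - 1)) * (\<Prod>i<j. 1 - hh n i) \<le> (\<Prod>i<j. 1 - hh (n - 1) i)"
    using mult_left_mono[OF S2 P0] g by (simp add: mult.commute)
  then have "hh n j * ((1 - 3 / (real ll - 1)) * (\<Prod>i<j. 1 - hh n i)) \<le> hh (n - 1) j * (\<Prod>i<j. 1 - hh (n - 1) i)"
    by (rule mult_mono[OF h_le_prev[OF A n]]) (use hz_nonneg c0 P0 in auto)
  then show ?thesis unfolding Qf_def by (simp add: algebra_simps)
qed

end


lemma wt_pos: "0 < qa \<Longrightarrow> 0 < qb \<Longrightarrow> 0 < wt qa qb \<sigma> U y"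
  by (simp add: wt_def)

lemma Cs_mono: "i \<le> j \<Longrightarrow> Cs qa qb \<sigma> U i \<le> Cs qa qb \<sigma> U j"
  unfolding Cs_def by (rule sum_mono2) auto

lemma Cs_strict: "0 < qa \<Longrightarrow> 0 < qb \<Longrightarrow> i < j \<Longrightarrow> Cs qa qb \<sigma> U i < Cs qa qb \<sigma> U j"
proof -
  assume q: "0 < qa" "0 < qb" and ij: "i < j"
  have "Cs qa qb \<sigma> U i < Cs qa qb \<sigma> U (Suc i)" using wt_pos[OF q] by (simp add: Cs_Suc)
  also have "\<dots> \<le> Cs qa qb \<sigma> U j" using ij by (intro Cs_mono) simp
  finally show ?thesis .
qed

lemma sum_ind_lt: "(\<Sum>i<U. if i < y then 1 else 0) = (min y U :: nat)"
  by (induction U) (auto simp: min_def)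

lemma Yf_interval:
  assumes q: "0 < qa" "0 < qb" and y: "y \<le> U" "Cs qa qb \<sigma> U y \<le> u" "u < Cs qa qb \<sigma> U (Suc y)"
  shows "Yf qa qb \<sigma> U u = y"
proof -
  have "Yf qa qb \<sigma> U u = (\<Sum>i<U. if i < y then 1 else 0)"
    unfolding Yf_def
  proof (rule sum.cong)
    fix i assume "i \<in> {..<U}"
    show "(if Cs qa qb \<sigma> U (Suc i) \<le> u then 1 else 0) = (if i < y then 1 else 0)"
    proof (cases "i < y")
      case True
      then have "Cs qa qb \<sigma> U (Suc i) \<le> Cs qa qb \<sigma> U y" by (intro Cs_mono) simp
      then show ?thesis using True y by simp
    next
      case False
      then have "Cs qa qb \<sigma> U (Suc y) \<le> Cs qa qb \<sigma> U (Suc i)" by (intro Cs_mono) simp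
      then show ?thesis using False y by simp
    qed
  qed simp
  also have "\<dots> = y" using y by (simp add: sum_ind_lt)
  finally show ?thesis .
qed

lemma Yf_exists:
  assumes q: "0 < qa" "0 < qb" and u: "u < Cs qa qb \<sigma> U (Suc U)"
  shows "\<exists>y. y \<le> U \<and> Cs qa qb \<sigma> U y \<le> u \<and> u < Cs qa qb \<sigma> U (Suc y)"
proof -
  define P where "P = (\<lambda>y. y \<le> U \<and> Cs qa qb \<sigma> U y \<le> u)"
  have P0: "P 0" unfolding P_def by (simp add: Cs_def)
  have Pb: "\<forall>y. P y \<longrightarrow> y \<le> U" unfolding P_def by simp
  define y where "y = (GREATEST y. P y)"
  have Py: "P y" unfolding y_def using GreatestI_nat[of P 0 U] P0 Pb by blast
  have "u < Cs qa qb \<sigma> U (Suc y)"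
  proof (cases "y < U")
    case True
    show ?thesis
    proof (rule ccontr)
      assume "\<not> u < Cs qa qb \<sigma> U (Suc y)"
      then have "P (Suc y)" using True unfolding P_def by simp
      moreover have "\<And>z. P z \<Longrightarrow> z \<le> U" using Pb by blast
      ultimately have "Suc y \<le> y" unfolding y_def by (rule Greatest_le_nat)
      then show False by simp
    qed
  next
    case False
    then have "y = U" using Py P_def by simp
    then show ?thesis using u by simp
  qed
  then show ?thesis using Py unfolding P_def by blast
qed

lemma Yf_fiber:
  assumes q: "0 < qa" "0 < qb" and y: "y \<le> U"
  shows "{u \<in> {0..<Cs qa qb \<sigma> U (Suc U)}. Yf qa qb \<sigma> U u = y} = {Cs qa qb \<sigma> U y..<Cs qa qb \<sigma> U (Suc y)}"
proof (intro equalityI subsetI)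
  fix u assume "u \<in> {u \<in> {0..<Cs qa qb \<sigma> U (Suc U)}. Yf qa qb \<sigma> U u = y}"
  then have u: "u < Cs qa qb \<sigma> U (Suc U)" "Yf qa qb \<sigma> U u = y" by auto
  obtain y' where y': "y' \<le> U" "Cs qa qb \<sigma> U y' \<le> u" "u < Cs qa qb \<sigma> U (Suc y')"
    using Yf_exists[OF q u(1)] by blast
  have "Yf qa qb \<sigma> U u = y'" by (rule Yf_interval[OF q y'])
  then show "u \<in> {Cs qa qb \<sigma> U y..<Cs qa qb \<sigma> U (Suc y)}" using u y' by simp
next
  fix u assume "u \<in> {Cs qa qb \<sigma> U y..<Cs qa qb \<sigma> U (Suc y)}"
  then have u: "Cs qa qb \<sigma> U y \<le> u" "u < Cs qa qb \<sigma> U (Suc y)" by auto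
  have "Cs qa qb \<sigma> U (Suc y) \<le> Cs qa qb \<sigma> U (Suc U)" using y by (intro Cs_mono) simp
  then show "u \<in> {u \<in> {0..<Cs qa qb \<sigma> U (Suc U)}. Yf qa qb \<sigma> U u = y}"
    using Yf_interval[OF q y u] u by simp
qed

lemma Yf_le:
  assumes q: "0 < qa" "0 < qb" and u: "u < Cs qa qb \<sigma> U (Suc U)"
  shows "Yf qa qb \<sigma> U u \<le> U"
proof -
  obtain y' where y': "y' \<le> U" "Cs qa qb \<sigma> U y' \<le> u" "u < Cs qa qb \<sigma> U (Suc y')"
    using Yf_exists[OF q u] by blast
  then show ?thesis using Yf_interval[OF q y'] by simp
qed

lemma card_filter_Yf:
  assumes q: "0 < qa" "0 < qb"
  shows "card {u \<in> {0..<Cs qa qb \<sigma> U (Suc U)}. Yf qa qb \<sigma> U u \<in> A} = (\<Sum>y\<in>{..U} \<inter> A. wt qa qb \<sigma> U y)"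
proof -
  have e: "{u \<in> {0..<Cs qa qb \<sigma> U (Suc U)}. Yf qa qb \<sigma> U u \<in> A} = (\<Union>y\<in>{..U} \<inter> A. {Cs qa qb \<sigma> U y..<Cs qa qb \<sigma> U (Suc y)})"
  proof -
    have "{u \<in> {0..<Cs qa qb \<sigma> U (Suc U)}. Yf qa qb \<sigma> U u \<in> A} = (\<Union>y\<in>{..U} \<inter> A. {u \<in> {0..<Cs qa qb \<sigma> U (Suc U)}. Yf qa qb \<sigma> U u = y})"
      using Yf_le[OF q] by auto
    also have "\<dots> = (\<Union>y\<in>{..U} \<inter> A. {Cs qa qb \<sigma> U y..<Cs qa qb \<sigma> U (Suc y)})"
      using Yf_fiber[OF q] by (intro SUP_cong) auto
    finally show ?thesis .
  qed
  have disj: "disjoint_family_on (\<lambda>y. {Cs qa qb \<sigma> U y..<Cs qa qb \<sigma> U (Suc y)}) ({..U} \<inter> A)"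
    unfolding disjoint_family_on_def
  proof (intro ballI impI)
    fix y1 y2 :: nat assume "y1 \<in> {..U} \<inter> A" "y2 \<in> {..U} \<inter> A" "y1 \<noteq> y2"
    then have "Suc y1 \<le> y2 \<or> Suc y2 \<le> y1" by auto
    then show "{Cs qa qb \<sigma> U y1..<Cs qa qb \<sigma> U (Suc y1)} \<inter> {Cs qa qb \<sigma> U y2..<Cs qa qb \<sigma> U (Suc y2)} = {}"
      using Cs_mono[of "Suc y1" y2 qa qb \<sigma> U] Cs_mono[of "Suc y2" y1 qa qb \<sigma> U] by auto
  qed
  have "card (\<Union>y\<in>{..U} \<inter> A. {Cs qa qb \<sigma> U y..<Cs qa qb \<sigma> U (Suc y)}) = (\<Sum>y\<in>{..U} \<inter> A. card {Cs qa qb \<sigma> U y..<Cs qa qb \<sigma> U (Suc y)})"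
    by (rule card_UN_disjoint') (use disj in auto)
  also have "\<dots> = (\<Sum>y\<in>{..U} \<inter> A. wt qa qb \<sigma> U y)" by (simp add: Cs_Suc)
  finally show ?thesis using e by simp
qed

lemma E2_card:
  assumes q: "0 < qa" "0 < qb"
  shows "E2 qa qb \<sigma> U S t = ennreal (real (\<Sum>y\<in>{..U} \<inter> {y. (y, t) \<in> S}. wt qa qb \<sigma> U y) / real (Cs qa qb \<sigma> U (Suc U)))"
proof -
  have W0: "0 < Cs qa qb \<sigma> U (Suc U)" using Cs_strict[OF q, of 0 "Suc U"] by (simp add: Cs_def)
  have "(\<Sum>u\<in>{0..<Cs qa qb \<sigma> U (Suc U)}. (if (Yf qa qb \<sigma> U u, t) \<in> S then 1 else 0 :: ennreal))
      = of_nat (card {u \<in> {0..<Cs qa qb \<sigma> U (Suc U)}. Yf qa qb \<sigma> U u \<in> {y. (y, t) \<in> S}})"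
    by (simp add: sum.If_cases) (rule arg_cong[where f=card], auto)
  also have "\<dots> = of_nat (\<Sum>y\<in>{..U} \<inter> {y. (y, t) \<in> S}. wt qa qb \<sigma> U y)"
    by (simp only: card_filter_Yf[OF q])
  finally have e: "(\<Sum>u\<in>{0..<Cs qa qb \<sigma> U (Suc U)}. (if (Yf qa qb \<sigma> U u, t) \<in> S then 1 else 0 :: ennreal))
      = ennreal (real (\<Sum>y\<in>{..U} \<inter> {y. (y, t) \<in> S}. wt qa qb \<sigma> U y))"
    by (simp only: ennreal_of_nat_eq_real_of_nat)
  show ?thesis unfolding E2_def e ennreal_of_nat_eq_real_of_nat
    by (rule divide_ennreal) (use W0 in \<open>auto intro: sum_nonneg\<close>)
qed


definition Ef :: "real \<Rightarrow> nat \<Rightarrow> nat \<Rightarrow> nat set \<Rightarrow> real" where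
  "Ef q \<sigma> U A = (\<Sum>y\<in>{..U} \<inter> A. q ^ dist y \<sigma>) / (\<Sum>y\<in>{..U}. q ^ dist y \<sigma>)"

lemma dist_le: "y \<le> U \<Longrightarrow> \<sigma> \<le> U \<Longrightarrow> dist y \<sigma> \<le> U"
  by (simp add: dist_def)

lemma dist_tri: "dist y \<sigma>' \<le> dist y \<sigma> + dist \<sigma> \<sigma>'"
  by (simp add: dist_def)

lemma wt_real:
  assumes "\<sigma> \<le> U" "y \<le> U" "0 < qb"
  shows "real (wt qa qb \<sigma> U y) = real qb ^ U * (real qa / real qb) ^ dist y \<sigma>"
proof -
  have d: "dist y \<sigma> \<le> U" using assms by (simp add: dist_le)
  have "real qb ^ U = real qb ^ (U - dist y \<sigma>) * real qb ^ dist y \<sigma>"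
    using d by (simp add: power_add[symmetric])
  then show ?thesis using assms by (simp add: wt_def power_divide)
qed

lemma E2_Ef:
  assumes q: "0 < qa" "0 < qb" and s: "\<sigma> \<le> U"
  shows "E2 qa qb \<sigma> U S t = ennreal (Ef (real qa / real qb) \<sigma> U {y. (y, t) \<in> S})"
proof -
  define r where "r = real qa / real qb"
  have "real (\<Sum>y\<in>{..U} \<inter> {y. (y, t) \<in> S}. wt qa qb \<sigma> U y) = real qb ^ U * (\<Sum>y\<in>{..U} \<inter> {y. (y, t) \<in> S}. r ^ dist y \<sigma>)"
    unfolding of_nat_sum sum_distrib_left r_def by (rule sum.cong) (use wt_real[OF s _ q(2)] in auto)
  moreover have "real (Cs qa qb \<sigma> U (Suc U)) = real qb ^ U * (\<Sum>y\<in>{..U}. r ^ dist y \<sigma>)"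
    unfolding Cs_def lessThan_Suc_atMost of_nat_sum sum_distrib_left r_def by (rule sum.cong) (use wt_real[OF s _ q(2)] in auto)
  ultimately show ?thesis unfolding E2_card[OF q] Ef_def r_def using q by simp
qed

lemma Ef_nonneg: "0 \<le> q \<Longrightarrow> 0 \<le> Ef q \<sigma> U A"
  unfolding Ef_def by (intro divide_nonneg_nonneg sum_nonneg) auto

lemma Ef_mono: "0 \<le> q \<Longrightarrow> A \<subseteq> B \<Longrightarrow> Ef q \<sigma> U A \<le> Ef q \<sigma> U B"
  unfolding Ef_def by (intro divide_right_mono sum_mono2 sum_nonneg) auto

lemma Ef_le1: "0 \<le> q \<Longrightarrow> Ef q \<sigma> U A \<le> 1"
proof -
  assume q: "0 \<le> q"
  have "Ef q \<sigma> U A \<le> Ef q \<sigma> U UNIV" by (rule Ef_mono[OF q]) simp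
  also have "\<dots> \<le> 1" unfolding Ef_def by (simp add: divide_le_eq_1)
  finally show ?thesis .
qed

lemma Z_pos: "0 < (q::real) \<Longrightarrow> \<sigma> \<le> U \<Longrightarrow> 1 \<le> (\<Sum>y\<in>{..U}. q ^ dist y \<sigma>)"
proof -
  assume q: "0 < q" and s: "\<sigma> \<le> U"
  have "q ^ dist \<sigma> \<sigma> \<le> (\<Sum>y\<in>{..U}. q ^ dist y \<sigma>)"
    using member_le_sum[of \<sigma> "{..U}" "\<lambda>y. q ^ dist y \<sigma>"] s q by auto
  then show ?thesis by (simp add: dist_def)
qed

lemma Ef_ratio:
  assumes q: "0 < q" "q \<le> 1" and s: "\<sigma> \<le> U" "\<sigma>' \<le> U" "dist \<sigma> \<sigma>' \<le> dl"
  shows "q ^ (2 * dl) * Ef q \<sigma> U A \<le> Ef q \<sigma>' U A"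
proof -
  have pt: "q ^ dl * q ^ dist y \<sigma> \<le> q ^ dist y \<sigma>'" for y
  proof -
    have "dist y \<sigma>' \<le> dist y \<sigma> + dl" using dist_tri[of y \<sigma>' \<sigma>] s by simp
    then have "q ^ (dist y \<sigma> + dl) \<le> q ^ dist y \<sigma>'" by (rule power_decreasing) (use q in auto)
    then show ?thesis by (simp add: power_add mult.commute)
  qed
  have pt2: "q ^ dl * q ^ dist y \<sigma>' \<le> q ^ dist y \<sigma>" for y
  proof -
    have "dist y \<sigma> \<le> dist y \<sigma>' + dl" using dist_tri[of y \<sigma> \<sigma>'] s by (simp add: dist_def)
    then have "q ^ (dist y \<sigma>' + dl) \<le> q ^ dist y \<sigma>" by (rule power_decreasing) (use q in auto)
    then show ?thesis by (simp add: power_add mult.commute)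
  qed
  define N where "N = (\<Sum>y\<in>{..U} \<inter> A. q ^ dist y \<sigma>)"
  define N' where "N' = (\<Sum>y\<in>{..U} \<inter> A. q ^ dist y \<sigma>')"
  define Z where "Z = (\<Sum>y\<in>{..U}. q ^ dist y \<sigma>)"
  define Z' where "Z' = (\<Sum>y\<in>{..U}. q ^ dist y \<sigma>')"
  have N: "q ^ dl * N \<le> N'" unfolding N_def N'_def sum_distrib_left by (rule sum_mono) (rule pt)
  have Z: "q ^ dl * Z' \<le> Z" unfolding Z_def Z'_def sum_distrib_left by (rule sum_mono) (rule pt2)
  have Z0: "1 \<le> Z" "1 \<le> Z'" unfolding Z_def Z'_def using Z_pos[OF q(1)] s by auto
  have N0: "0 \<le> N" unfolding N_def using q by (intro sum_nonneg) auto
  have qd: "0 < q ^ dl" using q by simp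
  have p2: "q ^ (2 * dl) = q ^ dl * q ^ dl" by (simp add: mult_2 power_add)
  have "q ^ (2 * dl) * (N / Z) = (q ^ dl * N) * (q ^ dl / Z)" unfolding p2 by (simp add: mult_ac)
  also have "\<dots> \<le> N' * (q ^ dl / Z)" by (rule mult_right_mono[OF N]) (use qd Z0 in simp)
  also have "\<dots> \<le> N' * (1 / Z')"
  proof (rule mult_left_mono)
    show "q ^ dl / Z \<le> 1 / Z'" using Z Z0 qd by (simp add: field_simps)
    show "0 \<le> N'" unfolding N'_def using q by (intro sum_nonneg) auto
  qed
  finally show ?thesis unfolding Ef_def N_def[symmetric] N'_def[symmetric] Z_def[symmetric] Z'_def[symmetric] by simp
qed

lemma geom_sum_bound:
  fixes q :: real
  assumes q: "0 \<le> q" "q < 1"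
  shows "(\<Sum>k\<in>{m..<m + N}. q ^ k) \<le> q ^ m / (1 - q)"
proof -
  have "(\<Sum>k\<in>{m..<m + N}. q ^ k) = (\<Sum>k<N. q ^ m * q ^ k)"
  proof -
    have "(\<Sum>k\<in>{m..<m + N}. q ^ k) = (\<Sum>k<N. q ^ (m + k))"
      by (rule sum.reindex_bij_witness[of _ "\<lambda>k. m + k" "\<lambda>k. k - m"]) auto
    also have "\<dots> = (\<Sum>k<N. q ^ m * q ^ k)" by (rule sum.cong) (simp_all add: power_add)
    finally show ?thesis .
  qed
  also have "\<dots> = q ^ m * ((1 - q ^ N) / (1 - q))"
    using q by (simp add: sum_distrib_left[symmetric] sum_gp_strict)
  also have "\<dots> \<le> q ^ m * (1 / (1 - q))"
    by (rule mult_left_mono) (use q in \<open>auto simp: divide_right_mono\<close>)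
  finally show ?thesis by simp
qed

lemma Ef_tail:
  assumes q: "0 < q" "q < 1" and s: "\<sigma> \<le> U"
  shows "Ef q \<sigma> U {y. m \<le> dist y \<sigma>} \<le> 2 * q ^ m / (1 - q)"
proof -
  define A1 where "A1 = {y. y \<le> U \<and> \<sigma> \<le> y \<and> m \<le> dist y \<sigma>}"
  define A2 where "A2 = {y. y \<le> U \<and> y < \<sigma> \<and> m \<le> dist y \<sigma>}"
  have split: "{..U} \<inter> {y. m \<le> dist y \<sigma>} = A1 \<union> A2" unfolding A1_def A2_def by auto
  have fin: "finite A1" "finite A2" unfolding A1_def A2_def by auto
  have s1: "(\<Sum>y\<in>A1. q ^ dist y \<sigma>) \<le> q ^ m / (1 - q)"
  proof -
    have "(\<Sum>y\<in>A1. q ^ dist y \<sigma>) = (\<Sum>k\<in>(\<lambda>y. y - \<sigma>) ` A1. q ^ k)"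
      by (subst sum.reindex) (auto simp: inj_on_def A1_def dist_def)
    also have "\<dots> \<le> (\<Sum>k\<in>{m..<m + Suc U}. q ^ k)"
      by (rule sum_mono2) (use q in \<open>auto simp: A1_def dist_def\<close>)
    also have "\<dots> \<le> q ^ m / (1 - q)" by (rule geom_sum_bound) (use q in auto)
    finally show ?thesis .
  qed
  have s2: "(\<Sum>y\<in>A2. q ^ dist y \<sigma>) \<le> q ^ m / (1 - q)"
  proof -
    have "(\<Sum>y\<in>A2. q ^ dist y \<sigma>) = (\<Sum>k\<in>(\<lambda>y. \<sigma> - y) ` A2. q ^ k)"
      by (subst sum.reindex) (auto simp: inj_on_def A2_def dist_def)
    also have "\<dots> \<le> (\<Sum>k\<in>{m..<m + Suc U}. q ^ k)"
      by (rule sum_mono2) (use q s in \<open>auto simp: A2_def dist_def\<close>)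
    also have "\<dots> \<le> q ^ m / (1 - q)" by (rule geom_sum_bound) (use q in auto)
    finally show ?thesis .
  qed
  have "(\<Sum>y\<in>{..U} \<inter> {y. m \<le> dist y \<sigma>}. q ^ dist y \<sigma>) = (\<Sum>y\<in>A1. q ^ dist y \<sigma>) + (\<Sum>y\<in>A2. q ^ dist y \<sigma>)"
    unfolding split by (rule sum.union_disjoint) (use fin in \<open>auto simp: A1_def A2_def\<close>)
  also have "\<dots> \<le> 2 * q ^ m / (1 - q)" using s1 s2 by simp
  finally have num: "(\<Sum>y\<in>{..U} \<inter> {y. m \<le> dist y \<sigma>}. q ^ dist y \<sigma>) \<le> 2 * q ^ m / (1 - q)" .
  have Z: "1 \<le> (\<Sum>y\<in>{..U}. q ^ dist y \<sigma>)" by (rule Z_pos[OF q(1) s])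
  have "Ef q \<sigma> U {y. m \<le> dist y \<sigma>} \<le> (\<Sum>y\<in>{..U} \<inter> {y. m \<le> dist y \<sigma>}. q ^ dist y \<sigma>)"
  proof -
    have g: "\<And>N Z::real. 0 \<le> N \<Longrightarrow> 1 \<le> Z \<Longrightarrow> N / Z \<le> N"
    proof -
      fix N Z :: real assume a: "0 \<le> N" "1 \<le> Z"
      have "N * 1 \<le> N * Z" by (rule mult_left_mono) (use a in auto)
      then show "N / Z \<le> N" using a by (simp add: divide_le_eq)
    qed
    show ?thesis unfolding Ef_def by (rule g[OF _ Z]) (use q in \<open>auto intro: sum_nonneg\<close>)
  qed
  then show ?thesis using num by simp
qed


lemma LBr_sum:
  assumes hf: "\<And>i. 0 \<le> hf i" "\<And>i. hf i \<le> 1"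
  shows "LBr hf g j k t = (\<Sum>i<k. ennreal ((\<Prod>l<i. 1 - hf (j + l)) * hf (j + i)) * g (j + i) (t + 44 * i))"
proof (induction k arbitrary: j t)
  case 0 then show ?case by simp
next
  case (Suc k)
  have hj: "0 \<le> 1 - hf j" using hf(2)[of j] by simp
  have "LBr hf g j (Suc k) t = ennreal (hf j) * g j t + ennreal (1 - hf j) * LBr hf g (Suc j) k (t + 44)" by simp
  also have "\<dots> = ennreal (hf j) * g j t + (\<Sum>i<k. ennreal (1 - hf j) * (ennreal ((\<Prod>l<i. 1 - hf (Suc j + l)) * hf (Suc j + i)) * g (Suc j + i) (t + 44 + 44 * i)))"
    unfolding Suc.IH by (simp add: sum_distrib_left)
  also have "(\<Sum>i<k. ennreal (1 - hf j) * (ennreal ((\<Prod>l<i. 1 - hf (Suc j + l)) * hf (Suc j + i)) * g (Suc j + i) (t + 44 + 44 * i)))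
      = (\<Sum>i<k. ennreal ((\<Prod>l<Suc i. 1 - hf (j + l)) * hf (j + Suc i)) * g (j + Suc i) (t + 44 * Suc i))"
  proof (rule sum.cong)
    fix i
    have p0: "0 \<le> (\<Prod>l<i. 1 - hf (Suc j + l))" using hf by (intro prod_nonneg) auto
    have "(\<Prod>l<Suc i. 1 - hf (j + l)) = (1 - hf j) * (\<Prod>l<i. 1 - hf (Suc j + l))"
      by (subst prod.lessThan_Suc_shift) simp
    then have "ennreal ((\<Prod>l<Suc i. 1 - hf (j + l)) * hf (j + Suc i)) = ennreal (1 - hf j) * ennreal ((\<Prod>l<i. 1 - hf (Suc j + l)) * hf (Suc j + i))"
      using hj p0 hf(1) by (simp add: ennreal_mult[symmetric] mult.assoc)
    then show "ennreal (1 - hf j) * (ennreal ((\<Prod>l<i. 1 - hf (Suc j + l)) * hf (Suc j + i)) * g (Suc j + i) (t + 44 + 44 * i))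
      = ennreal ((\<Prod>l<Suc i. 1 - hf (j + l)) * hf (j + Suc i)) * g (j + Suc i) (t + 44 * Suc i)"
      by (simp add: mult.assoc algebra_simps)
  qed simp
  also have "ennreal (hf j) * g j t + \<dots> = (\<Sum>i<Suc k. ennreal ((\<Prod>l<i. 1 - hf (j + l)) * hf (j + i)) * g (j + i) (t + 44 * i))"
    by (simp add: sum.lessThan_Suc_shift del: sum.lessThan_Suc)
  finally show ?case .
qed

definition ft :: "nat \<Rightarrow> nat \<Rightarrow> nat \<Rightarrow> nat" where
  "ft dd dl j = 45 + 5 * dd + 44 * j + 14 + 51 * (j * dl) + 41"

definition Phi :: "nat \<Rightarrow> nat \<Rightarrow> nat \<Rightarrow> nat \<Rightarrow> nat \<Rightarrow> nat \<Rightarrow> nat list \<Rightarrow> (nat \<times> nat) set \<Rightarrow> ennreal" where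
  "Phi dd mm ll dl qa qb x S = (\<Sum>j. ennreal (Qf dd mm ll (length x) j) * E2 qa qb (sum_list (take j x)) (j * dl) S (ft dd dl j))"

lemma hp_ge_Phi:
  assumes c: "compatible env x" and q: "0 < qa" "qa \<le> qb" and ds: "\<forall>v\<in>set x. v \<le> dl" and ll1: "1 \<le> ll" and mm1: "1 \<le> mm"
  shows "Phi dd mm ll dl qa qb x S \<le> hp (PR dd mm ll dl qa qb) (length x) S (init env)"
proof -
  have h: "\<And>i. 0 \<le> hz dd mm ll (length x) i" "\<And>i. hz dd mm ll (length x) i \<le> 1"
    using hz_nonneg hz_le1[OF ll1] by auto
  have "(\<Sum>i<k. ennreal (Qf dd mm ll (length x) i) * E2 qa qb (sum_list (take i x)) (i * dl) S (ft dd dl i))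
     \<le> hp (PR dd mm ll dl qa qb) (length x) S (init env)" for k
  proof -
    have "(\<Sum>i<k. ennreal (Qf dd mm ll (length x) i) * E2 qa qb (sum_list (take i x)) (i * dl) S (ft dd dl i))
      = LBr (hz dd mm ll (length x)) (\<lambda>j t. E2 qa qb (sum_list (take j x)) (j * dl) S (t + 14 + 51 * (j * dl) + 41)) 0 k (45 + 5 * dd)"
      unfolding LBr_sum[OF h] by (simp add: Qf_def ft_def mult.commute add.assoc)
    also have "\<dots> \<le> hp (PR dd mm ll dl qa qb) (length x) S (init env)"
      by (rule prog_lb[OF c q ds ll1 mm1])
    finally show ?thesis .
  qed
  then show ?thesis unfolding Phi_def suminf_eq_SUP by (intro SUP_least) auto
qed

lemma Ef_compl: "0 < q \<Longrightarrow> \<sigma> \<le> U \<Longrightarrow> Ef q \<sigma> U A + Ef q \<sigma> U (- A) = 1"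
proof -
  assume q: "0 < q" and s: "\<sigma> \<le> U"
  have Z: "1 \<le> (\<Sum>y\<in>{..U}. q ^ dist y \<sigma>)" by (rule Z_pos[OF q s])
  have "(\<Sum>y\<in>{..U} \<inter> A. q ^ dist y \<sigma>) + (\<Sum>y\<in>{..U} \<inter> - A. q ^ dist y \<sigma>) = (\<Sum>y\<in>{..U}. q ^ dist y \<sigma>)"
    by (subst sum.union_disjoint[symmetric]) (auto intro: sum.cong)
  then show ?thesis unfolding Ef_def using Z by (simp add: add_divide_distrib[symmetric])
qed

lemma E2_compl:
  assumes q: "0 < qa" "0 < qb" and s: "\<sigma> \<le> U"
  shows "E2 qa qb \<sigma> U S t + E2 qa qb \<sigma> U (- S) t = 1"
proof -
  have e: "{y. (y, t) \<in> - S} = - {y. (y, t) \<in> S}" by auto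
  have q0: "0 < real qa / real qb" using q by simp
  show ?thesis unfolding E2_Ef[OF q s] e
    using Ef_compl[OF q0 s] Ef_nonneg[of "real qa / real qb"] q0
    by (simp add: ennreal_plus[symmetric] del: ennreal_plus)
qed

lemma Phi_compl:
  assumes q: "0 < qa" "0 < qb" and ds: "\<forall>v\<in>set x. v \<le> dl" and A: "1 \<le> dd" "2 \<le> ll" "mm = dd * (ll + 1)"
  shows "Phi dd mm ll dl qa qb x S + Phi dd mm ll dl qa qb x (- S) = 1"
proof -
  have "Phi dd mm ll dl qa qb x S + Phi dd mm ll dl qa qb x (- S)
     = (\<Sum>j. ennreal (Qf dd mm ll (length x) j) * E2 qa qb (sum_list (take j x)) (j * dl) S (ft dd dl j)
          + ennreal (Qf dd mm ll (length x) j) * E2 qa qb (sum_list (take j x)) (j * dl) (- S) (ft dd dl j))"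
    unfolding Phi_def by (rule suminf_add) (rule summableI)+
  also have "\<dots> = (\<Sum>j. ennreal (Qf dd mm ll (length x) j))"
    using E2_compl[OF q sum_take_le[OF ds]] by (simp add: distrib_left[symmetric])
  also have "\<dots> = ennreal 1"
    by (rule suminf_ennreal_eq) (use Q_nonneg[of ll] A Q_sums[OF A] in auto)
  finally show ?thesis by simp
qed

lemma sandwich:
  fixes a b c d :: ennreal
  assumes "c \<le> a" "d \<le> b" "a + b \<le> 1" "c + d = 1"
  shows "a = c"
proof (rule antisym)
  have "d \<le> 1" using assms(4) by (metis le_iff_add add.commute)
  then have dfin: "d \<noteq> \<infinity>" using ennreal_one_less_top by (auto simp: top_unique)
  have "d + a \<le> d + c"
  proof -
    have "d + a \<le> b + a" using assms(2) by (simp add: add_right_mono)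
    also have "\<dots> \<le> 1" using assms(3) by (simp add: add.commute)
    also have "\<dots> = d + c" using assms(4) by (simp add: add.commute)
    finally show ?thesis .
  qed
  then show "a \<le> c" using dfin ennreal_add_left_cancel_le by blast
qed (rule assms(1))

lemma out_eq_Phi:
  assumes c: "compatible env x" and q: "0 < qa" "qa \<le> qb" and ds: "\<forall>v\<in>set x. v \<le> dl"
    and A: "1 \<le> dd" "2 \<le> ll" "mm = dd * (ll + 1)"
  shows "ennreal (out_time_prob (PR dd mm ll dl qa qb) x env S) = Phi dd mm ll dl qa qb x S"
proof -
  have ll1: "1 \<le> ll" and mm1: "1 \<le> mm" using A by auto
  have q2: "0 < qb" using q by simp
  show ?thesis unfolding out_time_prob_hp
    by (rule sandwich[OF hp_ge_Phi[OF c q ds ll1 mm1] hp_ge_Phi[OF c q ds ll1 mm1] hp_compl Phi_compl[OF q(1) q2 ds A]])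
qed


lemma take_del:
  fixes x :: "nat list"
  assumes i: "i < length x" and j: "i < j"
  shows "sum_list (take j (take i x @ drop (Suc i) x)) + x ! i = sum_list (take (Suc j) x)"
proof -
  have x: "x = take i x @ [x ! i] @ drop (Suc i) x" using i by (simp add: Cons_nth_drop_Suc)
  have "take (Suc j) x = take i x @ [x ! i] @ take (j - i) (drop (Suc i) x)"
  proof -
    have "take (Suc j) x = take (Suc j) (take i x @ [x ! i] @ drop (Suc i) x)" using x by simp
    also have "\<dots> = take i x @ take (Suc j - i) ([x ! i] @ drop (Suc i) x)" using i j by (simp add: min_def)
    also have "Suc j - i = Suc (j - i)" using j by simp
    finally show ?thesis by simp
  qed
  then have e1: "sum_list (take (Suc j) x) = sum_list (take i x) + (x ! i + sum_list (take (j - i) (drop (Suc i) x)))"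
    by simp
  have "take j (take i x @ drop (Suc i) x) = take i x @ take (j - i) (drop (Suc i) x)"
    using i j by (simp add: min_def)
  then have e2: "sum_list (take j (take i x @ drop (Suc i) x)) = sum_list (take i x) + sum_list (take (j - i) (drop (Suc i) x))"
    by simp
  define A where "A = sum_list (take i x)"
  define B where "B = sum_list (take (j - i) (drop (Suc i) x))"
  show ?thesis unfolding e1 e2 A_def[symmetric] B_def[symmetric] by (simp add: ac_simps)
qed

lemma del_one_dist:
  assumes ds: "\<forall>v\<in>set x. v \<le> dl" and d: "del_one x x'"
  shows "dist (sum_list (take j x)) (sum_list (take j x')) \<le> dl"
proof -
  obtain i where i: "i < length x" and x': "x' = take i x @ drop (Suc i) x" using d by (auto simp: del_one_def)
  show ?thesis
  proof (cases "j \<le> i")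
    case True
    then have "take j x' = take j x" unfolding x' using i by (simp add: min_def)
    then show ?thesis by (simp add: dist_def)
  next
    case False
    have e: "sum_list (take j x') + x ! i = sum_list (take (Suc j) x)" unfolding x' by (rule take_del[OF i]) (use False in simp)
    have xi: "x ! i \<le> dl" using ds i by (simp add: nth_mem)
    have s: "sum_list (take (Suc j) x) = sum_list (take j x) + (if j < length x then x ! j else 0)" by (rule sum_take_Suc)
    have xj: "(if j < length x then x ! j else 0) \<le> dl" using ds by (simp add: nth_mem)
    show ?thesis using e s xi xj by (simp add: dist_def)
  qed
qed

lemma del_one_len: "del_one x x' \<Longrightarrow> length x' = length x - 1"
  by (auto simp: del_one_def)

lemma dist_sym: "dist a b = dist b a" by (simp add: dist_def)

lemma E2_empty: "E2 qa qb \<sigma> U {} t = 0" by (simp add: E2_def)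

lemma Phi_UNIV:
  assumes q: "0 < qa" "0 < qb" and ds: "\<forall>v\<in>set x. v \<le> dl" and A: "1 \<le> dd" "2 \<le> ll" "mm = dd * (ll + 1)"
  shows "Phi dd mm ll dl qa qb x UNIV = 1"
  using Phi_compl[OF q ds A, of UNIV] unfolding Phi_def by (simp add: E2_empty)

lemma Phi_dp1:
  assumes q: "0 < qa" "qa \<le> qb" and ds: "\<forall>v\<in>set x. v \<le> dl" "\<forall>v\<in>set x'. v \<le> dl" and d: "del_one x x'"
    and A: "1 \<le> dd" "4 \<le> ll" "mm = dd * (ll + 1)"
    and e2: "exp (- \<epsilon> / 2) \<le> 1 - 3 / (real ll - 1)"
    and e3: "exp (- \<epsilon> / 2) \<le> (real qa / real qb) ^ (2 * dl)"
  shows "Phi dd mm ll dl qa qb x S \<le> ennreal (exp \<epsilon>) * Phi dd mm ll dl qa qb x' S"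
proof -
  define n where "n = length x"
  have n1: "1 \<le> n" using d unfolding n_def del_one_def by auto
  have lx': "length x' = n - 1" using del_one_len[OF d] n_def by simp
  have A2: "2 \<le> ll" using A by simp
  define r where "r = real qa / real qb"
  have r0: "0 < r" "r \<le> 1" unfolding r_def using q by auto
  have qb: "0 < qb" using q by simp
  have tm: "ennreal (Qf dd mm ll n j) * E2 qa qb (sum_list (take j x)) (j * dl) S (ft dd dl j)
      \<le> ennreal (exp \<epsilon>) * (ennreal (Qf dd mm ll (n - 1) j) * E2 qa qb (sum_list (take j x')) (j * dl) S (ft dd dl j))" for j
  proof -
    define a where "a = Qf dd mm ll n j"
    define a' where "a' = Qf dd mm ll (n - 1) j"
    define B where "B = {y. (y, ft dd dl j) \<in> S}"
    define b where "b = Ef r (sum_list (take j x)) (j * dl) B"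
    define b' where "b' = Ef r (sum_list (take j x')) (j * dl) B"
    have a0: "0 \<le> a" "0 \<le> a'" unfolding a_def a'_def using Q_nonneg A by auto
    have b0: "0 \<le> b" "0 \<le> b'" unfolding b_def b'_def using Ef_nonneg r0 by auto
    have ha: "exp (- \<epsilon> / 2) * a \<le> a'"
    proof -
      have "exp (- \<epsilon> / 2) * a \<le> (1 - 3 / (real ll - 1)) * a" by (rule mult_right_mono[OF e2 a0(1)])
      also have "\<dots> \<le> a'" unfolding a_def a'_def by (rule Q_ratio2[OF A(1) A2 A(3) n1 A(2)])
      finally show ?thesis .
    qed
    have hb: "exp (- \<epsilon> / 2) * b \<le> b'"
    proof -
      have "exp (- \<epsilon> / 2) * b \<le> r ^ (2 * dl) * b" unfolding r_def by (rule mult_right_mono[OF e3 b0(1)])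
      also have "\<dots> \<le> b'" unfolding b_def b'_def
        by (rule Ef_ratio[OF r0 sum_take_le[OF ds(1)] sum_take_le[OF ds(2)] del_one_dist[OF ds(1) d]])
      finally show ?thesis .
    qed
    have M: "exp (- \<epsilon> / 2) * a * (exp (- \<epsilon> / 2) * b) \<le> a' * b'"
      using mult_mono[OF ha hb] a0 b0 by simp
    have E: "exp (- \<epsilon> / 2) * a * (exp (- \<epsilon> / 2) * b) = exp (- \<epsilon>) * (a * b)"
    proof -
      have ee: "exp (- \<epsilon> / 2) * exp (- \<epsilon> / 2) = exp (- \<epsilon>)" by (simp add: mult_exp_exp)
      have "exp (- \<epsilon> / 2) * a * (exp (- \<epsilon> / 2) * b) = (exp (- \<epsilon> / 2) * exp (- \<epsilon> / 2)) * (a * b)" by (simp only: mult_ac)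
      then show ?thesis unfolding ee .
    qed
    from M have X: "exp (- \<epsilon>) * (a * b) \<le> a' * b'" unfolding E .
    have "a * b = exp \<epsilon> * (exp (- \<epsilon>) * (a * b))" by (simp add: mult.assoc[symmetric] mult_exp_exp)
    also have "\<dots> \<le> exp \<epsilon> * (a' * b')" by (rule mult_left_mono[OF X]) simp
    finally have "a * b \<le> exp \<epsilon> * (a' * b')" .
    then have "ennreal (a * b) \<le> ennreal (exp \<epsilon> * (a' * b'))" by (rule ennreal_leI)
    moreover have "E2 qa qb (sum_list (take j x)) (j * dl) S (ft dd dl j) = ennreal b"
      unfolding b_def B_def r_def by (rule E2_Ef[OF q(1) qb sum_take_le[OF ds(1)]])
    moreover have "E2 qa qb (sum_list (take j x')) (j * dl) S (ft dd dl j) = ennreal b'"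
      unfolding b'_def B_def r_def by (rule E2_Ef[OF q(1) qb sum_take_le[OF ds(2)]])
    ultimately show ?thesis unfolding a_def[symmetric] a'_def[symmetric] using a0 b0
      by (simp add: ennreal_mult'[symmetric] ennreal_mult[symmetric] mult.assoc)
  qed
  have "Phi dd mm ll dl qa qb x S \<le> (\<Sum>j. ennreal (exp \<epsilon>) * (ennreal (Qf dd mm ll (n - 1) j) * E2 qa qb (sum_list (take j x')) (j * dl) S (ft dd dl j)))"
    unfolding Phi_def n_def[symmetric] by (rule suminf_le[OF tm summableI summableI])
  also have "\<dots> = ennreal (exp \<epsilon>) * Phi dd mm ll dl qa qb x' S"
    unfolding Phi_def lx' by simp
  finally show ?thesis .
qed

lemma Phi_dp2:
  assumes q: "0 < qa" "qa \<le> qb" and ds: "\<forall>v\<in>set x. v \<le> dl" "\<forall>v\<in>set x'. v \<le> dl" and d: "del_one x x'"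
    and A: "1 \<le> dd" "2 \<le> ll" "mm = dd * (ll + 1)"
    and e1: "(real (ll+1) / real ll)^2 \<le> exp (\<epsilon> / 2)"
    and e3: "exp (- \<epsilon> / 2) \<le> (real qa / real qb) ^ (2 * dl)"
  shows "Phi dd mm ll dl qa qb x' S \<le> ennreal (exp \<epsilon>) * Phi dd mm ll dl qa qb x S"
proof -
  define n where "n = length x"
  have n1: "1 \<le> n" using d unfolding n_def del_one_def by auto
  have lx': "length x' = n - 1" using del_one_len[OF d] n_def by simp
  define r where "r = real qa / real qb"
  have r0: "0 < r" "r \<le> 1" unfolding r_def using q by auto
  have qb: "0 < qb" using q by simp
  have tm: "ennreal (Qf dd mm ll (n - 1) j) * E2 qa qb (sum_list (take j x')) (j * dl) S (ft dd dl j)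
      \<le> ennreal (exp \<epsilon>) * (ennreal (Qf dd mm ll n j) * E2 qa qb (sum_list (take j x)) (j * dl) S (ft dd dl j))" for j
  proof -
    define a where "a = Qf dd mm ll n j"
    define a' where "a' = Qf dd mm ll (n - 1) j"
    define B where "B = {y. (y, ft dd dl j) \<in> S}"
    define b where "b = Ef r (sum_list (take j x)) (j * dl) B"
    define b' where "b' = Ef r (sum_list (take j x')) (j * dl) B"
    have a0: "0 \<le> a" "0 \<le> a'" unfolding a_def a'_def using Q_nonneg A by auto
    have b0: "0 \<le> b" "0 \<le> b'" unfolding b_def b'_def using Ef_nonneg r0 by auto
    have ha: "a' \<le> exp (\<epsilon> / 2) * a"
    proof -
      have "a' \<le> (real (ll+1) / real ll)^2 * a" unfolding a_def a'_def by (rule Q_ratio1[OF A n1])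
      also have "\<dots> \<le> exp (\<epsilon> / 2) * a" by (rule mult_right_mono[OF e1 a0(1)])
      finally show ?thesis .
    qed
    have hb: "exp (- \<epsilon> / 2) * b' \<le> b"
    proof -
      have "exp (- \<epsilon> / 2) * b' \<le> r ^ (2 * dl) * b'" unfolding r_def by (rule mult_right_mono[OF e3 b0(2)])
      also have "\<dots> \<le> b" unfolding b_def b'_def
        by (rule Ef_ratio[OF r0 sum_take_le[OF ds(2)] sum_take_le[OF ds(1)]]) (use del_one_dist[OF ds(1) d] dist_sym in metis)
      finally show ?thesis .
    qed
    have hb2: "b' \<le> exp (\<epsilon> / 2) * b"
      using hb by (simp add: exp_minus field_simps)
    have "a' * b' \<le> (exp (\<epsilon> / 2) * a) * (exp (\<epsilon> / 2) * b)"
      by (rule mult_mono[OF ha hb2]) (use a0 b0 in auto)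
    also have "\<dots> = exp \<epsilon> * (a * b)"
    proof -
      have ee: "exp (\<epsilon> / 2) * exp (\<epsilon> / 2) = exp \<epsilon>" by (simp add: mult_exp_exp)
      have "(exp (\<epsilon> / 2) * a) * (exp (\<epsilon> / 2) * b) = (exp (\<epsilon> / 2) * exp (\<epsilon> / 2)) * (a * b)" by (simp only: mult_ac)
      then show ?thesis unfolding ee .
    qed
    finally have "ennreal (a' * b') \<le> ennreal (exp \<epsilon> * (a * b))" by (rule ennreal_leI)
    moreover have "E2 qa qb (sum_list (take j x)) (j * dl) S (ft dd dl j) = ennreal b"
      unfolding b_def B_def r_def by (rule E2_Ef[OF q(1) qb sum_take_le[OF ds(1)]])
    moreover have "E2 qa qb (sum_list (take j x')) (j * dl) S (ft dd dl j) = ennreal b'"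
      unfolding b'_def B_def r_def by (rule E2_Ef[OF q(1) qb sum_take_le[OF ds(2)]])
    ultimately show ?thesis unfolding a_def[symmetric] a'_def[symmetric] using a0 b0
      by (simp add: ennreal_mult'[symmetric] ennreal_mult[symmetric] mult.assoc)
  qed
  have "Phi dd mm ll dl qa qb x' S \<le> (\<Sum>j. ennreal (exp \<epsilon>) * (ennreal (Qf dd mm ll n j) * E2 qa qb (sum_list (take j x)) (j * dl) S (ft dd dl j)))"
    unfolding Phi_def lx' by (rule suminf_le[OF tm summableI summableI])
  also have "\<dots> = ennreal (exp \<epsilon>) * Phi dd mm ll dl qa qb x S"
    unfolding Phi_def n_def by simp
  finally show ?thesis .
qed


lemma real_dist: "real (dist y s) = \<bar>real y - real s\<bar>"
  by (simp add: dist_def of_nat_diff)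

lemma Phi_acc:
  assumes q: "0 < qa" "qa < qb" and ds: "\<forall>v\<in>set x. v \<le> dl" and A: "1 \<le> dd" "2 \<le> ll" "mm = dd * (ll + 1)"
    and tau: "0 \<le> \<tau>"
  shows "Phi dd mm ll dl qa qb x {(y, t). \<tau> \<le> \<bar>real y - real (sum_list x)\<bar>}
     \<le> ennreal (real (length x) * (1 / real ((length x + mm) ^ dd)) + 2 * (real qa / real qb) ^ nat \<lceil>\<tau>\<rceil> / (1 - real qa / real qb))"
proof -
  define n where "n = length x"
  define r where "r = real qa / real qb"
  define m where "m = nat \<lceil>\<tau>\<rceil>"
  define T where "T = 2 * r ^ m / (1 - r)"
  have qb: "0 < qb" using q by simp
  have r0: "0 < r" "r < 1" unfolding r_def using q by auto
  have T0: "0 \<le> T" unfolding T_def using r0 by simp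
  define B :: "(nat \<times> nat) set" where "B = {(y, t). \<tau> \<le> \<bar>real y - real (sum_list x)\<bar>}"
  have pt: "ennreal (Qf dd mm ll n j) * E2 qa qb (sum_list (take j x)) (j * dl) B (ft dd dl j)
      \<le> ennreal (if j < n then Qf dd mm ll n j else 0) + ennreal (Qf dd mm ll n j) * ennreal T" for j
  proof -
    define e where "e = Ef r (sum_list (take j x)) (j * dl) {y. (y, ft dd dl j) \<in> B}"
    have E: "E2 qa qb (sum_list (take j x)) (j * dl) B (ft dd dl j) = ennreal e"
      unfolding e_def r_def by (rule E2_Ef[OF q(1) qb sum_take_le[OF ds]])
    have Q0: "0 \<le> Qf dd mm ll n j" using Q_nonneg A by auto
    have e0: "0 \<le> e" "e \<le> 1" unfolding e_def using Ef_nonneg Ef_le1 r0 by auto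
    show ?thesis
    proof (cases "j < n")
      case True
      have "ennreal (Qf dd mm ll n j) * ennreal e \<le> ennreal (Qf dd mm ll n j) * 1"
        by (rule mult_left_mono) (use e0 in auto)
      then show ?thesis unfolding E using True by (simp add: add_increasing2)
    next
      case False
      then have tx: "take j x = x" unfolding n_def by simp
      have sx: "sum_list x \<le> j * dl" using sum_take_le[OF ds, of j] tx by simp
      have sub: "{y. (y, ft dd dl j) \<in> B} \<subseteq> {y. m \<le> dist y (sum_list x)}"
      proof
        fix y assume "y \<in> {y. (y, ft dd dl j) \<in> B}"
        then have "\<tau> \<le> real (dist y (sum_list x))" unfolding B_def by (simp add: real_dist)
        then have "\<lceil>\<tau>\<rceil> \<le> int (dist y (sum_list x))" by (intro ceiling_le) simp
        then show "y \<in> {y. m \<le> dist y (sum_list x)}" unfolding m_def by (simp add: ceiling_le_iff)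
      qed
      have "e \<le> Ef r (sum_list x) (j * dl) {y. m \<le> dist y (sum_list x)}"
        unfolding e_def tx by (rule Ef_mono[OF _ sub]) (use r0 in simp)
      also have "\<dots> \<le> T" unfolding T_def by (rule Ef_tail[OF r0 sx])
      finally have "e \<le> T" .
      then have "ennreal (Qf dd mm ll n j) * ennreal e \<le> ennreal (Qf dd mm ll n j) * ennreal T"
        by (intro mult_left_mono ennreal_leI) auto
      then show ?thesis unfolding E using False by simp
    qed
  qed
  have "Phi dd mm ll dl qa qb x B \<le> (\<Sum>j. ennreal (if j < n then Qf dd mm ll n j else 0) + ennreal (Qf dd mm ll n j) * ennreal T)"
    unfolding Phi_def n_def[symmetric] by (rule suminf_le[OF pt summableI summableI])
  also have "\<dots> = (\<Sum>j. ennreal (if j < n then Qf dd mm ll n j else 0)) + (\<Sum>j. ennreal (Qf dd mm ll n j) * ennreal T)"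
    by (rule suminf_add[symmetric]) (rule summableI)+
  also have "(\<Sum>j. ennreal (if j < n then Qf dd mm ll n j else 0)) = (\<Sum>j<n. ennreal (Qf dd mm ll n j))"
    by (subst suminf_finite[of "{..<n}"]) auto
  also have "\<dots> = ennreal (\<Sum>j<n. Qf dd mm ll n j)"
    by (rule sum_ennreal) (use Q_nonneg A in auto)
  also have "(\<Sum>j. ennreal (Qf dd mm ll n j) * ennreal T) = ennreal T"
  proof -
    have "(\<Sum>j. ennreal (Qf dd mm ll n j)) = ennreal 1"
      by (rule suminf_ennreal_eq) (use Q_nonneg[of ll] A Q_sums[OF A] in auto)
    then show ?thesis by simp
  qed
  also have "ennreal (\<Sum>j<n. Qf dd mm ll n j) + ennreal T = ennreal ((\<Sum>j<n. Qf dd mm ll n j) + T)"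
    by (rule ennreal_plus[symmetric]) (use Q_nonneg A T0 in \<open>auto intro: sum_nonneg\<close>)
  also have "\<dots> \<le> ennreal (real n * (1 / real ((n + mm) ^ dd)) + T)"
    by (rule ennreal_leI) (use Q_low[OF A, of n] in simp)
  finally show ?thesis unfolding B_def n_def T_def r_def m_def .
qed

lemma out_nonneg: "0 \<le> out_time_prob P x env S"
proof -
  have b: "bdd_above (range (\<lambda>t. measure_pmf.prob (run P (length x) env t) {s. halted s \<and> (mem s 0, time s) \<in> S}))"
    by (rule bdd_aboveI[of _ 1]) (auto simp: measure_pmf.prob_le_1)
  have "0 \<le> measure_pmf.prob (run P (length x) env 0) {s. halted s \<and> (mem s 0, time s) \<in> S}" by simp
  also have "\<dots> \<le> out_time_prob P x env S" unfolding out_time_prob_def by (rule cSUP_upper[OF _ b]) simp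
  finally show ?thesis .
qed


lemma e1_bound:
  assumes "0 < \<epsilon>" "4 / \<epsilon> \<le> real ll" "1 \<le> ll"
  shows "(real (ll+1) / real ll)^2 \<le> exp (\<epsilon> / 2)"
proof -
  have l0: "0 < real ll" using assms by simp
  have "real (ll+1) / real ll = 1 + 1 / real ll" using l0 by (simp add: field_simps)
  also have "\<dots> \<le> exp (1 / real ll)" by (rule exp_ge_add_one_self)
  finally have a: "real (ll+1) / real ll \<le> exp (1 / real ll)" .
  have "(real (ll+1) / real ll)^2 \<le> (exp (1 / real ll))^2" by (rule power_mono[OF a]) simp
  also have "\<dots> = exp (2 / real ll)" by (simp add: power2_eq_square mult_exp_exp)
  also have "\<dots> \<le> exp (\<epsilon> / 2)"
  proof -
    have "4 \<le> \<epsilon> * real ll" using assms by (simp add: field_simps)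
    then have "2 / real ll \<le> \<epsilon> / 2" using l0 by (simp add: field_simps)
    then show ?thesis by simp
  qed
  finally show ?thesis .
qed

lemma e2_bound:
  assumes "0 < \<epsilon>" "6 / \<epsilon> + 5 \<le> real ll"
  shows "exp (- \<epsilon> / 2) \<le> 1 - 3 / (real ll - 1)"
proof -
  have "1 + \<epsilon> / 2 \<le> exp (\<epsilon> / 2)" by (rule exp_ge_add_one_self)
  then have a: "exp (- \<epsilon> / 2) \<le> 1 / (1 + \<epsilon> / 2)"
    using assms by (simp add: exp_minus field_simps)
  have l: "6 + 4 * \<epsilon> \<le> \<epsilon> * (real ll - 1)" using assms by (simp add: field_simps)
  have l1: "0 < real ll - 1" using assms by (smt (verit) divide_nonneg_pos)
  have "3 * (2 + \<epsilon>) \<le> \<epsilon> * (real ll - 1)" using l assms by simp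
  then have "3 / (real ll - 1) \<le> \<epsilon> / (2 + \<epsilon>)" using l1 assms by (simp add: field_simps)
  then have "1 / (1 + \<epsilon> / 2) \<le> 1 - 3 / (real ll - 1)" using assms by (simp add: field_simps)
  then show ?thesis using a by simp
qed

theorem mainTheorem4:
  fixes \<Delta> :: nat
  shows "\<forall>c::real>0. \<exists>C::real>0. \<forall>\<epsilon>::real>0. \<exists>P::program.
           jot_dp \<Delta> \<epsilon> P \<and> terminates \<Delta> P \<and>
           (\<exists>N::nat. \<exists>K::real. \<forall>x env. dataset \<Delta> x \<and> compatible env x \<and> length x \<ge> N \<longrightarrow>
              out_time_prob P x env
                {(y, t). \<bar>real y - real (sum_list x)\<bar> \<ge> C * ln (real (length x)) / \<epsilon>}
              < K / real (length x) powr c)"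
proof (intro allI impI)
  fix c :: real assume c: "0 < c"
  define C where "C = 8 * (real \<Delta> + 1) * (c + 1)"
  have C0: "0 < C" unfolding C_def using c by simp
  show "\<exists>C::real>0. \<forall>\<epsilon>::real>0. \<exists>P::program.
           jot_dp \<Delta> \<epsilon> P \<and> terminates \<Delta> P \<and>
           (\<exists>N::nat. \<exists>K::real. \<forall>x env. dataset \<Delta> x \<and> compatible env x \<and> length x \<ge> N \<longrightarrow>
              out_time_prob P x env
                {(y, t). \<bar>real y - real (sum_list x)\<bar> \<ge> C * ln (real (length x)) / \<epsilon>}
              < K / real (length x) powr c)"
  proof (rule exI[of _ C], intro conjI allI impI C0)
    fix \<epsilon> :: real assume e: "0 < \<epsilon>"
    define dd where "dd = nat \<lceil>c\<rceil> + 1"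
    define ll where "ll = nat \<lceil>6 / \<epsilon>\<rceil> + 5"
    define mm where "mm = dd * (ll + 1)"
    define \<kappa> where "\<kappa> = \<epsilon> / (8 * (real \<Delta> + 1))"
    have k0: "0 < \<kappa>" unfolding \<kappa>_def using e by simp
    have "exp (- 2 * \<kappa>) < exp (- \<kappa>)" using k0 by simp
    then obtain r where r: "r \<in> \<rat>" "exp (- 2 * \<kappa>) < r" "r < exp (- \<kappa>)"
      using Rats_dense_in_real by blast
    obtain a b :: int where ab: "0 < b" "r = of_int a / of_int b"
      using Rats_cases'[OF r(1)] by metis
    have r0: "0 < r" using r(2) by (smt (verit) exp_gt_zero)
    have r1: "r < 1" using r(3) k0 by (smt (verit) exp_less_one_iff neg_less_0_iff_less)
    have a0: "0 < a" using r0 ab by (simp add: zero_less_divide_iff)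
    define qa where "qa = nat a"
    define qb where "qb = nat b"
    have rq: "real qa / real qb = r" unfolding qa_def qb_def using ab a0 by simp
    have qa0: "0 < qa" unfolding qa_def using a0 by simp
    have qab: "qa < qb"
    proof -
      have "real qa < real qb" using rq r1 ab qb_def by (simp add: divide_less_eq)
      then show ?thesis by simp
    qed
    have A: "1 \<le> dd" "2 \<le> ll" "mm = dd * (ll + 1)" "4 \<le> ll" unfolding dd_def ll_def mm_def by auto
    have ll6: "6 / \<epsilon> + 5 \<le> real ll" unfolding ll_def using real_nat_ceiling_ge[of "6/\<epsilon>"] by simp
    have ll4: "4 / \<epsilon> \<le> real ll" using ll6 e by (smt (verit) divide_right_mono)
    have E1: "(real (ll+1) / real ll)^2 \<le> exp (\<epsilon> / 2)" by (rule e1_bound[OF e ll4]) (use A in simp)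
    have E2b: "exp (- \<epsilon> / 2) \<le> 1 - 3 / (real ll - 1)" by (rule e2_bound[OF e ll6])
    have E3: "exp (- \<epsilon> / 2) \<le> (real qa / real qb) ^ (2 * \<Delta>)"
    proof -
      have "exp (- \<epsilon> / 2) \<le> exp (- 2 * \<kappa> * real (2 * \<Delta>))"
      proof -
        have "2 * \<kappa> * real (2 * \<Delta>) = \<epsilon> * real \<Delta> / (2 * (real \<Delta> + 1))" unfolding \<kappa>_def by (simp add: field_simps)
        also have "\<dots> \<le> \<epsilon> / 2" using e by (simp add: field_simps)
        finally show ?thesis by simp
      qed
      also have "\<dots> = exp (- 2 * \<kappa>) ^ (2 * \<Delta>)" by (simp add: exp_of_nat_mult[symmetric] mult.commute)
      also have "\<dots> \<le> r ^ (2 * \<Delta>)" by (rule power_mono) (use r in auto)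
      finally show ?thesis using rq by simp
    qed
    define P where "P = prog dd mm ll \<Delta> qa qb"
    have ds_def: "\<And>x. dataset \<Delta> x \<longleftrightarrow> (\<forall>v\<in>set x. v \<le> \<Delta>)" by (simp add: dataset_def)
    have outPhi: "ennreal (out_time_prob P x env S) = Phi dd mm ll \<Delta> qa qb x S"
      if "dataset \<Delta> x" "compatible env x" for x env S
      unfolding P_def by (rule out_eq_Phi) (use that qa0 qab A in \<open>auto simp: dataset_def\<close>)
    show "\<exists>P::program. jot_dp \<Delta> \<epsilon> P \<and> terminates \<Delta> P \<and>
           (\<exists>N::nat. \<exists>K::real. \<forall>x env. dataset \<Delta> x \<and> compatible env x \<and> length x \<ge> N \<longrightarrow>
              out_time_prob P x env
                {(y, t). \<bar>real y - real (sum_list x)\<bar> \<ge> C * ln (real (length x)) / \<epsilon>}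
              < K / real (length x) powr c)"
    proof (rule exI[of _ P], intro conjI)
      show "jot_dp \<Delta> \<epsilon> P"
        unfolding jot_dp_def
      proof (intro allI impI)
        fix x x' :: "nat list" and env env' :: "nat \<Rightarrow> nat" and S :: "(nat \<times> nat) set"
        assume h: "dataset \<Delta> x \<and> dataset \<Delta> x' \<and> adjacent x x' \<and> compatible env x \<and> compatible env' x'"
        have o1: "ennreal (out_time_prob P x env S) = Phi dd mm ll \<Delta> qa qb x S" using outPhi h by blast
        have o2: "ennreal (out_time_prob P x' env' S) = Phi dd mm ll \<Delta> qa qb x' S" using outPhi h by blast
        have le: "Phi dd mm ll \<Delta> qa qb x S \<le> ennreal (exp \<epsilon>) * Phi dd mm ll \<Delta> qa qb x' S"
        proof -
          have adj: "x = x' \<or> del_one x x' \<or> del_one x' x" using h by (simp add: adjacent_def)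
          have dsx: "\<forall>v\<in>set x. v \<le> \<Delta>" "\<forall>v\<in>set x'. v \<le> \<Delta>" using h by (simp_all add: dataset_def)
          show ?thesis
          proof -
            { assume "x = x'"
              then have ?thesis
              proof -
                have "Phi dd mm ll \<Delta> qa qb x S = 1 * Phi dd mm ll \<Delta> qa qb x' S" using \<open>x = x'\<close> by simp
                also have "\<dots> \<le> ennreal (exp \<epsilon>) * Phi dd mm ll \<Delta> qa qb x' S"
                  by (rule mult_right_mono) (use e in \<open>auto simp: one_le_exp_iff\<close>)
                finally show ?thesis .
              qed }
            moreover
            { assume d: "del_one x x'"
              have ?thesis by (rule Phi_dp1[OF qa0 less_imp_le[OF qab] dsx d A(1) A(4) A(3) E2b E3]) }
            moreover
            { assume d: "del_one x' x"
              have ?thesis by (rule Phi_dp2[OF qa0 less_imp_le[OF qab] dsx(2) dsx(1) d A(1) A(2) A(3) E1 E3]) }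
            ultimately show ?thesis using adj by blast
          qed
        qed
        have "ennreal (out_time_prob P x env S) \<le> ennreal (exp \<epsilon> * out_time_prob P x' env' S)"
          using le o1 o2 by (simp add: ennreal_mult out_nonneg)
        then show "out_time_prob P x env S \<le> exp \<epsilon> * out_time_prob P x' env' S"
          by (subst (asm) ennreal_le_iff) (use out_nonneg in auto)
      qed
    next
      show "terminates \<Delta> P"
        unfolding terminates_def
      proof (intro allI impI)
        fix x env assume h: "dataset \<Delta> x \<and> compatible env x"
        have "ennreal (out_time_prob P x env UNIV) = 1"
          using outPhi[of x env UNIV] h Phi_UNIV[OF qa0 _ _ A(1-3), of qb x \<Delta>] qab by (simp add: dataset_def)
        then show "out_time_prob P x env UNIV = 1" using out_nonneg by (simp add: ennreal_eq_1)
      qed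
    next
      define K where "K = 2 + 2 / (1 - r)"
      show "\<exists>N::nat. \<exists>K::real. \<forall>x env. dataset \<Delta> x \<and> compatible env x \<and> length x \<ge> N \<longrightarrow>
              out_time_prob P x env
                {(y, t). \<bar>real y - real (sum_list x)\<bar> \<ge> C * ln (real (length x)) / \<epsilon>}
              < K / real (length x) powr c"
      proof (rule exI[of _ 1], rule exI[of _ K], intro allI impI)
        fix x env assume h: "dataset \<Delta> x \<and> compatible env x \<and> 1 \<le> length x"
        define n where "n = length x"
        have n1: "1 \<le> n" using h n_def by simp
        have n1r: "1 \<le> real n" using n1 by simp
        define \<tau> where "\<tau> = C * ln (real n) / \<epsilon>"
        have tau0: "0 \<le> \<tau>" unfolding \<tau>_def using C0 e n1r by simp
        have dsx: "\<forall>v\<in>set x. v \<le> \<Delta>" using h by (simp add: dataset_def)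
        have bnd: "ennreal (out_time_prob P x env {(y, t). \<tau> \<le> \<bar>real y - real (sum_list x)\<bar>})
            \<le> ennreal (real n * (1 / real ((n + mm) ^ dd)) + 2 * r ^ nat \<lceil>\<tau>\<rceil> / (1 - r))"
        proof -
          have o: "ennreal (out_time_prob P x env {(y, t). \<tau> \<le> \<bar>real y - real (sum_list x)\<bar>})
              = Phi dd mm ll \<Delta> qa qb x {(y, t). \<tau> \<le> \<bar>real y - real (sum_list x)\<bar>}"
            by (rule outPhi) (use h in auto)
          have "Phi dd mm ll \<Delta> qa qb x {(y, t). \<tau> \<le> \<bar>real y - real (sum_list x)\<bar>}
              \<le> ennreal (real (length x) * (1 / real ((length x + mm) ^ dd)) + 2 * (real qa / real qb) ^ nat \<lceil>\<tau>\<rceil> / (1 - real qa / real qb))"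
            by (rule Phi_acc[OF qa0 qab dsx A(1-3) tau0])
          then show ?thesis unfolding o n_def rq .
        qed
        then have b1: "out_time_prob P x env {(y, t). \<tau> \<le> \<bar>real y - real (sum_list x)\<bar>}
            \<le> real n * (1 / real ((n + mm) ^ dd)) + 2 * r ^ nat \<lceil>\<tau>\<rceil> / (1 - r)"
          by (subst (asm) ennreal_le_iff) (use r0 r1 in \<open>auto intro!: add_nonneg_nonneg\<close>)
        have t1: "real n * (1 / real ((n + mm) ^ dd)) \<le> real n powr (- c)"
        proof -
          have "real n ^ dd \<le> real ((n + mm) ^ dd)" by (simp add: power_mono)
          then have "real n * (1 / real ((n + mm) ^ dd)) \<le> real n * (1 / real n ^ dd)"
            using n1r by (intro mult_left_mono divide_left_mono) auto
          also have "\<dots> = real n powr (1 - real dd)"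
            using n1r by (simp add: powr_diff powr_realpow)
          also have "\<dots> \<le> real n powr (- c)"
          proof (rule powr_mono[OF _ n1r])
            have "c \<le> real (nat \<lceil>c\<rceil>)" by (rule real_nat_ceiling_ge)
            then show "1 - real dd \<le> - c" unfolding dd_def by simp
          qed
          finally show ?thesis .
        qed
        have t2: "r ^ nat \<lceil>\<tau>\<rceil> \<le> real n powr (- c)"
        proof -
          have "r ^ nat \<lceil>\<tau>\<rceil> \<le> exp (- \<kappa>) ^ nat \<lceil>\<tau>\<rceil>" by (rule power_mono) (use r r0 in auto)
          also have "\<dots> = exp (- \<kappa> * real (nat \<lceil>\<tau>\<rceil>))" by (simp add: exp_of_nat_mult[symmetric] mult.commute)
          also have "\<dots> \<le> exp (- \<kappa> * \<tau>)"
          proof -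
            have "\<tau> \<le> real (nat \<lceil>\<tau>\<rceil>)" by (rule real_nat_ceiling_ge)
            then show ?thesis using k0 by simp
          qed
          also have "- \<kappa> * \<tau> = - (c + 1) * ln (real n)"
          proof -
            define u where "u = 8 * (real \<Delta> + 1)"
            have u0: "u \<noteq> 0" unfolding u_def by (smt (verit) of_nat_0_le_iff)
            have g: "\<And>a b X::real. a \<noteq> 0 \<Longrightarrow> b \<noteq> 0 \<Longrightarrow> (a / b) * (b * X / a) = X" by simp
            have "\<kappa> * \<tau> = (\<epsilon> / u) * (u * ((c + 1) * ln (real n)) / \<epsilon>)"
              unfolding \<kappa>_def \<tau>_def C_def u_def by (simp add: mult.assoc)
            also have "\<dots> = (c + 1) * ln (real n)" by (rule g) (use u0 e in auto)
            finally have E: "\<kappa> * \<tau> = (c + 1) * ln (real n)" .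
            show ?thesis using E by (metis minus_mult_left)
          qed
          also have "exp (- (c + 1) * ln (real n)) = real n powr (- (c + 1))"
            using n1r by (simp add: powr_def)
          also have "\<dots> \<le> real n powr (- c)" by (rule powr_mono) (use n1r in auto)
          finally show ?thesis .
        qed
        have pc: "0 < real n powr (- c)" using n1r by simp
        have "out_time_prob P x env {(y, t). \<tau> \<le> \<bar>real y - real (sum_list x)\<bar>}
            \<le> real n powr (- c) + 2 * real n powr (- c) / (1 - r)"
          using b1 t1 t2 r1 by (smt (verit) divide_right_mono mult_left_mono)
        also have "\<dots> < K * real n powr (- c)"
        proof -
          have "K * real n powr (- c) = 2 * real n powr (- c) + 2 * real n powr (- c) / (1 - r)"
            unfolding K_def by (simp add: distrib_right)
          then show ?thesis using pc by linarith
        qed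
        also have "\<dots> = K / real n powr c" by (simp add: powr_minus_divide)
        finally show "out_time_prob P x env {(y, t). C * ln (real (length x)) / \<epsilon> \<le> \<bar>real y - real (sum_list x)\<bar>}
              < K / real (length x) powr c" unfolding n_def \<tau>_def by simp
      qed
    qed
  qed
qed


end
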